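(* For a finite-space SSP game (as in the context) satisfying the Finite-Space SSP Game Model Assumption, the equation $Q=FQ$ has a unique solution $Q^*\in\mathbb{R}^{R}$, which is related to the value function $J^*$ of the game by $Q^*(i,u,v)=g(i,u,v)+\sum_{j\in S}p_{ij}(u,v)J^*(j)$ for all $(i,u,v)\in R$, and $J^*(i)=\inf_{\rho\in\bar U(i)}\sup_{\sigma\in\bar V(i)}\underline{Q}^*(i,\rho,\sigma)$ for all $i\in S$. Any stationary randomized policies $\mu^*\in\Pi_{1,SR}$, $\nu^*\in\Pi_{2,SR}$ such that for every $i\in S$, $\mu^*(\cdot\mid i)\in\arg\min_{\rho\in\bar U(i)}\sup_{\sigma\in\bar V(i)}\underline Q^*(i,\rho,\sigma)$ and $\nu^*(\cdot\mid i)\in\arg\max_{\sigma\in\bar V(i)}\inf_{\rho\in\bar U(i)}\underline Q^*(i,\rho,\sigma)$ are optimal policies for players I and II, respectively.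
   Context: Finite-space game: $S=\{1,\dots,n\}$, $S_o=S\cup\{0\}$, $0$ absorbing cost-free termination state. At $i\in S$, players I and II have finite control sets $U(i)$, $V(i)$; under $(u,v)$ the state moves to $j\in S_o$ w.p. $p_{ij}(u,v)$ with transition cost $\hat g(i,u,v,j)$ paid by player I to player II; $g(i,u,v)$ is the expected one-stage cost. $\Pi_1,\Pi_2$: history-dependent randomized policies. $J(i;\pi_1,\pi_2)=\liminf_{t\to\infty}E_{\pi_1\pi_2}[\sum_{k=0}^t\hat g(i_k,u_k,v_k,i_{k+1})\mid i_0=i]$. The value function $J^*$ is $J^*(i)=\inf_{\pi_1}\sup_{\pi_2}J(i;\pi_1,\pi_2)=\sup_{\pi_2}\inf_{\pi_1}J(i;\pi_1,\pi_2)$; a policy is optimal for player I (II) if it attains the outer inf (sup) for every $i$. $\bar U(i)=\mathcal P(U(i))$, $\bar V(i)=\mathcal P(V(i))$; $\Pi_{1,SR},\Pi_{2,SR}$: stationary randomized policies. $R=\{(i,u,v): i\in S,u\in U(i),v\in V(i)\}$. For $Q\in\mathbb{R}^R$, $i\in S$, $\rho\in\bar U(i)$, $\sigma\in\bar V(i)$: $\underline Q(i,\rho,\sigma)=\sum_{u\in U(i)}\sum_{v\in V(i)}\rho(u)\sigma(v)Q(i,u,v)$. $F:\mathbb{R}^R\to\mathbb{R}^R$, $(FQ)(i,u,v)=g(i,u,v)+\sum_{j\in S}p_{ij}(u,v)\inf_{\rho\in\bar U(j)}\sup_{\sigma\in\bar V(j)}\underline Q(j,\rho,\sigma)$. A pair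 of policies is prolonging if for some initial state the termination state is with positive probability never reached. Finite-Space SSP Game Model Assumption: (i) there is $\bar\mu\in\Pi_{1,SR}$ with $J(i;\bar\mu,\nu)<+\infty$ for all $\nu\in\Pi_{2,SR}$, all $i$; (ii) there is $\bar\nu\in\Pi_{2,SR}$ with $J(i;\mu,\bar\nu)>-\infty$ for all $\mu\in\Pi_{1,SR}$, all $i$; (iii) every prolonging pair in $\Pi_{1,SR}\times\Pi_{2,SR}$ has $J(i;\mu,\nu)\in\{+\infty,-\infty\}$ for some $i$. *)

theory Defs
  imports "HOL-Probability.Probability"
begin

text \<open>Finite-space SSP game. States S = {1..n}, termination state 0.
  Control sets U i, V i; transition probabilities p i j u v (j in {0..n});
  transition costs gh i u v j paid by player I to player II.\<close>

definition states :: "nat \<Rightarrow> nat set" where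
  "states n = {1..n}"

definition game_model ::
  "nat \<Rightarrow> (nat \<Rightarrow> 'u set) \<Rightarrow> (nat \<Rightarrow> 'v set) \<Rightarrow> (nat \<Rightarrow> nat \<Rightarrow> 'u \<Rightarrow> 'v \<Rightarrow> real) \<Rightarrow> bool" where
  "game_model n U V p \<longleftrightarrow>
     (\<forall>i\<in>states n. finite (U i) \<and> U i \<noteq> {} \<and> finite (V i) \<and> V i \<noteq> {}) \<and>
     (\<forall>i\<in>states n. \<forall>u\<in>U i. \<forall>v\<in>V i.
        (\<forall>j\<in>{0..n}. 0 \<le> p i j u v) \<and> (\<Sum>j\<in>{0..n}. p i j u v) = 1)"

definition gexp ::
  "nat \<Rightarrow> (nat \<Rightarrow> nat \<Rightarrow> 'u \<Rightarrow> 'v \<Rightarrow> real) \<Rightarrow> (nat \<Rightarrow> 'u \<Rightarrow> 'v \<Rightarrow> nat \<Rightarrow> real)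
   \<Rightarrow> nat \<Rightarrow> 'u \<Rightarrow> 'v \<Rightarrow> real" where
  "gexp n p gh i u v = (\<Sum>j\<in>{0..n}. p i j u v * gh i u v j)"

text \<open>Histories: initial state and list of (u_k, v_k, i_{k+1}).\<close>
type_synonym ('u, 'v) hist = "nat \<times> ('u \<times> 'v \<times> nat) list"

definition cur :: "('u, 'v) hist \<Rightarrow> nat" where
  "cur h = (if snd h = [] then fst h else snd (snd (last (snd h))))"

definition hext :: "('u, 'v) hist \<Rightarrow> 'u \<Rightarrow> 'v \<Rightarrow> nat \<Rightarrow> ('u, 'v) hist" where
  "hext h u v j = (fst h, snd h @ [(u, v, j)])"

definition Pi1 :: "nat \<Rightarrow> (nat \<Rightarrow> 'u set) \<Rightarrow> (('u, 'v) hist \<Rightarrow> 'u pmf) set" where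
  "Pi1 n U = {\<pi>. \<forall>h. cur h \<in> states n \<longrightarrow> set_pmf (\<pi> h) \<subseteq> U (cur h)}"

definition Pi2 :: "nat \<Rightarrow> (nat \<Rightarrow> 'v set) \<Rightarrow> (('u, 'v) hist \<Rightarrow> 'v pmf) set" where
  "Pi2 n V = {\<pi>. \<forall>h. cur h \<in> states n \<longrightarrow> set_pmf (\<pi> h) \<subseteq> V (cur h)}"

definition SR :: "nat \<Rightarrow> (nat \<Rightarrow> 'a set) \<Rightarrow> (nat \<Rightarrow> 'a pmf) set" where
  "SR n W = {\<mu>. \<forall>i\<in>states n. set_pmf (\<mu> i) \<subseteq> W i}"

definition stat :: "(nat \<Rightarrow> 'a pmf) \<Rightarrow> ('u, 'v) hist \<Rightarrow> 'a pmf" where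
  "stat \<mu> = (\<lambda>h. \<mu> (cur h))"

text \<open>ecost ... m h: expected total cost of the next m stages, given current history h
  (state 0 is absorbing and cost-free).\<close>
fun ecost ::
  "nat \<Rightarrow> (nat \<Rightarrow> 'u set) \<Rightarrow> (nat \<Rightarrow> 'v set) \<Rightarrow> (nat \<Rightarrow> nat \<Rightarrow> 'u \<Rightarrow> 'v \<Rightarrow> real)
   \<Rightarrow> (nat \<Rightarrow> 'u \<Rightarrow> 'v \<Rightarrow> nat \<Rightarrow> real)
   \<Rightarrow> (('u, 'v) hist \<Rightarrow> 'u pmf) \<Rightarrow> (('u, 'v) hist \<Rightarrow> 'v pmf) \<Rightarrow> nat \<Rightarrow> ('u, 'v) hist \<Rightarrow> real" where
  "ecost n U V p gh \<pi>1 \<pi>2 0 h = 0"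
| "ecost n U V p gh \<pi>1 \<pi>2 (Suc m) h =
     (if cur h \<in> states n then
        (\<Sum>u\<in>U (cur h). \<Sum>v\<in>V (cur h). pmf (\<pi>1 h) u * pmf (\<pi>2 h) v *
           (\<Sum>j\<in>{0..n}. p (cur h) j u v *
              (gh (cur h) u v j + ecost n U V p gh \<pi>1 \<pi>2 m (hext h u v j))))
      else 0)"

text \<open>survp ... m h: probability that the state is still in S after m more stages.\<close>
fun survp ::
  "nat \<Rightarrow> (nat \<Rightarrow> 'u set) \<Rightarrow> (nat \<Rightarrow> 'v set) \<Rightarrow> (nat \<Rightarrow> nat \<Rightarrow> 'u \<Rightarrow> 'v \<Rightarrow> real)
   \<Rightarrow> (('u, 'v) hist \<Rightarrow> 'u pmf) \<Rightarrow> (('u, 'v) hist \<Rightarrow> 'v pmf) \<Rightarrow> nat \<Rightarrow> ('u, 'v) hist \<Rightarrow> real" where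
  "survp n U V p \<pi>1 \<pi>2 0 h = (if cur h \<in> states n then 1 else 0)"
| "survp n U V p \<pi>1 \<pi>2 (Suc m) h =
     (if cur h \<in> states n then
        (\<Sum>u\<in>U (cur h). \<Sum>v\<in>V (cur h). pmf (\<pi>1 h) u * pmf (\<pi>2 h) v *
           (\<Sum>j\<in>{0..n}. p (cur h) j u v * survp n U V p \<pi>1 \<pi>2 m (hext h u v j)))
      else 0)"

text \<open>J(i; pi1, pi2) = liminf_t E[sum_{k=0}^t gh(i_k,u_k,v_k,i_{k+1}) | i_0 = i].\<close>
definition Jcost ::
  "nat \<Rightarrow> (nat \<Rightarrow> 'u set) \<Rightarrow> (nat \<Rightarrow> 'v set) \<Rightarrow> (nat \<Rightarrow> nat \<Rightarrow> 'u \<Rightarrow> 'v \<Rightarrow> real)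
   \<Rightarrow> (nat \<Rightarrow> 'u \<Rightarrow> 'v \<Rightarrow> nat \<Rightarrow> real)
   \<Rightarrow> nat \<Rightarrow> (('u, 'v) hist \<Rightarrow> 'u pmf) \<Rightarrow> (('u, 'v) hist \<Rightarrow> 'v pmf) \<Rightarrow> ereal" where
  "Jcost n U V p gh i \<pi>1 \<pi>2 =
     liminf (\<lambda>t. ereal (ecost n U V p gh \<pi>1 \<pi>2 (Suc t) (i, [])))"

definition Jstar ::
  "nat \<Rightarrow> (nat \<Rightarrow> 'u set) \<Rightarrow> (nat \<Rightarrow> 'v set) \<Rightarrow> (nat \<Rightarrow> nat \<Rightarrow> 'u \<Rightarrow> 'v \<Rightarrow> real)
   \<Rightarrow> (nat \<Rightarrow> 'u \<Rightarrow> 'v \<Rightarrow> nat \<Rightarrow> real) \<Rightarrow> nat \<Rightarrow> ereal" where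
  "Jstar n U V p gh i =
     (INF \<pi>1\<in>Pi1 n U. SUP \<pi>2\<in>(Pi2 n V :: (('u, 'v) hist \<Rightarrow> 'v pmf) set). Jcost n U V p gh i \<pi>1 \<pi>2)"

definition Jlower ::
  "nat \<Rightarrow> (nat \<Rightarrow> 'u set) \<Rightarrow> (nat \<Rightarrow> 'v set) \<Rightarrow> (nat \<Rightarrow> nat \<Rightarrow> 'u \<Rightarrow> 'v \<Rightarrow> real)
   \<Rightarrow> (nat \<Rightarrow> 'u \<Rightarrow> 'v \<Rightarrow> nat \<Rightarrow> real) \<Rightarrow> nat \<Rightarrow> ereal" where
  "Jlower n U V p gh i =
     (SUP \<pi>2\<in>Pi2 n V. INF \<pi>1\<in>(Pi1 n U :: (('u, 'v) hist \<Rightarrow> 'u pmf) set). Jcost n U V p gh i \<pi>1 \<pi>2)"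

definition optimal_I ::
  "nat \<Rightarrow> (nat \<Rightarrow> 'u set) \<Rightarrow> (nat \<Rightarrow> 'v set) \<Rightarrow> (nat \<Rightarrow> nat \<Rightarrow> 'u \<Rightarrow> 'v \<Rightarrow> real)
   \<Rightarrow> (nat \<Rightarrow> 'u \<Rightarrow> 'v \<Rightarrow> nat \<Rightarrow> real) \<Rightarrow> (('u, 'v) hist \<Rightarrow> 'u pmf) \<Rightarrow> bool" where
  "optimal_I n U V p gh \<pi>1 \<longleftrightarrow> \<pi>1 \<in> Pi1 n U \<and>
     (\<forall>i\<in>states n. (SUP \<pi>2\<in>Pi2 n V. Jcost n U V p gh i \<pi>1 \<pi>2) = Jstar n U V p gh i)"

definition optimal_II ::
  "nat \<Rightarrow> (nat \<Rightarrow> 'u set) \<Rightarrow> (nat \<Rightarrow> 'v set) \<Rightarrow> (nat \<Rightarrow> nat \<Rightarrow> 'u \<Rightarrow> 'v \<Rightarrow> real)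
   \<Rightarrow> (nat \<Rightarrow> 'u \<Rightarrow> 'v \<Rightarrow> nat \<Rightarrow> real) \<Rightarrow> (('u, 'v) hist \<Rightarrow> 'v pmf) \<Rightarrow> bool" where
  "optimal_II n U V p gh \<pi>2 \<longleftrightarrow> \<pi>2 \<in> Pi2 n V \<and>
     (\<forall>i\<in>states n. (INF \<pi>1\<in>Pi1 n U. Jcost n U V p gh i \<pi>1 \<pi>2) = Jlower n U V p gh i)"

text \<open>Prolonging pair: for some initial state, with positive probability 0 is never reached,
  i.e. the probability of not having reached 0 by stage t stays bounded away from 0.\<close>
definition prolonging ::
  "nat \<Rightarrow> (nat \<Rightarrow> 'u set) \<Rightarrow> (nat \<Rightarrow> 'v set) \<Rightarrow> (nat \<Rightarrow> nat \<Rightarrow> 'u \<Rightarrow> 'v \<Rightarrow> real)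
   \<Rightarrow> (('u, 'v) hist \<Rightarrow> 'u pmf) \<Rightarrow> (('u, 'v) hist \<Rightarrow> 'v pmf) \<Rightarrow> bool" where
  "prolonging n U V p \<pi>1 \<pi>2 \<longleftrightarrow>
     (\<exists>i\<in>states n. \<exists>\<epsilon>>0. \<forall>t. \<epsilon> \<le> survp n U V p \<pi>1 \<pi>2 t (i, []))"

definition SSP_assumption ::
  "nat \<Rightarrow> (nat \<Rightarrow> 'u set) \<Rightarrow> (nat \<Rightarrow> 'v set) \<Rightarrow> (nat \<Rightarrow> nat \<Rightarrow> 'u \<Rightarrow> 'v \<Rightarrow> real)
   \<Rightarrow> (nat \<Rightarrow> 'u \<Rightarrow> 'v \<Rightarrow> nat \<Rightarrow> real) \<Rightarrow> bool" where
  "SSP_assumption n U V p gh \<longleftrightarrow>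
     (\<exists>\<mu>\<in>SR n U. \<forall>\<nu>\<in>SR n V. \<forall>i\<in>states n.
        Jcost n U V p gh i (stat \<mu>) (stat \<nu>) < \<infinity>) \<and>
     (\<exists>\<nu>\<in>SR n V. \<forall>\<mu>\<in>SR n U. \<forall>i\<in>states n.
        Jcost n U V p gh i (stat \<mu>) (stat \<nu>) > -\<infinity>) \<and>
     (\<forall>\<mu>\<in>SR n U. \<forall>\<nu>\<in>SR n V. prolonging n U V p (stat \<mu>) (stat \<nu>) \<longrightarrow>
        (\<exists>i\<in>states n. Jcost n U V p gh i (stat \<mu>) (stat \<nu>) \<in> {\<infinity>, -\<infinity>}))"

definition Rset :: "nat \<Rightarrow> (nat \<Rightarrow> 'u set) \<Rightarrow> (nat \<Rightarrow> 'v set) \<Rightarrow> (nat \<times> 'u \<times> 'v) set" where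
  "Rset n U V = {(i, u, v). i \<in> states n \<and> u \<in> U i \<and> v \<in> V i}"

definition Ubar :: "(nat \<Rightarrow> 'a set) \<Rightarrow> nat \<Rightarrow> 'a pmf set" where
  "Ubar W i = {\<rho>. set_pmf \<rho> \<subseteq> W i}"

definition Qbar ::
  "(nat \<Rightarrow> 'u set) \<Rightarrow> (nat \<Rightarrow> 'v set) \<Rightarrow> (nat \<times> 'u \<times> 'v \<Rightarrow> real) \<Rightarrow> nat \<Rightarrow> 'u pmf \<Rightarrow> 'v pmf \<Rightarrow> real" where
  "Qbar U V Q i \<rho> \<sigma> = (\<Sum>u\<in>U i. \<Sum>v\<in>V i. pmf \<rho> u * pmf \<sigma> v * Q (i, u, v))"

definition minimaxQ ::
  "(nat \<Rightarrow> 'u set) \<Rightarrow> (nat \<Rightarrow> 'v set) \<Rightarrow> (nat \<times> 'u \<times> 'v \<Rightarrow> real) \<Rightarrow> nat \<Rightarrow> real" where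
  "minimaxQ U V Q j = (INF \<rho>\<in>Ubar U j. SUP \<sigma>\<in>Ubar V j. Qbar U V Q j \<rho> \<sigma>)"

definition Fop ::
  "nat \<Rightarrow> (nat \<Rightarrow> 'u set) \<Rightarrow> (nat \<Rightarrow> 'v set) \<Rightarrow> (nat \<Rightarrow> nat \<Rightarrow> 'u \<Rightarrow> 'v \<Rightarrow> real)
   \<Rightarrow> (nat \<Rightarrow> 'u \<Rightarrow> 'v \<Rightarrow> nat \<Rightarrow> real) \<Rightarrow> (nat \<times> 'u \<times> 'v \<Rightarrow> real) \<Rightarrow> nat \<times> 'u \<times> 'v \<Rightarrow> real" where
  "Fop n U V p gh Q = (\<lambda>(i, u, v).
     gexp n p gh i u v + (\<Sum>j\<in>states n. p i j u v * minimaxQ U V Q j))"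

text \<open>Q solves Q = FQ as an element of R^R (functions extensional on R).\<close>
definition fixed_point ::
  "nat \<Rightarrow> (nat \<Rightarrow> 'u set) \<Rightarrow> (nat \<Rightarrow> 'v set) \<Rightarrow> (nat \<Rightarrow> nat \<Rightarrow> 'u \<Rightarrow> 'v \<Rightarrow> real)
   \<Rightarrow> (nat \<Rightarrow> 'u \<Rightarrow> 'v \<Rightarrow> nat \<Rightarrow> real) \<Rightarrow> (nat \<times> 'u \<times> 'v \<Rightarrow> real) \<Rightarrow> bool" where
  "fixed_point n U V p gh Q \<longleftrightarrow> Q \<in> extensional (Rset n U V) \<and>
     (\<forall>x\<in>Rset n U V. Q x = Fop n U V p gh Q x)"

end

theory Submission imports Defs begin

definition sdelta :: "'a set \<Rightarrow> ('a \<Rightarrow> real) set" where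
  "sdelta A = {f. (\<forall>x. 0 \<le> f x) \<and> (\<forall>x. x \<notin> A \<longrightarrow> f x = 0) \<and> sum f A = 1}"

lemma sdelta_pmf:
  assumes "finite A" "set_pmf \<rho> \<subseteq> A" shows "pmf \<rho> \<in> sdelta A"
  using assms sum_pmf_eq_1[OF assms] by (auto simp: sdelta_def set_pmf_iff pmf_nonneg)

lemma sdelta_embed:
  assumes A: "finite A" and f: "f \<in> sdelta A"
  shows "\<exists>\<rho>. set_pmf \<rho> \<subseteq> A \<and> pmf \<rho> = f"
proof -
  have nn: "\<And>x. 0 \<le> f x" and z: "\<And>x. x \<notin> A \<Longrightarrow> f x = 0" and s: "sum f A = 1"
    using f by (auto simp: sdelta_def)
  have "(\<integral>\<^sup>+x. ennreal (f x) \<partial>count_space UNIV) = (\<Sum>x\<in>A. ennreal (f x))"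
    by (rule nn_integral_count_space') (use A z in auto)
  also have "\<dots> = ennreal (sum f A)" using nn by (simp add: sum_ennreal)
  finally have prob: "(\<integral>\<^sup>+x. ennreal (f x) \<partial>count_space UNIV) = 1" using s by simp
  show ?thesis
    apply (rule exI[of _ "embed_pmf f"])
    using pmf_embed_pmf[OF nn prob] set_embed_pmf[OF nn prob] z by auto
qed

lemma finite_bw:
  fixes f :: "nat \<Rightarrow> 'a \<Rightarrow> real"
  assumes "finite A" and "\<And>k x. x \<in> A \<Longrightarrow> \<bar>f k x\<bar> \<le> B"
  shows "\<exists>r. strict_mono r \<and> (\<forall>x\<in>A. convergent (\<lambda>k. f (r k) x))"
  using assms
proof (induction A rule: finite_induct)
  case empty
  then show ?case by (auto intro: exI[of _ id] simp: strict_mono_def)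
next
  case (insert a A)
  then obtain r where r: "strict_mono r" "\<forall>x\<in>A. convergent (\<lambda>k. f (r k) x)" by auto
  obtain s where s: "strict_mono s" "monoseq (\<lambda>k. f (r (s k)) a)"
    using seq_monosub[of "\<lambda>k. f (r k) a"] by auto
  have "Bseq (\<lambda>k. f (r (s k)) a)"
    by (rule BseqI'[of _ B]) (use insert.prems in auto)
  hence ca: "convergent (\<lambda>k. f (r (s k)) a)" using s Bseq_monoseq_convergent by blast
  have "\<forall>x\<in>A. convergent (\<lambda>k. f (r (s k)) x)"
    using convergent_subseq_convergent[OF _ s(1)] r(2) by (auto simp: o_def)
  moreover have "strict_mono (r \<circ> s)" using r(1) s(1) by (rule strict_mono_o)
  ultimately show ?case using ca by (intro exI[of _ "r \<circ> s"]) (auto simp: o_def)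
qed


lemma sdelta_le1: "f \<in> sdelta A \<Longrightarrow> finite A \<Longrightarrow> f x \<le> 1"
  unfolding sdelta_def
  by (cases "x \<in> A") (auto, metis member_le_sum)

lemma sdelta_ne: "finite A \<Longrightarrow> a \<in> A \<Longrightarrow> (\<lambda>x. if x = a then 1 else 0) \<in> sdelta A"
  by (auto simp: sdelta_def)

lemma sdelta_attains_min:
  fixes F :: "('a \<Rightarrow> real) \<Rightarrow> real"
  assumes A: "finite A" "A \<noteq> {}" and L0: "0 \<le> L"
    and L: "\<And>f g. f \<in> sdelta A \<Longrightarrow> g \<in> sdelta A \<Longrightarrow> F f \<le> F g + L * (\<Sum>x\<in>A. \<bar>f x - g x\<bar>)"
  shows "\<exists>f\<in>sdelta A. \<forall>g\<in>sdelta A. F f \<le> F g"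
proof -
  obtain a where a: "a \<in> A" using A by auto
  define f0 where "f0 = (\<lambda>x. if x = a then 1 else (0::real))"
  have f0: "f0 \<in> sdelta A" unfolding f0_def using sdelta_ne[OF A(1) a] .
  have nnd: "\<And>g x. g \<in> sdelta A \<Longrightarrow> 0 \<le> g x" by (auto simp: sdelta_def)
  have s1: "\<And>g. g \<in> sdelta A \<Longrightarrow> sum g A = 1" by (auto simp: sdelta_def)
  have dist2: "(\<Sum>x\<in>A. \<bar>f0 x - g x\<bar>) \<le> 2" if "g \<in> sdelta A" for g
  proof -
    have "(\<Sum>x\<in>A. \<bar>f0 x - g x\<bar>) \<le> (\<Sum>x\<in>A. f0 x + g x)"
      by (rule sum_mono) (use nnd[OF f0] nnd[OF that] in \<open>auto simp: abs_le_iff\<close>)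
    also have "\<dots> = 2" using s1[OF f0] s1[OF that] by (simp add: sum.distrib)
    finally show ?thesis .
  qed
  have lb: "F f0 - L * 2 \<le> F g" if "g \<in> sdelta A" for g
  proof -
    have "F f0 \<le> F g + L * (\<Sum>x\<in>A. \<bar>f0 x - g x\<bar>)" using L[OF f0 that] .
    moreover have "L * (\<Sum>x\<in>A. \<bar>f0 x - g x\<bar>) \<le> L * 2"
      using dist2[OF that] L0 by (simp add: mult_left_mono)
    ultimately show ?thesis by linarith
  qed
  have bdd: "bdd_below (F ` sdelta A)" using lb by (auto intro!: bdd_belowI)
  define d where "d = (INF g\<in>sdelta A. F g)"
  have dle: "\<And>g. g \<in> sdelta A \<Longrightarrow> d \<le> F g" unfolding d_def using bdd by (rule cINF_lower)
  have "\<exists>g\<in>sdelta A. F g < d + inverse (real (Suc k))" for k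
  proof -
    have "d < d + inverse (real (Suc k))" by simp
    then show ?thesis unfolding d_def
      using cINF_less_iff[OF _ bdd] f0 by blast
  qed
  then obtain f where f: "\<And>k. f k \<in> sdelta A" "\<And>k. F (f k) < d + inverse (real (Suc k))"
    by metis
  have "\<And>k x. x \<in> A \<Longrightarrow> \<bar>f k x\<bar> \<le> 1" using f(1) nnd sdelta_le1[OF _ A(1)] by (metis abs_of_nonneg)
  then obtain r where r: "strict_mono r" "\<forall>x\<in>A. convergent (\<lambda>k. f (r k) x)"
    using finite_bw[OF A(1)] by blast
  define g where "g = (\<lambda>x. if x \<in> A then lim (\<lambda>k. f (r k) x) else 0)"
  have gl: "(\<lambda>k. f (r k) x) \<longlonglongrightarrow> g x" if "x \<in> A" for x
    using r(2) that by (simp add: g_def convergent_LIMSEQ_iff)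
  have gnn: "0 \<le> g x" for x
  proof (cases "x \<in> A")
    case True
    show ?thesis by (rule LIMSEQ_le_const[OF gl[OF True]]) (use nnd f(1) in auto)
  qed (simp add: g_def)
  have "(\<lambda>k. sum (f (r k)) A) \<longlonglongrightarrow> sum g A"
    by (rule tendsto_sum) (use gl in auto)
  moreover have "(\<lambda>k. sum (f (r k)) A) = (\<lambda>k. 1)" using s1 f(1) by auto
  ultimately have "sum g A = 1" using LIMSEQ_unique tendsto_const by metis
  hence gd: "g \<in> sdelta A" using gnn by (auto simp: sdelta_def g_def)
  define D where "D = (\<lambda>k. \<Sum>x\<in>A. \<bar>g x - f (r k) x\<bar>)"
  have "D \<longlonglongrightarrow> (\<Sum>x\<in>A. \<bar>g x - g x\<bar>)" unfolding D_def
    by (intro tendsto_sum tendsto_rabs tendsto_diff tendsto_const gl)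
  hence D0: "D \<longlonglongrightarrow> 0" by simp
  have R: "(\<lambda>k. d + inverse (real (Suc k)) + L * D k) \<longlonglongrightarrow> d + 0 + L * 0"
    by (intro tendsto_add tendsto_const tendsto_mult D0 LIMSEQ_inverse_real_of_nat)
  have "F g \<le> d + inverse (real (Suc k)) + L * D k" for k
  proof -
    have "F g \<le> F (f (r k)) + L * D k" unfolding D_def using L[OF gd f(1)] .
    moreover have "F (f (r k)) < d + inverse (real (Suc (r k)))" using f(2) .
    moreover have "inverse (real (Suc (r k))) \<le> inverse (real (Suc k))"
      using seq_suble[OF r(1), of k] by (simp add: le_imp_inverse_le)
    ultimately show ?thesis by linarith
  qed
  hence "F g \<le> d + 0 + L * 0" by (intro LIMSEQ_le_const[OF R]) auto
  hence "\<forall>h\<in>sdelta A. F g \<le> F h" using dle by force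
  thus ?thesis using gd by blast
qed


lemma minsq_up: "(min 0 (s + d))\<^sup>2 \<le> (min 0 s)\<^sup>2 + 2 * min 0 s * d + d\<^sup>2" for s d :: real
proof (cases "s \<le> 0"; cases "s + d \<le> 0")
  assume "s \<le> 0" "s + d \<le> 0" thus ?thesis by (simp add: min_def power2_eq_square algebra_simps)
next
  assume "s \<le> 0" "\<not> s + d \<le> 0" 
  hence "0 \<le> (s+d)\<^sup>2" by simp
  thus ?thesis using \<open>s \<le> 0\<close> \<open>\<not> s + d \<le> 0\<close> by (simp add: min_def power2_eq_square algebra_simps)
next
  assume "\<not> s \<le> 0" "s + d \<le> 0"
  hence "-(s+d) \<le> -d" "0 \<le> -(s+d)" by auto
  hence "(-(s+d)) * (-(s+d)) \<le> (-d) * (-d)" by (intro mult_mono) auto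
  hence "(s+d)\<^sup>2 \<le> d\<^sup>2" by (simp add: power2_eq_square algebra_simps)
  thus ?thesis using \<open>\<not> s \<le> 0\<close> \<open>s + d \<le> 0\<close> by (simp add: min_def)
next
  assume "\<not> s \<le> 0" "\<not> s + d \<le> 0" thus ?thesis by (simp add: min_def)
qed

lemma minsq_lip: "\<bar>(min 0 s)\<^sup>2 - (min 0 t)\<^sup>2\<bar> \<le> \<bar>s - t\<bar> * (\<bar>s\<bar> + \<bar>t\<bar>)" for s t :: real
proof -
  have "\<bar>(min 0 s)\<^sup>2 - (min 0 t)\<^sup>2\<bar> = \<bar>min 0 s - min 0 t\<bar> * \<bar>min 0 s + min 0 t\<bar>"
    unfolding power2_eq_square square_diff_square_factored abs_mult[symmetric] by (simp add: mult.commute)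
  also have "\<dots> \<le> \<bar>s - t\<bar> * (\<bar>s\<bar> + \<bar>t\<bar>)"
    by (rule mult_mono) (auto simp: min_def abs_if)
  finally show ?thesis .
qed

lemma minsq_eq: "min 0 s * s = (min 0 s)\<^sup>2" for s :: real
  by (auto simp: power2_eq_square min_def)


lemma ville:
  fixes a :: "'a \<Rightarrow> 'b \<Rightarrow> real"
  assumes A: "finite A" and B: "finite B" "B \<noteq> {}"
  shows "(\<exists>g\<in>sdelta B. \<forall>x\<in>A. 0 \<le> (\<Sum>y\<in>B. g y * a x y)) \<or>
         (\<exists>f\<in>sdelta A. \<forall>y\<in>B. (\<Sum>x\<in>A. f x * a x y) < 0)"
proof -
  define c where "c g x = (\<Sum>y\<in>B. g y * a x y)" for g x
  define \<phi> where "\<phi> g = (\<Sum>x\<in>A. (min 0 (c g x))\<^sup>2)" for g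
  define K where "K = (\<Sum>x\<in>A. \<Sum>y\<in>B. \<bar>a x y\<bar>)"
  have aK: "\<bar>a x y\<bar> \<le> K" if "x \<in> A" "y \<in> B" for x y
  proof -
    have "\<bar>a x y\<bar> \<le> (\<Sum>y\<in>B. \<bar>a x y\<bar>)" using B that by (intro member_le_sum) auto
    also have "\<dots> \<le> K" unfolding K_def using A that
      by (intro member_le_sum[of x A "\<lambda>x. \<Sum>y\<in>B. \<bar>a x y\<bar>"]) (auto intro: sum_nonneg)
    finally show ?thesis .
  qed
  have K0: "0 \<le> K" unfolding K_def by (auto intro!: sum_nonneg)
  have gnn: "\<And>g y. g \<in> sdelta B \<Longrightarrow> 0 \<le> g y" and gs: "\<And>g. g \<in> sdelta B \<Longrightarrow> sum g B = 1"
    by (auto simp: sdelta_def)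
  have cK: "\<bar>c g x\<bar> \<le> K" if "g \<in> sdelta B" "x \<in> A" for g x
  proof -
    have "\<bar>c g x\<bar> \<le> (\<Sum>y\<in>B. \<bar>g y * a x y\<bar>)" unfolding c_def by (rule sum_abs)
    also have "\<dots> \<le> (\<Sum>y\<in>B. g y * K)"
      by (rule sum_mono) (use gnn[OF that(1)] aK[OF that(2)] in \<open>auto simp: abs_mult intro: mult_left_mono\<close>)
    also have "\<dots> = K" using gs[OF that(1)] by (simp add: sum_distrib_right[symmetric])
    finally show ?thesis .
  qed
  have cdiff: "\<bar>c g x - c h x\<bar> \<le> K * (\<Sum>y\<in>B. \<bar>g y - h y\<bar>)" if "x \<in> A" for g h x
  proof -
    have "\<bar>c g x - c h x\<bar> = \<bar>\<Sum>y\<in>B. (g y - h y) * a x y\<bar>"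
      unfolding c_def by (simp add: sum_subtractf[symmetric] algebra_simps)
    also have "\<dots> \<le> (\<Sum>y\<in>B. \<bar>g y - h y\<bar> * K)"
      by (rule order_trans[OF sum_abs], rule sum_mono)
         (use aK[OF that] in \<open>auto simp: abs_mult intro: mult_left_mono\<close>)
    also have "\<dots> = K * (\<Sum>y\<in>B. \<bar>g y - h y\<bar>)" by (simp add: sum_distrib_left mult.commute)
    finally show ?thesis .
  qed
  have lip: "\<phi> g \<le> \<phi> h + (real (card A) * (2 * K * K)) * (\<Sum>y\<in>B. \<bar>g y - h y\<bar>)"
    if "g \<in> sdelta B" "h \<in> sdelta B" for g h
  proof -
    have "\<phi> g - \<phi> h = (\<Sum>x\<in>A. (min 0 (c g x))\<^sup>2 - (min 0 (c h x))\<^sup>2)"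
      unfolding \<phi>_def by (simp add: sum_subtractf)
    also have "\<dots> \<le> (\<Sum>x\<in>A. (K * (\<Sum>y\<in>B. \<bar>g y - h y\<bar>)) * (2 * K))"
    proof (rule sum_mono)
      fix x assume x: "x \<in> A"
      have "(min 0 (c g x))\<^sup>2 - (min 0 (c h x))\<^sup>2 \<le> \<bar>c g x - c h x\<bar> * (\<bar>c g x\<bar> + \<bar>c h x\<bar>)"
        using minsq_lip[of "c g x" "c h x"] by linarith
      also have "\<dots> \<le> (K * (\<Sum>y\<in>B. \<bar>g y - h y\<bar>)) * (2 * K)"
        by (rule mult_mono) (use cdiff[OF x] cK[OF that(1) x] cK[OF that(2) x] in auto)
      finally show "(min 0 (c g x))\<^sup>2 - (min 0 (c h x))\<^sup>2 \<le> (K * (\<Sum>y\<in>B. \<bar>g y - h y\<bar>)) * (2 * K)" .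
    qed
    also have "\<dots> = (real (card A) * (2 * K * K)) * (\<Sum>y\<in>B. \<bar>g y - h y\<bar>)" by (simp add: algebra_simps)
    finally show ?thesis by linarith
  qed
  obtain g0 where g0: "g0 \<in> sdelta B" "\<And>g. g \<in> sdelta B \<Longrightarrow> \<phi> g0 \<le> \<phi> g"
    using sdelta_attains_min[OF B, of "real (card A) * (2 * K * K)" \<phi>] lip K0 by auto
  show ?thesis
  proof (cases "\<phi> g0 = 0")
    case True
    have "\<forall>x\<in>A. (min 0 (c g0 x))\<^sup>2 = 0"
      using True A unfolding \<phi>_def by (subst (asm) sum_nonneg_eq_0_iff) auto
    hence "\<forall>x\<in>A. 0 \<le> c g0 x" by (auto simp: min_def split: if_splits)
    then show ?thesis using g0(1) unfolding c_def by blast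
  next
    case False
    define z where "z x = min 0 (c g0 x)" for x
    define Z where "Z = (\<Sum>x\<in>A. - z x)"
    have phinn: "0 \<le> \<phi> g0" unfolding \<phi>_def by (auto intro: sum_nonneg)
    hence phipos: "0 < \<phi> g0" using False by linarith
    then obtain x0 where x0: "x0 \<in> A" "z x0 \<noteq> 0" unfolding \<phi>_def z_def
      by (metis (no_types, lifting) power_zero_numeral sum.neutral less_irrefl)
    have zle: "z x \<le> 0" for x by (simp add: z_def)
    have Zpos: "0 < Z" unfolding Z_def using x0 zle
      by (intro sum_pos2[of A x0]) (auto simp: A less_le)
    define f where "f x = (if x \<in> A then - z x / Z else 0)" for x
    have "(\<Sum>x\<in>A. f x) = (\<Sum>x\<in>A. - z x) / Z"
      unfolding f_def by (simp add: sum_divide_distrib)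
    also have "\<dots> = 1" using Zpos by (simp add: Z_def)
    finally have fd: "f \<in> sdelta A"
      unfolding sdelta_def using Zpos zle by (auto simp: f_def divide_nonpos_pos)
    have key: "0 < (\<Sum>x\<in>A. z x * a x y)" if y: "y \<in> B" for y
    proof -
      define D where "D x = a x y - c g0 x" for x
      define S where "S = (\<Sum>x\<in>A. z x * D x)"
      define C where "C = (\<Sum>x\<in>A. (D x)\<^sup>2)"
      have C0: "0 \<le> C" unfolding C_def by (auto intro: sum_nonneg)
      have ineq: "0 \<le> 2 * S + t * C" if t: "0 < t" "t \<le> 1" for t
      proof -
        define gt where "gt y' = (1 - t) * g0 y' + t * (if y' = y then 1 else 0)" for y'
        have gtd: "gt \<in> sdelta B"
          unfolding sdelta_def gt_def using g0(1) t y B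
          by (auto simp: sdelta_def sum.distrib sum_distrib_left[symmetric] intro!: add_nonneg_nonneg mult_nonneg_nonneg)
        have cgt: "c gt x = c g0 x + t * D x" for x
        proof -
          have "c gt x = (\<Sum>y'\<in>B. (1-t) * (g0 y' * a x y')) + (\<Sum>y'\<in>B. t * ((if y' = y then 1 else 0) * a x y'))"
            unfolding c_def gt_def by (simp add: sum.distrib[symmetric] algebra_simps)
          also have "(\<Sum>y'\<in>B. t * ((if y' = y then 1 else 0) * a x y')) = t * (\<Sum>y'\<in>B. if y' = y then a x y' else 0)"
            by (simp add: sum_distrib_left[symmetric]) (rule disjI2, rule sum.cong, auto)
          also have "(\<Sum>y'\<in>B. if y' = y then a x y' else 0) = a x y" using B y by (simp add: sum.delta')
          also have "(\<Sum>y'\<in>B. (1-t) * (g0 y' * a x y')) = (1 - t) * c g0 x"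
            by (simp add: sum_distrib_left[symmetric] c_def)
          finally have "c gt x = (1 - t) * c g0 x + t * a x y" .
          thus ?thesis by (simp add: D_def algebra_simps)
        qed
        have "\<phi> gt \<le> (\<Sum>x\<in>A. (z x)\<^sup>2 + 2 * z x * (t * D x) + (t * D x)\<^sup>2)"
          unfolding \<phi>_def cgt z_def by (rule sum_mono) (rule minsq_up)
        also have "\<dots> = \<phi> g0 + t * (2 * S) + t * t * C"
          unfolding \<phi>_def z_def S_def C_def
          by (simp add: sum.distrib sum_distrib_left power_mult_distrib algebra_simps power2_eq_square)
        finally have "\<phi> g0 \<le> \<phi> g0 + t * (2 * S) + t * t * C" using g0(2)[OF gtd] by linarith
        hence "0 \<le> t * (2 * S + t * C)" by (simp add: algebra_simps)
        thus ?thesis using t by (simp add: zero_le_mult_iff)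
      qed
      have S0: "0 \<le> S"
      proof (rule ccontr)
        assume "\<not> 0 \<le> S"
        hence Sn: "S < 0" by simp
        define t where "t = min 1 (- S / (C + 1))"
        have t0: "0 < t" "t \<le> 1" using Sn C0 by (auto simp: t_def divide_neg_pos)
        have "t * C \<le> (- S / (C + 1)) * C" using C0 by (intro mult_right_mono) (auto simp: t_def)
        also have "\<dots> < - S"
        proof -
          have "(- S / (C + 1)) * C = - S * (C / (C + 1))" by simp
          also have "\<dots> < - S * 1" using Sn C0 by (intro mult_strict_left_mono) auto
          finally show ?thesis by simp
        qed
        finally have "2 * S + t * C < 0" using Sn by linarith
        thus False using ineq[OF t0] by linarith
      qed
      have "(\<Sum>x\<in>A. z x * a x y) = S + (\<Sum>x\<in>A. z x * c g0 x)"
        unfolding S_def D_def by (simp add: algebra_simps sum.distrib sum_subtractf)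
      also have "(\<Sum>x\<in>A. z x * c g0 x) = \<phi> g0"
        unfolding \<phi>_def z_def using minsq_eq by simp
      finally show ?thesis using S0 phipos by linarith
    qed
    have "\<forall>y\<in>B. (\<Sum>x\<in>A. f x * a x y) < 0"
    proof
      fix y assume y: "y \<in> B"
      have "(\<Sum>x\<in>A. f x * a x y) = - (\<Sum>x\<in>A. z x * a x y) / Z"
        unfolding f_def by (simp add: sum_divide_distrib sum_negf)
      also have "\<dots> < 0" using key[OF y] Zpos by (simp add: divide_neg_pos)
      finally show "(\<Sum>x\<in>A. f x * a x y) < 0" .
    qed
    thus ?thesis using fd by blast
  qed
qed


definition qb :: "'a set \<Rightarrow> 'b set \<Rightarrow> ('a \<Rightarrow> 'b \<Rightarrow> real) \<Rightarrow> 'a pmf \<Rightarrow> 'b pmf \<Rightarrow> real" where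
  "qb A B q \<rho> \<sigma> = (\<Sum>u\<in>A. \<Sum>v\<in>B. pmf \<rho> u * pmf \<sigma> v * q u v)"

definition PM :: "'a set \<Rightarrow> 'a pmf set" where "PM A = {\<rho>. set_pmf \<rho> \<subseteq> A}"

lemma PM_ne: "A \<noteq> {} \<Longrightarrow> PM A \<noteq> {}"
  by (auto simp: PM_def intro!: exI[of _ "return_pmf (SOME x. x \<in> A)"] some_in_eq[THEN iffD2])

lemma return_PM: "x \<in> A \<Longrightarrow> return_pmf x \<in> PM A" by (simp add: PM_def)

lemma convex_le_Max:
  fixes w r :: "'b \<Rightarrow> real"
  assumes "finite B" "\<And>v. 0 \<le> w v" "sum w B = 1"
  shows "(\<Sum>v\<in>B. w v * r v) \<le> Max (r ` B)"
proof -
  have B: "B \<noteq> {}" using assms(3) by auto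
  have "(\<Sum>v\<in>B. w v * r v) \<le> (\<Sum>v\<in>B. w v * Max (r ` B))"
    using assms by (intro sum_mono mult_left_mono) auto
  also have "\<dots> = Max (r ` B)" using assms(3) by (simp add: sum_distrib_right[symmetric])
  finally show ?thesis .
qed

lemma convex_ge_Min:
  fixes w r :: "'b \<Rightarrow> real"
  assumes "finite B" "\<And>v. 0 \<le> w v" "sum w B = 1"
  shows "Min (r ` B) \<le> (\<Sum>v\<in>B. w v * r v)"
proof -
  have B: "B \<noteq> {}" using assms(3) by auto
  have "(\<Sum>v\<in>B. w v * Min (r ` B)) \<le> (\<Sum>v\<in>B. w v * r v)"
    using assms by (intro sum_mono mult_left_mono) auto
  also have "(\<Sum>v\<in>B. w v * Min (r ` B)) = Min (r ` B)" using assms(3) by (simp add: sum_distrib_right[symmetric])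
  finally show ?thesis .
qed

lemma qb_swap: "qb A B q \<rho> \<sigma> = (\<Sum>v\<in>B. pmf \<sigma> v * (\<Sum>u\<in>A. pmf \<rho> u * q u v))"
  unfolding qb_def by (subst sum.swap) (simp add: sum_distrib_left algebra_simps)

lemma qb_row: "qb A B q \<rho> \<sigma> = (\<Sum>u\<in>A. pmf \<rho> u * (\<Sum>v\<in>B. pmf \<sigma> v * q u v))"
  unfolding qb_def by (simp add: sum_distrib_left algebra_simps)

lemma qb_le_Max:
  assumes "finite B" "\<sigma> \<in> PM B"
  shows "qb A B q \<rho> \<sigma> \<le> Max ((\<lambda>v. \<Sum>u\<in>A. pmf \<rho> u * q u v) ` B)"
  unfolding qb_swap using assms
  by (intro convex_le_Max) (auto simp: PM_def sum_pmf_eq_1 pmf_nonneg)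

lemma qb_ge_Min:
  assumes "finite A" "\<rho> \<in> PM A"
  shows "Min ((\<lambda>u. \<Sum>v\<in>B. pmf \<sigma> v * q u v) ` A) \<le> qb A B q \<rho> \<sigma>"
  unfolding qb_row using assms
  by (intro convex_ge_Min) (auto simp: PM_def sum_pmf_eq_1 pmf_nonneg)

lemma qb_return2: "finite B \<Longrightarrow> v \<in> B \<Longrightarrow> qb A B q \<rho> (return_pmf v) = (\<Sum>u\<in>A. pmf \<rho> u * q u v)"
  unfolding qb_swap by (simp add: indicator_def sum.delta' cong: if_cong)

lemma qb_return1: "finite A \<Longrightarrow> u \<in> A \<Longrightarrow> qb A B q (return_pmf u) \<sigma> = (\<Sum>v\<in>B. pmf \<sigma> v * q u v)"
  unfolding qb_row by (simp add: indicator_def sum.delta' cong: if_cong)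

lemma sup_pure:
  assumes B: "finite B" "B \<noteq> {}"
  shows "(SUP \<sigma>\<in>PM B. qb A B q \<rho> \<sigma>) = Max ((\<lambda>v. \<Sum>u\<in>A. pmf \<rho> u * q u v) ` B)"
proof -
  obtain v where v: "v \<in> B" "(\<lambda>v. \<Sum>u\<in>A. pmf \<rho> u * q u v) v = Max ((\<lambda>v. \<Sum>u\<in>A. pmf \<rho> u * q u v) ` B)"
  proof -
    have "Max ((\<lambda>v. \<Sum>u\<in>A. pmf \<rho> u * q u v) ` B) \<in> (\<lambda>v. \<Sum>u\<in>A. pmf \<rho> u * q u v) ` B"
      by (rule Max_in) (use B in auto)
    thus ?thesis using that by (auto simp del: Max_in)
  qed
  show ?thesis
  proof (rule cSup_eq_maximum)
    show "Max ((\<lambda>v. \<Sum>u\<in>A. pmf \<rho> u * q u v) ` B) \<in> (\<lambda>\<sigma>. qb A B q \<rho> \<sigma>) ` PM B"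
      by (rule image_eqI[of _ _ "return_pmf v"]) (simp_all only: qb_return2[OF B(1) v(1)] v(2)[symmetric] return_PM[OF v(1)])
  qed (use qb_le_Max[OF B(1)] in auto)
qed

lemma inf_pure:
  assumes A: "finite A" "A \<noteq> {}"
  shows "(INF \<rho>\<in>PM A. qb A B q \<rho> \<sigma>) = Min ((\<lambda>u. \<Sum>v\<in>B. pmf \<sigma> v * q u v) ` A)"
proof -
  obtain u where u: "u \<in> A" "(\<lambda>u. \<Sum>v\<in>B. pmf \<sigma> v * q u v) u = Min ((\<lambda>u. \<Sum>v\<in>B. pmf \<sigma> v * q u v) ` A)"
  proof -
    have "Min ((\<lambda>u. \<Sum>v\<in>B. pmf \<sigma> v * q u v) ` A) \<in> (\<lambda>u. \<Sum>v\<in>B. pmf \<sigma> v * q u v) ` A"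
      by (rule Min_in) (use A in auto)
    thus ?thesis using that by (auto simp del: Min_in)
  qed
  show ?thesis
  proof (rule cInf_eq_minimum)
    show "Min ((\<lambda>u. \<Sum>v\<in>B. pmf \<sigma> v * q u v) ` A) \<in> (\<lambda>\<rho>. qb A B q \<rho> \<sigma>) ` PM A"
      by (rule image_eqI[of _ _ "return_pmf u"]) (simp_all only: qb_return1[OF A(1) u(1)] u(2)[symmetric] return_PM[OF u(1)])
  qed (use qb_ge_Min[OF A(1)] in auto)
qed


definition rmax :: "'a set \<Rightarrow> 'b set \<Rightarrow> ('a \<Rightarrow> 'b \<Rightarrow> real) \<Rightarrow> 'a pmf \<Rightarrow> real" where
  "rmax A B q \<rho> = Max ((\<lambda>v. \<Sum>u\<in>A. pmf \<rho> u * q u v) ` B)"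
definition cmin :: "'a set \<Rightarrow> 'b set \<Rightarrow> ('a \<Rightarrow> 'b \<Rightarrow> real) \<Rightarrow> 'b pmf \<Rightarrow> real" where
  "cmin A B q \<sigma> = Min ((\<lambda>u. \<Sum>v\<in>B. pmf \<sigma> v * q u v) ` A)"

lemma cmin_le_rmax:
  assumes "finite A" "finite B" "\<rho> \<in> PM A" "\<sigma> \<in> PM B"
  shows "cmin A B q \<sigma> \<le> rmax A B q \<rho>"
  using qb_ge_Min[OF assms(1,3), where B=B and \<sigma>=\<sigma> and q=q] qb_le_Max[OF assms(2,4), where A=A and q=q and \<rho>=\<rho>]
  unfolding cmin_def rmax_def by linarith

lemma lin_lip:
  fixes q :: "'a \<Rightarrow> 'b \<Rightarrow> real"
  assumes "finite A" "finite B" "v \<in> B"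
  shows "(\<Sum>u\<in>A. f u * q u v) \<le> (\<Sum>u\<in>A. g u * q u v) + (\<Sum>u\<in>A. \<Sum>v\<in>B. \<bar>q u v\<bar>) * (\<Sum>u\<in>A. \<bar>f u - g u\<bar>)"
proof -
  define K where "K = (\<Sum>u\<in>A. \<Sum>v\<in>B. \<bar>q u v\<bar>)"
  have qK: "\<bar>q u v\<bar> \<le> K" if "u \<in> A" for u
  proof -
    have "\<bar>q u v\<bar> \<le> (\<Sum>v\<in>B. \<bar>q u v\<bar>)" using assms by (intro member_le_sum) auto
    also have "\<dots> \<le> K" unfolding K_def using assms that
      by (intro member_le_sum[of u A "\<lambda>u. \<Sum>v\<in>B. \<bar>q u v\<bar>"]) (auto intro: sum_nonneg)
    finally show ?thesis .
  qed
  have "(\<Sum>u\<in>A. f u * q u v) - (\<Sum>u\<in>A. g u * q u v) = (\<Sum>u\<in>A. (f u - g u) * q u v)"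
    by (simp add: sum_subtractf[symmetric] algebra_simps)
  also have "\<dots> \<le> (\<Sum>u\<in>A. \<bar>f u - g u\<bar> * K)"
  proof (rule sum_mono)
    fix u assume u: "u \<in> A"
    have "(f u - g u) * q u v \<le> \<bar>(f u - g u) * q u v\<bar>" by (rule abs_ge_self)
    also have "\<dots> = \<bar>f u - g u\<bar> * \<bar>q u v\<bar>" by (rule abs_mult)
    also have "\<dots> \<le> \<bar>f u - g u\<bar> * K" by (rule mult_left_mono[OF qK[OF u]]) simp
    finally show "(f u - g u) * q u v \<le> \<bar>f u - g u\<bar> * K" .
  qed
  also have "\<dots> = K * (\<Sum>u\<in>A. \<bar>f u - g u\<bar>)" by (simp add: sum_distrib_left mult.commute)
  finally show ?thesis unfolding K_def by linarith
qed

lemma rmax_attains: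
  fixes q :: "'a \<Rightarrow> 'b \<Rightarrow> real"
  assumes A: "finite A" "A \<noteq> {}" and B: "finite B" "B \<noteq> {}"
  shows "\<exists>\<rho>\<in>PM A. \<forall>\<rho>'\<in>PM A. rmax A B q \<rho> \<le> rmax A B q \<rho>'"
proof -
  define F where "F f = Max ((\<lambda>v. \<Sum>u\<in>A. f u * q u v) ` B)" for f :: "'a \<Rightarrow> real"
  define K where "K = (\<Sum>u\<in>A. \<Sum>v\<in>B. \<bar>q u v\<bar>)"
  have K0: "0 \<le> K" unfolding K_def by (auto intro!: sum_nonneg)
  have "\<exists>f\<in>sdelta A. \<forall>g\<in>sdelta A. F f \<le> F g"
  proof (rule sdelta_attains_min[OF A K0])
    fix f g
    show "F f \<le> F g + K * (\<Sum>x\<in>A. \<bar>f x - g x\<bar>)"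
      unfolding F_def using B
    proof (subst Max_le_iff, simp_all, intro ballI)
      fix v assume v: "v \<in> B"
      have "(\<Sum>u\<in>A. g u * q u v) \<le> Max ((\<lambda>v. \<Sum>u\<in>A. g u * q u v) ` B)"
        using B v by (intro Max_ge) auto
      thus "(\<Sum>u\<in>A. f u * q u v) \<le> Max ((\<lambda>v. \<Sum>u\<in>A. g u * q u v) ` B) + K * (\<Sum>x\<in>A. \<bar>f x - g x\<bar>)"
        using lin_lip[OF A(1) B(1) v, of f q g] unfolding K_def by linarith
    qed
  qed
  then obtain f where f: "f \<in> sdelta A" "\<And>g. g \<in> sdelta A \<Longrightarrow> F f \<le> F g" by blast
  obtain \<rho> where \<rho>: "set_pmf \<rho> \<subseteq> A" "pmf \<rho> = f" using sdelta_embed[OF A(1) f(1)] by blast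
  have "\<forall>\<rho>'\<in>PM A. rmax A B q \<rho> \<le> rmax A B q \<rho>'"
  proof
    fix \<rho>' assume "\<rho>' \<in> PM A"
    hence "pmf \<rho>' \<in> sdelta A" using sdelta_pmf[OF A(1)] by (auto simp: PM_def)
    from f(2)[OF this] show "rmax A B q \<rho> \<le> rmax A B q \<rho>'" unfolding rmax_def F_def \<rho>(2)[symmetric] .
  qed
  thus ?thesis using \<rho>(1) by (auto simp: PM_def)
qed

lemma cmin_attains:
  fixes q :: "'a \<Rightarrow> 'b \<Rightarrow> real"
  assumes A: "finite A" "A \<noteq> {}" and B: "finite B" "B \<noteq> {}"
  shows "\<exists>\<sigma>\<in>PM B. \<forall>\<sigma>'\<in>PM B. cmin A B q \<sigma>' \<le> cmin A B q \<sigma>"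
proof -
  define F where "F g = - Min ((\<lambda>u. \<Sum>v\<in>B. g v * q u v) ` A)" for g :: "'b \<Rightarrow> real"
  define q' where "q' v u = q u v" for v u
  define K where "K = (\<Sum>v\<in>B. \<Sum>u\<in>A. \<bar>q' v u\<bar>)"
  have K0: "0 \<le> K" unfolding K_def by (auto intro!: sum_nonneg)
  have "\<exists>f\<in>sdelta B. \<forall>g\<in>sdelta B. F f \<le> F g"
  proof (rule sdelta_attains_min[OF B K0])
    fix f g
    have "Min ((\<lambda>u. \<Sum>v\<in>B. g v * q u v) ` A) \<le> Min ((\<lambda>u. \<Sum>v\<in>B. f v * q u v) ` A) + K * (\<Sum>x\<in>B. \<bar>g x - f x\<bar>)"
    proof -
      have "\<forall>u\<in>A. Min ((\<lambda>u. \<Sum>v\<in>B. g v * q u v) ` A) - K * (\<Sum>x\<in>B. \<bar>g x - f x\<bar>) \<le> (\<Sum>v\<in>B. f v * q u v)"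
      proof
        fix u assume u: "u \<in> A"
        have "Min ((\<lambda>u. \<Sum>v\<in>B. g v * q u v) ` A) \<le> (\<Sum>v\<in>B. g v * q u v)" using A u by (intro Min_le) auto
        moreover have "(\<Sum>v\<in>B. g v * q' v u) \<le> (\<Sum>v\<in>B. f v * q' v u) + K * (\<Sum>x\<in>B. \<bar>g x - f x\<bar>)"
          using lin_lip[OF B(1) A(1) u, of g q' f] unfolding K_def .
        ultimately show "Min ((\<lambda>u. \<Sum>v\<in>B. g v * q u v) ` A) - K * (\<Sum>x\<in>B. \<bar>g x - f x\<bar>) \<le> (\<Sum>v\<in>B. f v * q u v)"
          unfolding q'_def by linarith
      qed
      hence "Min ((\<lambda>u. \<Sum>v\<in>B. g v * q u v) ` A) - K * (\<Sum>x\<in>B. \<bar>g x - f x\<bar>) \<le> Min ((\<lambda>u. \<Sum>v\<in>B. f v * q u v) ` A)"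
        using A by (subst Min_ge_iff) auto
      thus ?thesis by linarith
    qed
    moreover have "(\<Sum>x\<in>B. \<bar>g x - f x\<bar>) = (\<Sum>x\<in>B. \<bar>f x - g x\<bar>)" by (simp add: abs_minus_commute)
    ultimately show "F f \<le> F g + K * (\<Sum>x\<in>B. \<bar>f x - g x\<bar>)" unfolding F_def by simp
  qed
  then obtain f where f: "f \<in> sdelta B" "\<And>g. g \<in> sdelta B \<Longrightarrow> F f \<le> F g" by blast
  obtain \<sigma> where \<sigma>: "set_pmf \<sigma> \<subseteq> B" "pmf \<sigma> = f" using sdelta_embed[OF B(1) f(1)] by blast
  have "\<forall>\<sigma>'\<in>PM B. cmin A B q \<sigma>' \<le> cmin A B q \<sigma>"
  proof
    fix \<sigma>' assume "\<sigma>' \<in> PM B"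
    hence "pmf \<sigma>' \<in> sdelta B" using sdelta_pmf[OF B(1)] by (auto simp: PM_def)
    from f(2)[OF this] show "cmin A B q \<sigma>' \<le> cmin A B q \<sigma>" unfolding cmin_def F_def \<sigma>(2)[symmetric] by linarith
  qed
  thus ?thesis using \<sigma>(1) by (auto simp: PM_def)
qed

lemma minimax:
  fixes q :: "'a \<Rightarrow> 'b \<Rightarrow> real"
  assumes A: "finite A" "A \<noteq> {}" and B: "finite B" "B \<noteq> {}"
  shows "(INF \<rho>\<in>PM A. rmax A B q \<rho>) = (SUP \<sigma>\<in>PM B. cmin A B q \<sigma>)"
proof -
  define up where "up = (INF \<rho>\<in>PM A. rmax A B q \<rho>)"
  define lo where "lo = (SUP \<sigma>\<in>PM B. cmin A B q \<sigma>)"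
  obtain \<rho>0 where \<rho>0: "\<rho>0 \<in> PM A" using PM_ne[OF A(2)] by blast
  obtain \<sigma>0 where \<sigma>0: "\<sigma>0 \<in> PM B" using PM_ne[OF B(2)] by blast
  have bb: "bdd_below ((\<lambda>\<rho>. rmax A B q \<rho>) ` PM A)"
    using cmin_le_rmax[OF A(1) B(1) _ \<sigma>0] by (auto intro!: bdd_belowI[of _ "cmin A B q \<sigma>0"])
  have ba: "bdd_above ((\<lambda>\<sigma>. cmin A B q \<sigma>) ` PM B)"
    using cmin_le_rmax[OF A(1) B(1) \<rho>0] by (auto intro!: bdd_aboveI[of _ "rmax A B q \<rho>0"])
  have uple: "\<And>\<rho>. \<rho> \<in> PM A \<Longrightarrow> up \<le> rmax A B q \<rho>" unfolding up_def using bb by (rule cINF_lower)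
  have lole: "\<And>\<sigma>. \<sigma> \<in> PM B \<Longrightarrow> cmin A B q \<sigma> \<le> lo" unfolding lo_def by (rule cSUP_upper[OF _ ba])
  have "lo \<le> up" unfolding lo_def
  proof (rule cSUP_least[OF PM_ne[OF B(2)]])
    fix \<sigma> assume "\<sigma> \<in> PM B"
    thus "cmin A B q \<sigma> \<le> up" unfolding up_def
      using cmin_le_rmax[OF A(1) B(1)] by (intro cINF_greatest[OF PM_ne[OF A(2)]]) auto
  qed
  moreover have "\<not> lo < up"
  proof
    assume lt: "lo < up"
    define t where "t = (lo + up) / 2"
    have t: "lo < t" "t < up" using lt by (auto simp: t_def)
    from ville[OF A(1) B, of "\<lambda>u v. q u v - t"]
    show False
    proof
      assume "\<exists>g\<in>sdelta B. \<forall>x\<in>A. 0 \<le> (\<Sum>y\<in>B. g y * (q x y - t))"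
      then obtain g where g: "g \<in> sdelta B" "\<And>x. x \<in> A \<Longrightarrow> 0 \<le> (\<Sum>y\<in>B. g y * (q x y - t))" by blast
      obtain \<sigma> where \<sigma>: "set_pmf \<sigma> \<subseteq> B" "pmf \<sigma> = g" using sdelta_embed[OF B(1) g(1)] by blast
      have gs: "sum g B = 1" using g(1) by (simp add: sdelta_def)
      have "t \<le> cmin A B q \<sigma>" unfolding cmin_def using A
      proof (subst Min_ge_iff, simp_all, intro ballI)
        fix x assume x: "x \<in> A"
        have "(\<Sum>y\<in>B. g y * (q x y - t)) = (\<Sum>y\<in>B. g y * q x y) - t"
          using gs by (simp add: algebra_simps sum_subtractf sum_distrib_left[symmetric])
        thus "t \<le> (\<Sum>v\<in>B. pmf \<sigma> v * q x v)" using g(2)[OF x] \<sigma>(2) by simp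
      qed
      moreover have "cmin A B q \<sigma> \<le> lo" using lole \<sigma>(1) by (simp add: PM_def)
      ultimately show False using t by linarith
    next
      assume "\<exists>f\<in>sdelta A. \<forall>y\<in>B. (\<Sum>x\<in>A. f x * (q x y - t)) < 0"
      then obtain f where f: "f \<in> sdelta A" "\<And>y. y \<in> B \<Longrightarrow> (\<Sum>x\<in>A. f x * (q x y - t)) < 0" by blast
      obtain \<rho> where \<rho>: "set_pmf \<rho> \<subseteq> A" "pmf \<rho> = f" using sdelta_embed[OF A(1) f(1)] by blast
      have fs: "sum f A = 1" using f(1) by (simp add: sdelta_def)
      have "rmax A B q \<rho> < t" unfolding rmax_def using B
      proof (subst Max_less_iff, simp_all, intro ballI)
        fix y assume y: "y \<in> B"
        have "(\<Sum>x\<in>A. f x * (q x y - t)) = (\<Sum>x\<in>A. f x * q x y) - t"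
          using fs by (simp add: algebra_simps sum_subtractf sum_distrib_left[symmetric])
        thus "(\<Sum>u\<in>A. pmf \<rho> u * q u y) < t" using f(2)[OF y] \<rho>(2) by simp
      qed
      moreover have "up \<le> rmax A B q \<rho>" using uple \<rho>(1) by (simp add: PM_def)
      ultimately show False using t by linarith
    qed
  qed
  ultimately show ?thesis unfolding up_def lo_def by linarith
qed


lemma sum_pmf_le1: "finite A \<Longrightarrow> (\<Sum>x\<in>A. pmf \<rho> x) \<le> 1"
  using measure_measure_pmf_finite[of A \<rho>] measure_pmf.prob_le_1[of \<rho> A] by simp

lemma cur_hext[simp]: "cur (hext h u v j) = j"
  by (simp add: cur_def hext_def)

lemma cur_nil[simp]: "cur (i, []) = i"
  by (simp add: cur_def)

fun ecW ::
  "nat \<Rightarrow> (nat \<Rightarrow> 'u set) \<Rightarrow> (nat \<Rightarrow> 'v set) \<Rightarrow> (nat \<Rightarrow> nat \<Rightarrow> 'u \<Rightarrow> 'v \<Rightarrow> real)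
   \<Rightarrow> (nat \<Rightarrow> 'u \<Rightarrow> 'v \<Rightarrow> nat \<Rightarrow> real) \<Rightarrow> (nat \<Rightarrow> real)
   \<Rightarrow> (('u, 'v) hist \<Rightarrow> 'u pmf) \<Rightarrow> (('u, 'v) hist \<Rightarrow> 'v pmf) \<Rightarrow> nat \<Rightarrow> ('u, 'v) hist \<Rightarrow> real" where
  "ecW n U V p gh W \<pi>1 \<pi>2 0 h = (if cur h \<in> states n then W (cur h) else 0)"
| "ecW n U V p gh W \<pi>1 \<pi>2 (Suc m) h =
     (if cur h \<in> states n then
        (\<Sum>u\<in>U (cur h). \<Sum>v\<in>V (cur h). pmf (\<pi>1 h) u * pmf (\<pi>2 h) v *
           (\<Sum>j\<in>{0..n}. p (cur h) j u v *
              (gh (cur h) u v j + ecW n U V p gh W \<pi>1 \<pi>2 m (hext h u v j))))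
      else 0)"

locale ssp =
  fixes n :: nat and U :: "nat \<Rightarrow> 'u set" and V :: "nat \<Rightarrow> 'v set"
    and p :: "nat \<Rightarrow> nat \<Rightarrow> 'u \<Rightarrow> 'v \<Rightarrow> real"
    and gh :: "nat \<Rightarrow> 'u \<Rightarrow> 'v \<Rightarrow> nat \<Rightarrow> real"
  assumes model: "game_model n U V p"
begin

abbreviation "S \<equiv> states n"

lemma finS: "finite S" by (simp add: states_def)
lemma zero_notin[simp]: "0 \<notin> S" by (simp add: states_def)
lemma S_sub: "S \<subseteq> {0..n}" by (auto simp: states_def)
lemma finU: "i \<in> S \<Longrightarrow> finite (U i)" and neU: "i \<in> S \<Longrightarrow> U i \<noteq> {}"
  and finV: "i \<in> S \<Longrightarrow> finite (V i)" and neV: "i \<in> S \<Longrightarrow> V i \<noteq> {}"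
  using model by (auto simp: game_model_def)
lemma p_nn: "i \<in> S \<Longrightarrow> u \<in> U i \<Longrightarrow> v \<in> V i \<Longrightarrow> j \<in> {0..n} \<Longrightarrow> 0 \<le> p i j u v"
  using model by (auto simp: game_model_def)
lemma p_sum: "i \<in> S \<Longrightarrow> u \<in> U i \<Longrightarrow> v \<in> V i \<Longrightarrow> (\<Sum>j\<in>{0..n}. p i j u v) = 1"
  using model by (auto simp: game_model_def)
lemma p_sumS: "i \<in> S \<Longrightarrow> u \<in> U i \<Longrightarrow> v \<in> V i \<Longrightarrow> (\<Sum>j\<in>S. p i j u v) \<le> 1"
  using p_sum[of i u v] sum_mono2[OF _ S_sub, of "\<lambda>j. p i j u v"] p_nn[of i u v] by force

definition E :: "nat \<Rightarrow> 'u pmf \<Rightarrow> 'v pmf \<Rightarrow> ('u \<Rightarrow> 'v \<Rightarrow> nat \<Rightarrow> real) \<Rightarrow> real" where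
  "E i \<rho> \<sigma> X = (\<Sum>u\<in>U i. \<Sum>v\<in>V i. pmf \<rho> u * pmf \<sigma> v * (\<Sum>j\<in>{0..n}. p i j u v * X u v j))"

lemma E_mono:
  assumes "i \<in> S" "\<And>u v j. u \<in> U i \<Longrightarrow> v \<in> V i \<Longrightarrow> j \<in> {0..n} \<Longrightarrow> X u v j \<le> Y u v j"
  shows "E i \<rho> \<sigma> X \<le> E i \<rho> \<sigma> Y"
  unfolding E_def using assms p_nn
  by (intro sum_mono mult_left_mono) (auto simp: pmf_nonneg)

lemma E_add: "E i \<rho> \<sigma> (\<lambda>u v j. X u v j + Y u v j) = E i \<rho> \<sigma> X + E i \<rho> \<sigma> Y"
  unfolding E_def by (simp add: algebra_simps sum.distrib)

lemma E_diff: "E i \<rho> \<sigma> (\<lambda>u v j. X u v j - Y u v j) = E i \<rho> \<sigma> X - E i \<rho> \<sigma> Y"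
  unfolding E_def by (simp add: algebra_simps sum_subtractf)

lemma E_cmult: "E i \<rho> \<sigma> (\<lambda>u v j. c * X u v j) = c * E i \<rho> \<sigma> X"
  unfolding E_def by (simp add: algebra_simps sum_distrib_left)

lemma E_abs: "i \<in> S \<Longrightarrow> \<bar>E i \<rho> \<sigma> X\<bar> \<le> E i \<rho> \<sigma> (\<lambda>u v j. \<bar>X u v j\<bar>)"
  unfolding E_def
  apply (rule order_trans[OF sum_abs], rule sum_mono)
  apply (rule order_trans[OF sum_abs], rule sum_mono)
  using p_nn by (auto simp: abs_mult pmf_nonneg intro!: mult_left_mono order_trans[OF sum_abs] sum_mono)

lemma E_nonneg: "i \<in> S \<Longrightarrow> (\<And>u v j. u \<in> U i \<Longrightarrow> v \<in> V i \<Longrightarrow> j \<in> {0..n} \<Longrightarrow> 0 \<le> X u v j) \<Longrightarrow> 0 \<le> E i \<rho> \<sigma> X"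
  using E_mono[of i "\<lambda>u v j. 0" X \<rho> \<sigma>] by (simp add: E_def)

lemma E_one: "i \<in> S \<Longrightarrow> E i \<rho> \<sigma> (\<lambda>u v j. 1) \<le> 1"
proof -
  assume i: "i \<in> S"
  have "E i \<rho> \<sigma> (\<lambda>u v j. 1) = (\<Sum>u\<in>U i. pmf \<rho> u * (\<Sum>v\<in>V i. pmf \<sigma> v))"
    unfolding E_def using p_sum[OF i] by (simp add: sum_distrib_left)
  also have "\<dots> \<le> (\<Sum>u\<in>U i. pmf \<rho> u * 1)"
    using sum_pmf_le1[OF finV[OF i]] by (intro sum_mono mult_left_mono) (auto simp: pmf_nonneg)
  also have "\<dots> \<le> 1" using sum_pmf_le1[OF finU[OF i]] by simp
  finally show ?thesis .
qed

lemma E_one_eq: "i \<in> S \<Longrightarrow> set_pmf \<rho> \<subseteq> U i \<Longrightarrow> set_pmf \<sigma> \<subseteq> V i \<Longrightarrow> E i \<rho> \<sigma> (\<lambda>u v j. 1) = 1"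
proof -
  assume i: "i \<in> S" and r: "set_pmf \<rho> \<subseteq> U i" and s: "set_pmf \<sigma> \<subseteq> V i"
  have "E i \<rho> \<sigma> (\<lambda>u v j. 1) = (\<Sum>u\<in>U i. pmf \<rho> u * (\<Sum>v\<in>V i. pmf \<sigma> v))"
    unfolding E_def using p_sum[OF i] by (simp add: sum_distrib_left)
  also have "\<dots> = 1" using sum_pmf_eq_1[OF finV[OF i] s] sum_pmf_eq_1[OF finU[OF i] r] by simp
  finally show ?thesis .
qed

lemma E_const_le: "i \<in> S \<Longrightarrow> 0 \<le> c \<Longrightarrow> E i \<rho> \<sigma> (\<lambda>u v j. c) \<le> c"
  using E_cmult[of i \<rho> \<sigma> c "\<lambda>u v j. 1"] E_one[of i \<rho> \<sigma>]
  by (simp add: mult_left_le)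

end

context ssp begin

abbreviation "ec \<equiv> ecost n U V p gh"
abbreviation "sv \<equiv> survp n U V p"
abbreviation "ew \<equiv> ecW n U V p gh"

definition Mv :: "(nat \<Rightarrow> real) \<Rightarrow> nat \<Rightarrow> 'u \<Rightarrow> 'v \<Rightarrow> real" where
  "Mv X i u v = gexp n p gh i u v + (\<Sum>j\<in>S. p i j u v * X j)"

lemma ec_Suc: "cur h \<in> S \<Longrightarrow> ec \<pi>1 \<pi>2 (Suc m) h = E (cur h) (\<pi>1 h) (\<pi>2 h) (\<lambda>u v j. gh (cur h) u v j + ec \<pi>1 \<pi>2 m (hext h u v j))"
  by (simp add: E_def)
lemma sv_Suc: "cur h \<in> S \<Longrightarrow> sv \<pi>1 \<pi>2 (Suc m) h = E (cur h) (\<pi>1 h) (\<pi>2 h) (\<lambda>u v j. sv \<pi>1 \<pi>2 m (hext h u v j))"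
  by (simp add: E_def)
lemma ew_Suc: "cur h \<in> S \<Longrightarrow> ew W \<pi>1 \<pi>2 (Suc m) h = E (cur h) (\<pi>1 h) (\<pi>2 h) (\<lambda>u v j. gh (cur h) u v j + ew W \<pi>1 \<pi>2 m (hext h u v j))"
  by (simp add: E_def)
lemma ec_out: "cur h \<notin> S \<Longrightarrow> ec \<pi>1 \<pi>2 k h = 0" by (cases k) auto
lemma sv_out: "cur h \<notin> S \<Longrightarrow> sv \<pi>1 \<pi>2 k h = 0" by (cases k) auto
lemma ew_out: "cur h \<notin> S \<Longrightarrow> ew W \<pi>1 \<pi>2 k h = 0" by (cases k) auto
declare ecost.simps(2)[simp del] survp.simps(2)[simp del] ecW.simps(2)[simp del]

lemma sv_0: "cur h \<in> S \<Longrightarrow> sv \<pi>1 \<pi>2 0 h = 1" by simp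
lemma ew_0: "ew W \<pi>1 \<pi>2 0 h = (if cur h \<in> S then W (cur h) else 0)" by simp

lemma sv_nn: "0 \<le> sv \<pi>1 \<pi>2 k h"
proof (induction k arbitrary: h)
  case 0 then show ?case by simp
next
  case (Suc k)
  show ?case
  proof (cases "cur h \<in> S")
    case True
    show ?thesis unfolding sv_Suc[OF True] by (rule E_nonneg[OF True]) (use Suc in auto)
  qed (simp add: sv_out)
qed

lemma sv_le1: "sv \<pi>1 \<pi>2 k h \<le> 1"
proof (induction k arbitrary: h)
  case 0 then show ?case by simp
next
  case (Suc k)
  show ?case
  proof (cases "cur h \<in> S")
    case True
    have "sv \<pi>1 \<pi>2 (Suc k) h \<le> E (cur h) (\<pi>1 h) (\<pi>2 h) (\<lambda>u v j. 1)"
      unfolding sv_Suc[OF True] by (rule E_mono[OF True]) (use Suc in auto)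
    also have "\<dots> \<le> 1" by (rule E_one[OF True])
    finally show ?thesis .
  qed (simp add: sv_out)
qed

lemma sv_Suc_le: "sv \<pi>1 \<pi>2 (Suc k) h \<le> sv \<pi>1 \<pi>2 k h"
proof (induction k arbitrary: h)
  case 0
  show ?case
  proof (cases "cur h \<in> S")
    case True
    have "sv \<pi>1 \<pi>2 (Suc 0) h \<le> E (cur h) (\<pi>1 h) (\<pi>2 h) (\<lambda>u v j. 1)"
      unfolding sv_Suc[OF True] by (rule E_mono[OF True]) (use sv_le1 in auto)
    also have "\<dots> \<le> 1" by (rule E_one[OF True])
    finally show ?thesis using True by simp
  qed (simp add: sv_out)
next
  case (Suc k)
  show ?case
  proof (cases "cur h \<in> S")
    case True
    show ?thesis unfolding sv_Suc[OF True] by (rule E_mono[OF True]) (use Suc in auto)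
  qed (simp add: sv_out)
qed

lemma sv_antimono: "k \<le> k' \<Longrightarrow> sv \<pi>1 \<pi>2 k' h \<le> sv \<pi>1 \<pi>2 k h"
proof (induction k' rule: dec_induct)
  case (step m) then show ?case using sv_Suc_le[of \<pi>1 \<pi>2 m h] by linarith
qed simp

lemma ec_ew0: "ec \<pi>1 \<pi>2 k h = ew (\<lambda>_. 0) \<pi>1 \<pi>2 k h"
  by (induction k arbitrary: h) (auto simp: ecost.simps ecW.simps)

lemma ew_diff:
  assumes "\<And>j. j \<in> S \<Longrightarrow> \<bar>W j - W' j\<bar> \<le> c"
  shows "\<bar>ew W \<pi>1 \<pi>2 k h - ew W' \<pi>1 \<pi>2 k h\<bar> \<le> c * sv \<pi>1 \<pi>2 k h"
proof (induction k arbitrary: h)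
  case 0 then show ?case using assms by simp
next
  case (Suc k)
  show ?case
  proof (cases "cur h \<in> S")
    case True
    have "\<bar>ew W \<pi>1 \<pi>2 (Suc k) h - ew W' \<pi>1 \<pi>2 (Suc k) h\<bar> = \<bar>
      E (cur h) (\<pi>1 h) (\<pi>2 h) (\<lambda>u v j. ew W \<pi>1 \<pi>2 k (hext h u v j) - ew W' \<pi>1 \<pi>2 k (hext h u v j))\<bar>"
      unfolding ew_Suc[OF True] E_diff[symmetric] by (simp only: add_diff_cancel_left)
    also have "\<dots> \<le> E (cur h) (\<pi>1 h) (\<pi>2 h) (\<lambda>u v j. \<bar>ew W \<pi>1 \<pi>2 k (hext h u v j) - ew W' \<pi>1 \<pi>2 k (hext h u v j)\<bar>)"
      by (rule E_abs[OF True])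
    also have "\<dots> \<le> E (cur h) (\<pi>1 h) (\<pi>2 h) (\<lambda>u v j. c * sv \<pi>1 \<pi>2 k (hext h u v j))"
      by (rule E_mono[OF True]) (use Suc in auto)
    also have "\<dots> = c * sv \<pi>1 \<pi>2 (Suc k) h" unfolding E_cmult sv_Suc[OF True] ..
    finally show ?thesis .
  qed (simp add: ew_out sv_out)
qed

lemma ew_mono:
  assumes "\<And>j. j \<in> S \<Longrightarrow> W j \<le> W' j"
  shows "ew W \<pi>1 \<pi>2 k h \<le> ew W' \<pi>1 \<pi>2 k h"
proof (induction k arbitrary: h)
  case 0 then show ?case using assms by simp
next
  case (Suc k)
  show ?case
  proof (cases "cur h \<in> S")
    case True
    show ?thesis unfolding ew_Suc[OF True] by (rule E_mono[OF True]) (use Suc in auto)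
  qed (simp add: ew_out)
qed

lemma ec_tail:
  assumes "\<And>h'. \<bar>ec \<pi>1 \<pi>2 b h'\<bar> \<le> B"
  shows "\<bar>ec \<pi>1 \<pi>2 (a + b) h - ec \<pi>1 \<pi>2 a h\<bar> \<le> B * sv \<pi>1 \<pi>2 a h"
proof (induction a arbitrary: h)
  case 0
  show ?case
  proof (cases "cur h \<in> S")
    case True then show ?thesis using assms[of h] by simp
  qed (simp add: ec_out sv_out)
next
  case (Suc a)
  show ?case
  proof (cases "cur h \<in> S")
    case True
    have "\<bar>ec \<pi>1 \<pi>2 (Suc a + b) h - ec \<pi>1 \<pi>2 (Suc a) h\<bar> = \<bar>
      E (cur h) (\<pi>1 h) (\<pi>2 h) (\<lambda>u v j. ec \<pi>1 \<pi>2 (a + b) (hext h u v j) - ec \<pi>1 \<pi>2 a (hext h u v j))\<bar>"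
      unfolding add_Suc ec_Suc[OF True] E_diff[symmetric] by (simp only: add_diff_cancel_left)
    also have "\<dots> \<le> E (cur h) (\<pi>1 h) (\<pi>2 h) (\<lambda>u v j. \<bar>ec \<pi>1 \<pi>2 (a + b) (hext h u v j) - ec \<pi>1 \<pi>2 a (hext h u v j)\<bar>)"
      by (rule E_abs[OF True])
    also have "\<dots> \<le> E (cur h) (\<pi>1 h) (\<pi>2 h) (\<lambda>u v j. B * sv \<pi>1 \<pi>2 a (hext h u v j))"
      by (rule E_mono[OF True]) (use Suc in auto)
    also have "\<dots> = B * sv \<pi>1 \<pi>2 (Suc a) h" unfolding E_cmult sv_Suc[OF True] ..
    finally show ?thesis .
  qed (simp add: ec_out sv_out)
qed

lemma sv_semigroup:
  assumes "\<And>h'. sv \<pi>1 \<pi>2 b h' \<le> B"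
  shows "sv \<pi>1 \<pi>2 (a + b) h \<le> sv \<pi>1 \<pi>2 a h * B"
proof (induction a arbitrary: h)
  case 0
  show ?case
  proof (cases "cur h \<in> S")
    case True then show ?thesis using assms[of h] by simp
  qed (simp add: sv_out)
next
  case (Suc a)
  show ?case
  proof (cases "cur h \<in> S")
    case True
    have "sv \<pi>1 \<pi>2 (Suc a + b) h \<le> E (cur h) (\<pi>1 h) (\<pi>2 h) (\<lambda>u v j. B * sv \<pi>1 \<pi>2 a (hext h u v j))"
      unfolding add_Suc sv_Suc[OF True] by (rule E_mono[OF True]) (use Suc in \<open>auto simp: mult.commute\<close>)
    also have "\<dots> = sv \<pi>1 \<pi>2 (Suc a) h * B" unfolding E_cmult sv_Suc[OF True] by simp
    finally show ?thesis .
  qed (simp add: sv_out)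
qed

lemma E_Mv: "i \<in> S \<Longrightarrow> E i \<rho> \<sigma> (\<lambda>u v j. gh i u v j + (if j \<in> S then X j else 0)) = qb (U i) (V i) (\<lambda>u v. Mv X i u v) \<rho> \<sigma>"
proof -
  assume i: "i \<in> S"
  have "(\<Sum>j\<in>{0..n}. p i j u v * (gh i u v j + (if j \<in> S then X j else 0))) = Mv X i u v" for u v
  proof -
    have "(\<Sum>j\<in>{0..n}. p i j u v * (if j \<in> S then X j else 0)) = (\<Sum>j\<in>{0..n}. if j \<in> S then p i j u v * X j else 0)"
      by (rule sum.cong) auto
    also have "\<dots> = (\<Sum>j\<in>{0..n} \<inter> S. p i j u v * X j)" by (rule sum.inter_restrict[symmetric]) simp
    also have "{0..n} \<inter> S = S" using S_sub by auto
    finally show ?thesis unfolding Mv_def gexp_def by (simp add: algebra_simps sum.distrib)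
  qed
  thus ?thesis unfolding E_def qb_def by simp
qed

lemma step_le:
  assumes i: "cur h = i" "i \<in> S"
    and X: "\<And>u v j. u \<in> U i \<Longrightarrow> v \<in> V i \<Longrightarrow> j \<in> S \<Longrightarrow> ew Z \<pi>1 \<pi>2 k (hext h u v j) \<le> X j"
  shows "ew Z \<pi>1 \<pi>2 (Suc k) h \<le> qb (U i) (V i) (\<lambda>u v. Mv X i u v) (\<pi>1 h) (\<pi>2 h)"
proof -
  have hS: "cur h \<in> S" using i by simp
  have "ew Z \<pi>1 \<pi>2 (Suc k) h \<le> E i (\<pi>1 h) (\<pi>2 h) (\<lambda>u v j. gh i u v j + (if j \<in> S then X j else 0))"
    unfolding ew_Suc[OF hS] i(1)
    by (rule E_mono[OF i(2)]) (use X in \<open>auto simp: ew_out\<close>)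
  thus ?thesis using E_Mv[OF i(2)] by simp
qed

lemma step_ge:
  assumes i: "cur h = i" "i \<in> S"
    and X: "\<And>u v j. u \<in> U i \<Longrightarrow> v \<in> V i \<Longrightarrow> j \<in> S \<Longrightarrow> X j \<le> ew Z \<pi>1 \<pi>2 k (hext h u v j)"
  shows "qb (U i) (V i) (\<lambda>u v. Mv X i u v) (\<pi>1 h) (\<pi>2 h) \<le> ew Z \<pi>1 \<pi>2 (Suc k) h"
proof -
  have hS: "cur h \<in> S" using i by simp
  have "E i (\<pi>1 h) (\<pi>2 h) (\<lambda>u v j. gh i u v j + (if j \<in> S then X j else 0)) \<le> ew Z \<pi>1 \<pi>2 (Suc k) h"
    unfolding ew_Suc[OF hS] i(1)
    by (rule E_mono[OF i(2)]) (use X in \<open>auto simp: ew_out\<close>)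
  thus ?thesis using E_Mv[OF i(2)] by simp
qed

end

context ssp begin

definition Tm :: "(nat \<Rightarrow> 'u pmf) \<Rightarrow> (nat \<Rightarrow> real) \<Rightarrow> nat \<Rightarrow> real" where
  "Tm \<mu> X i = rmax (U i) (V i) (\<lambda>u v. Mv X i u v) (\<mu> i)"

definition tp :: "(nat \<Rightarrow> 'u pmf) \<Rightarrow> (nat \<Rightarrow> 'v pmf) \<Rightarrow> (nat \<Rightarrow> real) \<Rightarrow> nat \<Rightarrow> real" where
  "tp \<mu> \<nu> X i = qb (U i) (V i) (\<lambda>u v. Mv X i u v) (\<mu> i) (\<nu> i)"

definition nrm :: "(nat \<Rightarrow> real) \<Rightarrow> real" where
  "nrm X = (\<Sum>j\<in>S. \<bar>X j\<bar>)"

lemma nrm_nn: "0 \<le> nrm X" by (simp add: nrm_def sum_nonneg)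
lemma nrm_ge: "j \<in> S \<Longrightarrow> \<bar>X j\<bar> \<le> nrm X"
  unfolding nrm_def by (rule member_le_sum) (auto simp: finS)

lemma stat_apply: "stat \<mu> h = \<mu> (cur h)" by (simp add: stat_def)

lemma ew_markov: "ew W (stat \<mu>) (stat \<nu>) k h = ew W (stat \<mu>) (stat \<nu>) k (cur h, [])"
proof (induction k arbitrary: h)
  case 0 then show ?case by simp
next
  case (Suc k)
  show ?case
  proof (cases "cur h \<in> S")
    case True
    have "\<And>u v j. ew W (stat \<mu>) (stat \<nu>) k (hext h u v j) = ew W (stat \<mu>) (stat \<nu>) k (hext (cur h, []) u v j)"
      using Suc by (metis cur_hext)
    then show ?thesis using True
      by (simp add: ew_Suc stat_apply[of \<mu> h] stat_apply[of \<mu> "(cur h, [])"] stat_apply[of \<nu> h] stat_apply[of \<nu> "(cur h, [])"])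
  qed (simp add: ew_out)
qed

lemma sv_markov: "sv (stat \<mu>) (stat \<nu>) k h = sv (stat \<mu>) (stat \<nu>) k (cur h, [])"
proof (induction k arbitrary: h)
  case 0 then show ?case by simp
next
  case (Suc k)
  show ?case
  proof (cases "cur h \<in> S")
    case True
    have "\<And>u v j. sv (stat \<mu>) (stat \<nu>) k (hext h u v j) = sv (stat \<mu>) (stat \<nu>) k (hext (cur h, []) u v j)"
      using Suc by (metis cur_hext)
    then show ?thesis using True
      by (simp add: sv_Suc stat_apply[of \<mu> h] stat_apply[of \<mu> "(cur h, [])"] stat_apply[of \<nu> h] stat_apply[of \<nu> "(cur h, [])"])
  qed (simp add: sv_out)
qed

lemma ec_markov: "ec (stat \<mu>) (stat \<nu>) k h = ec (stat \<mu>) (stat \<nu>) k (cur h, [])"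
  using ew_markov ec_ew0 by metis

lemma Mv_mono: "i \<in> S \<Longrightarrow> u \<in> U i \<Longrightarrow> v \<in> V i \<Longrightarrow> (\<And>j. j \<in> S \<Longrightarrow> X j \<le> Y j) \<Longrightarrow> Mv X i u v \<le> Mv Y i u v"
  unfolding Mv_def using S_sub p_nn by (auto intro!: sum_mono mult_left_mono)

lemma Mv_shift: "i \<in> S \<Longrightarrow> u \<in> U i \<Longrightarrow> v \<in> V i \<Longrightarrow> 0 \<le> d \<Longrightarrow> Mv (\<lambda>j. X j + d) i u v \<le> Mv X i u v + d"
proof -
  assume a: "i \<in> S" "u \<in> U i" "v \<in> V i" "0 \<le> d"
  have "Mv (\<lambda>j. X j + d) i u v = Mv X i u v + d * (\<Sum>j\<in>S. p i j u v)"
    unfolding Mv_def by (simp add: algebra_simps sum.distrib sum_distrib_left)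
  also have "\<dots> \<le> Mv X i u v + d * 1" using p_sumS[OF a(1-3)] a(4) by (intro add_left_mono mult_left_mono) auto
  finally show ?thesis by simp
qed

lemma Mv_shift_ge: "i \<in> S \<Longrightarrow> u \<in> U i \<Longrightarrow> v \<in> V i \<Longrightarrow> 0 \<le> d \<Longrightarrow> Mv X i u v - d \<le> Mv (\<lambda>j. X j - d) i u v"
proof -
  assume a: "i \<in> S" "u \<in> U i" "v \<in> V i" "0 \<le> d"
  have "Mv (\<lambda>j. X j - d) i u v = Mv X i u v - d * (\<Sum>j\<in>S. p i j u v)"
    unfolding Mv_def by (simp add: algebra_simps sum_subtractf sum_distrib_left)
  moreover have "d * (\<Sum>j\<in>S. p i j u v) \<le> d * 1" using p_sumS[OF a(1-3)] a(4) by (intro mult_left_mono) auto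
  ultimately show ?thesis by simp
qed

lemma qb_le_Tm: "i \<in> S \<Longrightarrow> \<sigma> \<in> PM (V i) \<Longrightarrow> qb (U i) (V i) (\<lambda>u v. Mv X i u v) (\<mu> i) \<sigma> \<le> Tm \<mu> X i"
  unfolding Tm_def rmax_def by (rule qb_le_Max[OF finV])

lemma Tm_attain: "i \<in> S \<Longrightarrow> \<exists>v\<in>V i. Tm \<mu> X i = qb (U i) (V i) (\<lambda>u v. Mv X i u v) (\<mu> i) (return_pmf v)"
proof -
  assume i: "i \<in> S"
  have "Max ((\<lambda>v. \<Sum>u\<in>U i. pmf (\<mu> i) u * Mv X i u v) ` V i) \<in> (\<lambda>v. \<Sum>u\<in>U i. pmf (\<mu> i) u * Mv X i u v) ` V i"
    using finV[OF i] neV[OF i] by (intro Max_in) auto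
  then obtain v where v: "v \<in> V i" "Max ((\<lambda>v. \<Sum>u\<in>U i. pmf (\<mu> i) u * Mv X i u v) ` V i) = (\<Sum>u\<in>U i. pmf (\<mu> i) u * Mv X i u v)"
    by auto
  show ?thesis
    using v qb_return2[OF finV[OF i] v(1)] unfolding Tm_def rmax_def by metis
qed

lemma Tm_mono: "i \<in> S \<Longrightarrow> (\<And>j. j \<in> S \<Longrightarrow> X j \<le> Y j) \<Longrightarrow> Tm \<mu> X i \<le> Tm \<mu> Y i"
proof -
  assume i: "i \<in> S" and XY: "\<And>j. j \<in> S \<Longrightarrow> X j \<le> Y j"
  obtain v where v: "v \<in> V i" "Tm \<mu> X i = qb (U i) (V i) (\<lambda>u v. Mv X i u v) (\<mu> i) (return_pmf v)"
    using Tm_attain[OF i] by blast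
  have "qb (U i) (V i) (\<lambda>u v. Mv X i u v) (\<mu> i) (return_pmf v) \<le> qb (U i) (V i) (\<lambda>u v. Mv Y i u v) (\<mu> i) (return_pmf v)"
    unfolding qb_def using Mv_mono[OF i _ _ XY]
    by (intro sum_mono mult_left_mono) (auto simp: pmf_nonneg)
  also have "\<dots> \<le> Tm \<mu> Y i" using qb_le_Tm[OF i] v(1) by (simp add: PM_def)
  finally show ?thesis using v(2) by simp
qed

lemma Tm_shift:
  assumes i: "i \<in> S" and mu: "set_pmf (\<mu> i) \<subseteq> U i" and d: "0 \<le> d"
  shows "Tm \<mu> (\<lambda>j. X j + d) i \<le> Tm \<mu> X i + d"
proof -
  obtain v where v: "v \<in> V i" "Tm \<mu> (\<lambda>j. X j + d) i = qb (U i) (V i) (\<lambda>u v. Mv (\<lambda>j. X j + d) i u v) (\<mu> i) (return_pmf v)"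
    using Tm_attain[OF i] by blast
  have "qb (U i) (V i) (\<lambda>u v. Mv (\<lambda>j. X j + d) i u v) (\<mu> i) (return_pmf v) = (\<Sum>u\<in>U i. pmf (\<mu> i) u * Mv (\<lambda>j. X j + d) i u v)"
    by (rule qb_return2[OF finV[OF i] v(1)])
  also have "\<dots> \<le> (\<Sum>u\<in>U i. pmf (\<mu> i) u * (Mv X i u v + d))"
    using Mv_shift[OF i _ v(1) d] by (intro sum_mono mult_left_mono) (auto simp: pmf_nonneg)
  also have "\<dots> = (\<Sum>u\<in>U i. pmf (\<mu> i) u * Mv X i u v) + d"
    using sum_pmf_eq_1[OF finU[OF i] mu] by (simp add: algebra_simps sum.distrib sum_distrib_left[symmetric])
  also have "(\<Sum>u\<in>U i. pmf (\<mu> i) u * Mv X i u v) = qb (U i) (V i) (\<lambda>u v. Mv X i u v) (\<mu> i) (return_pmf v)"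
    by (rule qb_return2[OF finV[OF i] v(1), symmetric])
  also have "\<dots> \<le> Tm \<mu> X i" using qb_le_Tm[OF i] v(1) by (simp add: PM_def)
  finally show ?thesis using v(2) by simp
qed

lemma not_prolonging:
  assumes "\<not> prolonging n U V p \<pi>1 \<pi>2" "i \<in> S" "0 < e"
  shows "\<exists>N. \<forall>k\<ge>N. sv \<pi>1 \<pi>2 k (i, []) < e"
proof -
  have "\<not> (\<forall>t. e \<le> sv \<pi>1 \<pi>2 t (i, []))" using assms unfolding prolonging_def by blast
  then obtain t where "sv \<pi>1 \<pi>2 t (i, []) < e" by (auto simp: not_le)
  thus ?thesis using sv_antimono[of t _ \<pi>1 \<pi>2 "(i, [])"] by (intro exI[of _ t]) force
qed

end

locale ssp3 = ssp +
  assumes A3: "\<And>\<mu> \<nu>. \<mu> \<in> SR n U \<Longrightarrow> \<nu> \<in> SR n V \<Longrightarrow>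
     (\<exists>c. \<forall>k. \<forall>i\<in>states n. \<bar>ecost n U V p gh (stat \<mu>) (stat \<nu>) k (i, [])\<bar> \<le> c) \<Longrightarrow>
     \<not> prolonging n U V p (stat \<mu>) (stat \<nu>)"
begin

lemma ew_ge_stat:
  assumes "\<mu> \<in> SR n U" "\<And>i. i \<in> S \<Longrightarrow> X i \<le> tp \<mu> \<nu> X i"
  shows "cur h \<in> S \<Longrightarrow> X (cur h) \<le> ew X (stat \<mu>) (stat \<nu>) k h"
proof (induction k arbitrary: h)
  case 0 then show ?case by simp
next
  case (Suc k)
  have "X (cur h) \<le> tp \<mu> \<nu> X (cur h)" using assms(2) Suc.prems by blast
  also have "\<dots> = qb (U (cur h)) (V (cur h)) (\<lambda>u v. Mv X (cur h) u v) (stat \<mu> h) (stat \<nu> h)"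
    by (simp add: tp_def stat_apply)
  also have "\<dots> \<le> ew X (stat \<mu>) (stat \<nu>) (Suc k) h"
    by (rule step_ge[OF refl Suc.prems]) (metis Suc.IH cur_hext)
  finally show ?case .
qed

lemma ew_le_Tm:
  assumes "\<pi>2 \<in> Pi2 n V" "\<And>i. i \<in> S \<Longrightarrow> Tm \<mu> X i \<le> X i"
  shows "cur h \<in> S \<Longrightarrow> ew X (stat \<mu>) \<pi>2 k h \<le> X (cur h)"
proof (induction k arbitrary: h)
  case 0 then show ?case by simp
next
  case (Suc k)
  have "ew X (stat \<mu>) \<pi>2 (Suc k) h \<le> qb (U (cur h)) (V (cur h)) (\<lambda>u v. Mv X (cur h) u v) (stat \<mu> h) (\<pi>2 h)"
    by (rule step_le[OF refl Suc.prems]) (metis Suc.IH cur_hext)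
  also have "\<dots> \<le> Tm \<mu> X (cur h)"
    unfolding stat_apply by (rule qb_le_Tm[OF Suc.prems]) (use assms(1) Suc.prems in \<open>unfold Pi2_def PM_def, blast\<close>)
  also have "\<dots> \<le> X (cur h)" using assms(2) Suc.prems by blast
  finally show ?case .
qed

lemma ew_le_iter:
  assumes "\<pi>2 \<in> Pi2 n V"
  shows "cur h \<in> S \<Longrightarrow> ew (W 0) (stat \<mu>) \<pi>2 k h \<le> rec_nat (W 0) (\<lambda>_ X. Tm \<mu> X) k (cur h)"
proof (induction k arbitrary: h)
  case 0 then show ?case by simp
next
  case (Suc k)
  have "ew (W 0) (stat \<mu>) \<pi>2 (Suc k) h \<le> qb (U (cur h)) (V (cur h)) (\<lambda>u v. Mv (rec_nat (W 0) (\<lambda>_ X. Tm \<mu> X) k) (cur h) u v) (stat \<mu> h) (\<pi>2 h)"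
    by (rule step_le[OF refl Suc.prems]) (metis Suc.IH cur_hext)
  also have "\<dots> \<le> Tm \<mu> (rec_nat (W 0) (\<lambda>_ X. Tm \<mu> X) k) (cur h)"
    unfolding stat_apply by (rule qb_le_Tm[OF Suc.prems]) (use assms(1) Suc.prems in \<open>unfold Pi2_def PM_def, blast\<close>)
  finally show ?case by simp
qed

lemma ec_bounds:
  "\<bar>ec \<pi>1 \<pi>2 k h - ew X \<pi>1 \<pi>2 k h\<bar> \<le> nrm X * sv \<pi>1 \<pi>2 k h"
  using ew_diff[of "\<lambda>_. 0" X "nrm X" \<pi>1 \<pi>2 k h] nrm_ge[of _ X] ec_ew0 by simp

theorem bound2:
  assumes mu: "\<mu> \<in> SR n U" and J: "\<And>i. i \<in> S \<Longrightarrow> Tm \<mu> J i = J i"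
    and pi2: "\<pi>2 \<in> Pi2 n V" and i: "i \<in> S" and e: "0 < e"
  shows "\<exists>N. \<forall>k\<ge>N. ec (stat \<mu>) \<pi>2 k (i, []) \<le> J i + e"
proof -
  have muS: "\<And>i. i \<in> S \<Longrightarrow> set_pmf (\<mu> i) \<subseteq> U i" using mu by (simp add: SR_def)
  define c where "c = nrm J"
  define W where "W = rec_nat (\<lambda>j. J j + c) (\<lambda>_ X. Tm \<mu> X)"
  have W0: "W 0 = (\<lambda>j. J j + c)" and WS: "\<And>k. W (Suc k) = Tm \<mu> (W k)" by (simp_all add: W_def)
  have JW: "\<forall>j\<in>S. J j \<le> W k j" for k
  proof (induction k)
    case 0 then show ?case using nrm_nn by (simp add: W0 c_def)
  next
    case (Suc k)
    show ?case unfolding WS using J Tm_mono Suc by (metis)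
  qed
  have Wdec: "\<forall>j\<in>S. W (Suc k) j \<le> W k j" for k
  proof (induction k)
    case 0
    show ?case unfolding WS W0
    proof
      fix j assume j: "j \<in> S"
      have "Tm \<mu> (\<lambda>j. J j + c) j \<le> Tm \<mu> J j + c" by (rule Tm_shift[where \<mu>=\<mu> and i=j and d=c and X=J, OF j muS[OF j]]) (simp add: c_def nrm_nn)
      thus "Tm \<mu> (\<lambda>j. J j + c) j \<le> J j + c" using J[OF j] by simp
    qed
  next
    case (Suc k)
    show ?case unfolding WS[of "Suc k"] WS[of k] using Tm_mono Suc by (metis WS)
  qed
  have Wanti: "k \<le> k' \<Longrightarrow> j \<in> S \<Longrightarrow> W k' j \<le> W k j" for k k' j
  proof (induction k' rule: dec_induct)
    case (step m) then show ?case using Wdec[of m] by force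
  qed simp
  define L where "L j = (INF k. W k j)" for j
  have bddW: "j \<in> S \<Longrightarrow> bdd_below (range (\<lambda>k. W k j))" for j using JW by (auto intro!: bdd_belowI[of _ "J j"])
  have LW: "j \<in> S \<Longrightarrow> L j \<le> W k j" for j k unfolding L_def by (rule cINF_lower[OF bddW]) auto
  have JL: "j \<in> S \<Longrightarrow> J j \<le> L j" for j unfolding L_def using JW by (intro cINF_greatest) auto
  have Lev: "eventually (\<lambda>k. \<forall>j\<in>S. W k j < L j + \<epsilon>) sequentially" if "0 < \<epsilon>" for \<epsilon>
  proof (rule eventually_ball_finite[OF finS], intro ballI)
    fix j assume j: "j \<in> S"
    have "L j < L j + \<epsilon>" using that by simp
    then obtain N where "W N j < L j + \<epsilon>" unfolding L_def[of j] using cINF_less_iff[OF _ bddW[OF j]] by blast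
    thus "eventually (\<lambda>k. W k j < L j + \<epsilon>) sequentially"
      using Wanti[OF _ j] unfolding eventually_sequentially by (meson le_less_trans)
  qed
  have LT: "L i' \<le> Tm \<mu> L i'" if i': "i' \<in> S" for i'
  proof (rule field_le_epsilon)
    fix \<epsilon> :: real assume \<epsilon>: "0 < \<epsilon>"
    obtain k where k: "\<forall>j\<in>S. W k j < L j + \<epsilon>" using eventually_happens'[OF _ Lev[OF \<epsilon>]] by auto
    have "L i' \<le> W (Suc k) i'" by (rule LW[OF i'])
    also have "\<dots> = Tm \<mu> (W k) i'" by (simp add: WS)
    also have "\<dots> \<le> Tm \<mu> (\<lambda>j. L j + \<epsilon>) i'" using k by (intro Tm_mono[OF i']) (auto intro: less_imp_le)
    also have "\<dots> \<le> Tm \<mu> L i' + \<epsilon>" using \<epsilon> by (intro Tm_shift[where \<mu>=\<mu> and i=i', OF i' muS[OF i']]) auto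
    finally show "L i' \<le> Tm \<mu> L i' + \<epsilon>" .
  qed
  have "\<forall>i'\<in>S. \<exists>v\<in>V i'. Tm \<mu> L i' = qb (U i') (V i') (\<lambda>u v. Mv L i' u v) (\<mu> i') (return_pmf v)"
    using Tm_attain by blast
  then obtain vL where vL: "\<And>i'. i' \<in> S \<Longrightarrow> vL i' \<in> V i'"
      "\<And>i'. i' \<in> S \<Longrightarrow> Tm \<mu> L i' = qb (U i') (V i') (\<lambda>u v. Mv L i' u v) (\<mu> i') (return_pmf (vL i'))"
    by metis
  define \<nu>L where "\<nu>L i' = return_pmf (vL i')" for i'
  have nuL: "\<nu>L \<in> SR n V" using vL(1) by (simp add: SR_def \<nu>L_def)
  have tpL: "L i' \<le> tp \<mu> \<nu>L L i'" if "i' \<in> S" for i'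
    using LT[OF that] vL(2)[OF that] by (simp add: tp_def \<nu>L_def)
  have lowL: "L (cur h) \<le> ew L (stat \<mu>) (stat \<nu>L) k h" if "cur h \<in> S" for h k
    by (rule ew_ge_stat[OF mu tpL that])
  have pi2L: "stat \<nu>L \<in> Pi2 n V" using nuL by (simp add: Pi2_def SR_def stat_def)
  have upJ: "ew J (stat \<mu>) \<pi>' k h \<le> J (cur h)" if "cur h \<in> S" "\<pi>' \<in> Pi2 n V" for h k \<pi>'
    by (rule ew_le_Tm[OF that(2) _ that(1)]) (use J in simp)
  have ecL: "L i' - nrm L * sv (stat \<mu>) (stat \<nu>L) k (i', []) \<le> ec (stat \<mu>) (stat \<nu>L) k (i', [])" if "i' \<in> S" for i' k
    using ec_bounds[of "stat \<mu>" "stat \<nu>L" k "(i', [])" L] lowL[of "(i', [])" k] that by simp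
  have ecJ: "ec (stat \<mu>) (stat \<nu>L) k (i', []) \<le> J i' + nrm J * sv (stat \<mu>) (stat \<nu>L) k (i', [])" if "i' \<in> S" for i' k
  proof -
    have "ew J (stat \<mu>) (stat \<nu>L) k (i', []) \<le> J i'" using upJ[of "(i', [])" "stat \<nu>L" k] that pi2L by simp
    thus ?thesis using ec_bounds[of "stat \<mu>" "stat \<nu>L" k "(i', [])" J] by (simp add: abs_le_iff)
  qed
  have "\<exists>c. \<forall>k. \<forall>i'\<in>S. \<bar>ec (stat \<mu>) (stat \<nu>L) k (i', [])\<bar> \<le> c"
  proof (intro exI allI ballI)
    fix k i' assume i': "i' \<in> S"
    have s: "0 \<le> sv (stat \<mu>) (stat \<nu>L) k (i', [])" "sv (stat \<mu>) (stat \<nu>L) k (i', []) \<le> 1" by (rule sv_nn, rule sv_le1)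
    have "nrm L * sv (stat \<mu>) (stat \<nu>L) k (i', []) \<le> nrm L" using s nrm_nn[of L] by (simp add: mult_left_le)
    moreover have "nrm J * sv (stat \<mu>) (stat \<nu>L) k (i', []) \<le> nrm J" using s nrm_nn[of J] by (simp add: mult_left_le)
    moreover have "\<bar>L i'\<bar> \<le> nrm L" "\<bar>J i'\<bar> \<le> nrm J" using nrm_ge i' by auto
    ultimately show "\<bar>ec (stat \<mu>) (stat \<nu>L) k (i', [])\<bar> \<le> 2 * nrm L + 2 * nrm J"
      using ecL[OF i', of k] ecJ[OF i', of k] s nrm_nn[of L] nrm_nn[of J] by (simp add: abs_le_iff)
  qed
  hence np: "\<not> prolonging n U V p (stat \<mu>) (stat \<nu>L)" using A3[OF mu nuL] by blast
  have LJ: "L i' \<le> J i'" if i': "i' \<in> S" for i'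
  proof (rule field_le_epsilon)
    fix \<epsilon> :: real assume \<epsilon>: "0 < \<epsilon>"
    define D where "D = nrm J + nrm L"
    have D0: "0 \<le> D" using nrm_nn by (simp add: D_def add_nonneg_nonneg)
    obtain N where N: "\<forall>k\<ge>N. sv (stat \<mu>) (stat \<nu>L) k (i', []) < \<epsilon> / (D + 1)"
      using not_prolonging[OF np i'] \<epsilon> D0 by (metis add_nonneg_pos divide_pos_pos zero_less_one)
    have sN: "sv (stat \<mu>) (stat \<nu>L) N (i', []) < \<epsilon> / (D + 1)" using N by auto
    have "D * sv (stat \<mu>) (stat \<nu>L) N (i', []) \<le> D * (\<epsilon> / (D + 1))" using sN D0 by (intro mult_left_mono) auto
    also have "\<dots> \<le> \<epsilon>" using D0 \<epsilon> by (simp add: field_simps)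
    finally have "D * sv (stat \<mu>) (stat \<nu>L) N (i', []) \<le> \<epsilon>" .
    thus "L i' \<le> J i' + \<epsilon>" using ecL[OF i', of N] ecJ[OF i', of N] by (simp add: D_def algebra_simps)
  qed
  obtain N where N: "\<forall>k\<ge>N. \<forall>j\<in>S. W k j < L j + e" using Lev[OF e] unfolding eventually_sequentially by blast
  have "\<forall>k\<ge>N. ec (stat \<mu>) \<pi>2 k (i, []) \<le> J i + e"
  proof (intro allI impI)
    fix k assume k: "N \<le> k"
    have "ec (stat \<mu>) \<pi>2 k (i, []) = ew (\<lambda>_. 0) (stat \<mu>) \<pi>2 k (i, [])" by (rule ec_ew0)
    also have "\<dots> \<le> ew (W 0) (stat \<mu>) \<pi>2 k (i, [])"
      by (rule ew_mono) (use nrm_ge[of _ J] in \<open>force simp: W0 c_def abs_le_iff\<close>)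
    also have "\<dots> \<le> rec_nat (W 0) (\<lambda>_ X. Tm \<mu> X) k i" using ew_le_iter[OF pi2, of "(i, [])" W \<mu> k] i by simp
    also have "rec_nat (W 0) (\<lambda>_ X. Tm \<mu> X) k = W k" by (simp add: W_def W0)
    also have "W k i < L i + e" using N k i by blast
    also have "\<dots> \<le> J i + e" using LJ[OF i] by simp
    finally show "ec (stat \<mu>) \<pi>2 k (i, []) \<le> J i + e" by simp
  qed
  thus ?thesis by blast
qed

end

context ssp begin

definition G where "G = (\<Sum>i\<in>S. \<Sum>u\<in>U i. \<Sum>v\<in>V i. \<Sum>j\<in>{0..n}. \<bar>gh i u v j\<bar>)"

lemma G_ge: "i \<in> S \<Longrightarrow> u \<in> U i \<Longrightarrow> v \<in> V i \<Longrightarrow> j \<in> {0..n} \<Longrightarrow> \<bar>gh i u v j\<bar> \<le> G"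
proof -
  assume a: "i \<in> S" "u \<in> U i" "v \<in> V i" "j \<in> {0..n}"
  have "\<bar>gh i u v j\<bar> \<le> (\<Sum>j\<in>{0..n}. \<bar>gh i u v j\<bar>)" using a by (intro member_le_sum) auto
  also have "\<dots> \<le> (\<Sum>v\<in>V i. \<Sum>j\<in>{0..n}. \<bar>gh i u v j\<bar>)"
    using a finV[OF a(1)] by (intro member_le_sum[of v "V i" "\<lambda>v. \<Sum>j\<in>{0..n}. \<bar>gh i u v j\<bar>"]) (auto intro: sum_nonneg)
  also have "\<dots> \<le> (\<Sum>u\<in>U i. \<Sum>v\<in>V i. \<Sum>j\<in>{0..n}. \<bar>gh i u v j\<bar>)"
    using a finU[OF a(1)] by (intro member_le_sum[of u "U i" "\<lambda>u. \<Sum>v\<in>V i. \<Sum>j\<in>{0..n}. \<bar>gh i u v j\<bar>"]) (auto intro!: sum_nonneg)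
  also have "\<dots> \<le> G" unfolding G_def
    using a finS by (intro member_le_sum[of i S "\<lambda>i. \<Sum>u\<in>U i. \<Sum>v\<in>V i. \<Sum>j\<in>{0..n}. \<bar>gh i u v j\<bar>"]) (auto intro!: sum_nonneg)
  finally show ?thesis .
qed

lemma G_nn: "0 \<le> G" unfolding G_def by (auto intro!: sum_nonneg)

lemma ec_one: "\<bar>ec \<pi>1 \<pi>2 (Suc 0) h\<bar> \<le> G"
proof (cases "cur h \<in> S")
  case True
  have "\<bar>ec \<pi>1 \<pi>2 (Suc 0) h\<bar> = \<bar>E (cur h) (\<pi>1 h) (\<pi>2 h) (\<lambda>u v j. gh (cur h) u v j)\<bar>"
    by (simp add: ec_Suc[OF True])
  also have "\<dots> \<le> E (cur h) (\<pi>1 h) (\<pi>2 h) (\<lambda>u v j. \<bar>gh (cur h) u v j\<bar>)" by (rule E_abs[OF True])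
  also have "\<dots> \<le> E (cur h) (\<pi>1 h) (\<pi>2 h) (\<lambda>u v j. G)" by (rule E_mono[OF True]) (use G_ge True in auto)
  also have "\<dots> \<le> G" by (rule E_const_le[OF True G_nn])
  finally show ?thesis .
qed (simp add: ec_out G_nn)

lemma ec_lin: "\<bar>ec \<pi>1 \<pi>2 k h\<bar> \<le> G * k"
proof (induction k arbitrary: h)
  case 0 then show ?case by simp
next
  case (Suc k)
  have "\<bar>ec \<pi>1 \<pi>2 (k + Suc 0) h - ec \<pi>1 \<pi>2 k h\<bar> \<le> G * sv \<pi>1 \<pi>2 k h" by (rule ec_tail[OF ec_one])
  also have "\<dots> \<le> G" using sv_le1[of \<pi>1 \<pi>2 k h] G_nn by (simp add: mult_left_le)
  finally show ?case using Suc[of h] by (simp add: algebra_simps abs_le_iff)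
qed

definition proper where
  "proper \<mu> \<nu> \<longleftrightarrow> \<mu> \<in> SR n U \<and> \<nu> \<in> SR n V \<and> \<not> prolonging n U V p (stat \<mu>) (stat \<nu>)"

lemma proper_K:
  assumes "proper \<mu> \<nu>"
  shows "\<exists>K\<ge>1. \<forall>h. sv (stat \<mu>) (stat \<nu>) K h \<le> 1/2"
proof -
  have np: "\<not> prolonging n U V p (stat \<mu>) (stat \<nu>)" using assms by (simp add: proper_def)
  have "eventually (\<lambda>k. \<forall>i\<in>S. sv (stat \<mu>) (stat \<nu>) k (i, []) < 1/2) sequentially"
  proof (rule eventually_ball_finite[OF finS], intro ballI)
    fix i assume "i \<in> S"
    from not_prolonging[OF np this, of "1/2"] show "eventually (\<lambda>k. sv (stat \<mu>) (stat \<nu>) k (i, []) < 1/2) sequentially"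
      unfolding eventually_sequentially by simp
  qed
  then obtain N where N: "\<forall>k\<ge>N. \<forall>i\<in>S. sv (stat \<mu>) (stat \<nu>) k (i, []) < 1/2"
    unfolding eventually_sequentially by blast
  have "\<forall>h. sv (stat \<mu>) (stat \<nu>) (Suc N) h \<le> 1/2"
  proof
    fix h
    show "sv (stat \<mu>) (stat \<nu>) (Suc N) h \<le> 1/2"
    proof (cases "cur h \<in> S")
      case True
      then show ?thesis using N sv_markov[of \<mu> \<nu> "Suc N" h] by (metis le_SucI order.refl less_imp_le)
    qed (simp add: sv_out)
  qed
  thus ?thesis by (intro exI[of _ "Suc N"]) auto
qed

lemma proper_bounded:
  assumes "proper \<mu> \<nu>"
  shows "\<exists>B. \<forall>m h. \<bar>ec (stat \<mu>) (stat \<nu>) m h\<bar> \<le> B"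
proof -
  obtain K where K: "K \<ge> 1" "\<And>h. sv (stat \<mu>) (stat \<nu>) K h \<le> 1/2" using proper_K[OF assms] by blast
  have geo: "sv (stat \<mu>) (stat \<nu>) (q * K) h \<le> (1/2)^q" for q h
  proof (induction q arbitrary: h)
    case 0 then show ?case using sv_le1 by simp
  next
    case (Suc q)
    have "sv (stat \<mu>) (stat \<nu>) (K + q * K) h \<le> sv (stat \<mu>) (stat \<nu>) K h * (1/2)^q"
      by (rule sv_semigroup) (use Suc in auto)
    also have "\<dots> \<le> 1/2 * (1/2)^q" using K(2)[of h] by (intro mult_right_mono) auto
    finally show ?case by simp
  qed
  have GK: "\<bar>ec (stat \<mu>) (stat \<nu>) K h\<bar> \<le> G * K" for h using ec_lin .
  have blk: "\<bar>ec (stat \<mu>) (stat \<nu>) (q * K) h\<bar> \<le> G * K * (2 - 2 * (1/2)^q)" for q h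
  proof (induction q arbitrary: h)
    case 0 then show ?case by simp
  next
    case (Suc q)
    have "\<bar>ec (stat \<mu>) (stat \<nu>) (q * K + K) h - ec (stat \<mu>) (stat \<nu>) (q * K) h\<bar> \<le> (G * K) * sv (stat \<mu>) (stat \<nu>) (q * K) h"
      by (rule ec_tail[OF GK])
    also have "\<dots> \<le> (G * K) * (1/2)^q" using geo G_nn by (intro mult_left_mono) auto
    finally have "\<bar>ec (stat \<mu>) (stat \<nu>) (q * K + K) h\<bar> \<le> G * K * (2 - 2 * (1/2)^q) + (G * K) * (1/2)^q"
      using Suc[of h] by (simp add: abs_le_iff)
    also have "\<dots> = G * K * (2 - 2 * (1/2)^(Suc q))" by (simp add: algebra_simps)
    finally show ?case by (simp add: add.commute)
  qed
  have "\<bar>ec (stat \<mu>) (stat \<nu>) m h\<bar> \<le> 3 * G * K" for m h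
  proof -
    define q where "q = m div K"
    define r where "r = m mod K"
    have m: "m = q * K + r" by (simp add: q_def r_def)
    have rK: "r \<le> K" using K(1) by (simp add: r_def less_imp_le)
    have Gr: "\<bar>ec (stat \<mu>) (stat \<nu>) r h'\<bar> \<le> G * K" for h'
      using ec_lin[of "stat \<mu>" "stat \<nu>" r h'] G_nn rK by (meson mult_left_mono of_nat_le_iff order_trans)
    have "\<bar>ec (stat \<mu>) (stat \<nu>) (q * K + r) h - ec (stat \<mu>) (stat \<nu>) (q * K) h\<bar> \<le> (G * K) * sv (stat \<mu>) (stat \<nu>) (q * K) h"
      by (rule ec_tail[OF Gr])
    also have "\<dots> \<le> G * K" using sv_le1 sv_nn G_nn by (simp add: mult_left_le)
    finally have d: "\<bar>ec (stat \<mu>) (stat \<nu>) (q * K + r) h - ec (stat \<mu>) (stat \<nu>) (q * K) h\<bar> \<le> G * K" .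
    have "G * K * (2 - 2 * (1/2)^q) \<le> G * K * 2" using G_nn by (intro mult_left_mono) auto
    thus ?thesis using d blk[of q h] unfolding m by (simp add: abs_le_iff)
  qed
  thus ?thesis by blast
qed

lemma proper_conv:
  assumes "proper \<mu> \<nu>" "i \<in> S"
  shows "convergent (\<lambda>k. ec (stat \<mu>) (stat \<nu>) k (i, []))"
proof -
  obtain B where B: "\<And>m h. \<bar>ec (stat \<mu>) (stat \<nu>) m h\<bar> \<le> B" using proper_bounded[OF assms(1)] by blast
  have B0: "0 \<le> B" using B[of 0 "(i, [])"] by simp
  have np: "\<not> prolonging n U V p (stat \<mu>) (stat \<nu>)" using assms by (simp add: proper_def)
  have tail: "\<bar>ec (stat \<mu>) (stat \<nu>) m (i, []) - ec (stat \<mu>) (stat \<nu>) N (i, [])\<bar> \<le> B * sv (stat \<mu>) (stat \<nu>) N (i, [])"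
    if "N \<le> m" for m N
    using ec_tail[OF B, of N "m - N" "(i, [])"] that by simp
  show ?thesis unfolding Cauchy_convergent_iff[symmetric]
  proof (rule CauchyI)
    fix e :: real assume e: "0 < e"
    obtain N where N: "\<forall>k\<ge>N. sv (stat \<mu>) (stat \<nu>) k (i, []) < e / (2 * (B + 1))"
      using not_prolonging[OF np assms(2)] e B0 by (metis divide_pos_pos add_nonneg_pos mult_pos_pos zero_less_one zero_less_numeral)
    have "B * sv (stat \<mu>) (stat \<nu>) N (i, []) \<le> B * (e / (2 * (B + 1)))" using N B0 by (intro mult_left_mono) auto
    also have "\<dots> < e / 2" using B0 e by (simp add: field_simps)
    finally have BN: "B * sv (stat \<mu>) (stat \<nu>) N (i, []) < e / 2" .
    show "\<exists>M. \<forall>m\<ge>M. \<forall>n'\<ge>M. norm (ec (stat \<mu>) (stat \<nu>) m (i, []) - ec (stat \<mu>) (stat \<nu>) n' (i, [])) < e"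
    proof (intro exI allI impI)
      fix m n' assume "N \<le> m" "N \<le> n'"
      thus "norm (ec (stat \<mu>) (stat \<nu>) m (i, []) - ec (stat \<mu>) (stat \<nu>) n' (i, [])) < e"
        using tail[of N m] tail[of N n'] BN by (simp add: abs_le_iff) linarith
    qed
  qed
qed

definition Wv where "Wv \<mu> \<nu> i = lim (\<lambda>k. ec (stat \<mu>) (stat \<nu>) k (i, []))"

lemma Wv_lim: "proper \<mu> \<nu> \<Longrightarrow> i \<in> S \<Longrightarrow> (\<lambda>k. ec (stat \<mu>) (stat \<nu>) k (i, [])) \<longlonglongrightarrow> Wv \<mu> \<nu> i"
  unfolding Wv_def using proper_conv convergent_LIMSEQ_iff by blast

lemma sv_lim0:
  assumes "\<not> prolonging n U V p \<pi>1 \<pi>2" "i \<in> S"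
  shows "(\<lambda>k. sv \<pi>1 \<pi>2 k (i, [])) \<longlonglongrightarrow> 0"
proof (rule LIMSEQ_I)
  fix r :: real assume "0 < r"
  from not_prolonging[OF assms this] obtain N where "\<forall>k\<ge>N. sv \<pi>1 \<pi>2 k (i, []) < r" by blast
  thus "\<exists>no. \<forall>k\<ge>no. norm (sv \<pi>1 \<pi>2 k (i, []) - 0) < r" using sv_nn by (auto intro!: exI[of _ N])
qed

lemma Wv_fix:
  assumes pr: "proper \<mu> \<nu>" and i: "i \<in> S"
  shows "tp \<mu> \<nu> (Wv \<mu> \<nu>) i = Wv \<mu> \<nu> i"
proof -
  define Z where "Z k j = (if j \<in> S then ec (stat \<mu>) (stat \<nu>) k (j, []) else 0)" for k j
  have eq: "ec (stat \<mu>) (stat \<nu>) (Suc k) (i, []) = E i (\<mu> i) (\<nu> i) (\<lambda>u v j. gh i u v j + Z k j)" for k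
  proof -
    have "ec (stat \<mu>) (stat \<nu>) (Suc k) (i, []) = E i (\<mu> i) (\<nu> i) (\<lambda>u v j. gh i u v j + ec (stat \<mu>) (stat \<nu>) k (hext (i, []) u v j))"
      using ec_Suc[of "(i, [])"] i by (simp add: stat_apply)
    also have "\<dots> = E i (\<mu> i) (\<nu> i) (\<lambda>u v j. gh i u v j + Z k j)"
    proof -
      have pt: "ec (stat \<mu>) (stat \<nu>) k (hext (i, []) u v j) = Z k j" for u v j
      proof (cases "j \<in> S")
        case True then show ?thesis unfolding Z_def using ec_markov[of \<mu> \<nu> k "hext (i, []) u v j"] by simp
      qed (simp add: Z_def ec_out)
      show ?thesis by (simp only: pt)
    qed
    finally show ?thesis .
  qed
  have "(\<lambda>k. E i (\<mu> i) (\<nu> i) (\<lambda>u v j. gh i u v j + Z k j)) \<longlonglongrightarrow>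
        E i (\<mu> i) (\<nu> i) (\<lambda>u v j. gh i u v j + (if j \<in> S then Wv \<mu> \<nu> j else 0))"
    unfolding E_def
  proof (intro tendsto_sum tendsto_mult tendsto_const tendsto_add)
    fix j
    show "(\<lambda>k. Z k j) \<longlonglongrightarrow> (if j \<in> S then Wv \<mu> \<nu> j else 0)"
      by (cases "j \<in> S") (auto simp: Z_def intro: Wv_lim[OF pr])
  qed
  hence "(\<lambda>k. ec (stat \<mu>) (stat \<nu>) (Suc k) (i, [])) \<longlonglongrightarrow> tp \<mu> \<nu> (Wv \<mu> \<nu>) i"
    unfolding eq E_Mv[OF i] tp_def .
  moreover have "(\<lambda>k. ec (stat \<mu>) (stat \<nu>) (Suc k) (i, [])) \<longlonglongrightarrow> Wv \<mu> \<nu> i"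
    by (rule LIMSEQ_Suc[OF Wv_lim[OF pr i]])
  ultimately show ?thesis by (rule LIMSEQ_unique)
qed

end

context ssp3 begin

definition pol :: "(nat \<Rightarrow> 'v) \<Rightarrow> nat \<Rightarrow> 'v pmf" where "pol f = (\<lambda>i. return_pmf (f i))"

lemma pol_SR: "f \<in> PiE S V \<Longrightarrow> pol f \<in> SR n V"
  by (auto simp: pol_def SR_def PiE_def)

lemma LB:
  assumes "\<mu> \<in> SR n U" "\<And>i. i \<in> S \<Longrightarrow> X i \<le> tp \<mu> \<nu> X i"
  shows "\<exists>c. \<forall>k. \<forall>i\<in>S. c \<le> ec (stat \<mu>) (stat \<nu>) k (i, [])"
proof (intro exI allI ballI)
  fix k i assume i: "i \<in> S"
  have "X i \<le> ew X (stat \<mu>) (stat \<nu>) k (i, [])" using ew_ge_stat[OF assms, of "(i, [])" k] i by simp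
  moreover have "\<bar>ec (stat \<mu>) (stat \<nu>) k (i, []) - ew X (stat \<mu>) (stat \<nu>) k (i, [])\<bar> \<le> nrm X * sv (stat \<mu>) (stat \<nu>) k (i, [])"
    by (rule ec_bounds)
  moreover have "nrm X * sv (stat \<mu>) (stat \<nu>) k (i, []) \<le> nrm X" using sv_le1 sv_nn nrm_nn by (simp add: mult_left_le)
  moreover have "\<bar>X i\<bar> \<le> nrm X" using nrm_ge[OF i] .
  ultimately show "- 2 * nrm X \<le> ec (stat \<mu>) (stat \<nu>) k (i, [])" by (simp add: abs_le_iff)
qed

lemma tp_le_ew:
  assumes mu: "\<mu> \<in> SR n U" and X: "\<And>i. i \<in> S \<Longrightarrow> X i \<le> tp \<mu> \<nu> X i" and h: "cur h \<in> S"
  shows "tp \<mu> \<nu> X (cur h) \<le> ew X (stat \<mu>) (stat \<nu>) (Suc k) h"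
proof -
  have "tp \<mu> \<nu> X (cur h) = qb (U (cur h)) (V (cur h)) (\<lambda>u v. Mv X (cur h) u v) (stat \<mu> h) (stat \<nu> h)"
    by (simp add: tp_def stat_apply)
  also have "\<dots> \<le> ew X (stat \<mu>) (stat \<nu>) (Suc k) h"
    by (rule step_ge[OF refl h]) (use ew_ge_stat[OF mu X] in \<open>metis cur_hext\<close>)
  finally show ?thesis .
qed

lemma LIM:
  assumes pr: "proper \<mu> \<nu>" and X: "\<And>i. i \<in> S \<Longrightarrow> X i \<le> tp \<mu> \<nu> X i" and i: "i \<in> S"
  shows "tp \<mu> \<nu> X i \<le> Wv \<mu> \<nu> i"
proof -
  have mu: "\<mu> \<in> SR n U" using pr by (simp add: proper_def)
  have np: "\<not> prolonging n U V p (stat \<mu>) (stat \<nu>)" using pr by (simp add: proper_def)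
  have low: "tp \<mu> \<nu> X i \<le> ec (stat \<mu>) (stat \<nu>) (Suc k) (i, []) + nrm X * sv (stat \<mu>) (stat \<nu>) (Suc k) (i, [])" for k
  proof -
    have "tp \<mu> \<nu> X i \<le> ew X (stat \<mu>) (stat \<nu>) (Suc k) (i, [])"
      using tp_le_ew[OF mu X, of "(i, [])" k] i by simp
    thus ?thesis using ec_bounds[of "stat \<mu>" "stat \<nu>" "Suc k" "(i, [])" X] by (simp add: abs_le_iff)
  qed
  have "(\<lambda>k. ec (stat \<mu>) (stat \<nu>) (Suc k) (i, []) + nrm X * sv (stat \<mu>) (stat \<nu>) (Suc k) (i, [])) \<longlonglongrightarrow> Wv \<mu> \<nu> i + nrm X * 0"
    by (intro tendsto_add tendsto_mult tendsto_const LIMSEQ_Suc Wv_lim[OF pr i] sv_lim0[OF np i])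
  thus ?thesis using low by (intro LIMSEQ_le_const) auto
qed

theorem exist_super:
  assumes mub: "\<mu> \<in> SR n U" and nub: "\<nu> \<in> SR n V" and np: "\<not> prolonging n U V p (stat \<mu>) (stat \<nu>)"
    and H: "\<And>\<nu>'. \<nu>' \<in> SR n V \<Longrightarrow> (\<exists>c. \<forall>k. \<forall>i\<in>S. c \<le> ec (stat \<mu>) (stat \<nu>') k (i, [])) \<Longrightarrow>
              \<not> prolonging n U V p (stat \<mu>) (stat \<nu>')"
  shows "\<exists>W. \<forall>i\<in>S. Tm \<mu> W i \<le> W i"
proof -
  have greedy: "\<exists>g\<in>PiE S V. \<forall>i\<in>S. tp \<mu> (pol g) X i = (if C i then Tm \<mu> X i else tp \<mu> (pol f) X i)"
    if f: "f \<in> PiE S V" for X f C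
  proof -
    have "\<forall>i\<in>S. \<exists>v\<in>V i. Tm \<mu> X i = qb (U i) (V i) (\<lambda>u v. Mv X i u v) (\<mu> i) (return_pmf v)"
      using Tm_attain by blast
    then obtain a where a: "\<And>i. i \<in> S \<Longrightarrow> a i \<in> V i"
      "\<And>i. i \<in> S \<Longrightarrow> Tm \<mu> X i = qb (U i) (V i) (\<lambda>u v. Mv X i u v) (\<mu> i) (return_pmf (a i))" by metis
    define g where "g i = (if i \<in> S then (if C i then a i else f i) else undefined)" for i
    have "g \<in> PiE S V" using a(1) f by (auto simp: g_def PiE_def extensional_def)
    moreover have "\<forall>i\<in>S. tp \<mu> (pol g) X i = (if C i then Tm \<mu> X i else tp \<mu> (pol f) X i)"
      using a(2) by (auto simp: tp_def pol_def g_def)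
    ultimately show ?thesis by blast
  qed
  have pr0: "proper \<mu> \<nu>" using mub nub np by (simp add: proper_def)
  define P where "P = {f \<in> PiE S V. proper \<mu> (pol f)}"
  have finP: "finite P" unfolding P_def using finite_PiE[OF finS finV] by auto
  obtain f0 where f0: "f0 \<in> PiE S V" using finV neV by (metis PiE_eq_empty_iff ex_in_conv)
  obtain g0 where g0: "g0 \<in> PiE S V" "\<forall>i\<in>S. tp \<mu> (pol g0) (Wv \<mu> \<nu>) i = Tm \<mu> (Wv \<mu> \<nu>) i"
    using greedy[OF f0, of "Wv \<mu> \<nu>" "\<lambda>_. True"] by auto
  have "Wv \<mu> \<nu> i \<le> tp \<mu> (pol g0) (Wv \<mu> \<nu>) i" if i: "i \<in> S" for i
  proof -
    have "Wv \<mu> \<nu> i = tp \<mu> \<nu> (Wv \<mu> \<nu>) i" using Wv_fix[OF pr0 i] by simp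
    also have "\<dots> \<le> Tm \<mu> (Wv \<mu> \<nu>) i" unfolding tp_def
      by (rule qb_le_Tm[OF i]) (use nub i in \<open>auto simp: SR_def PM_def\<close>)
    finally show ?thesis using g0(2) i by simp
  qed
  hence "proper \<mu> (pol g0)" using H[OF pol_SR[OF g0(1)] LB[OF mub]] mub pol_SR[OF g0(1)] by (auto simp: proper_def)
  hence neP: "P \<noteq> {}" using g0(1) by (auto simp: P_def)
  define \<Phi> where "\<Phi> f = (\<Sum>i\<in>S. Wv \<mu> (pol f) i)" for f
  have "Max (\<Phi> ` P) \<in> \<Phi> ` P" using finP neP by (intro Max_in) auto
  then obtain f where fP: "f \<in> P" and fM: "\<Phi> f = Max (\<Phi> ` P)" by auto
  have fmax: "\<And>g. g \<in> P \<Longrightarrow> \<Phi> g \<le> \<Phi> f" unfolding fM using finP by (intro Max_ge) auto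
  have prF: "proper \<mu> (pol f)" and fPi: "f \<in> PiE S V" using fP by (auto simp: P_def)
  define Wf where "Wf = Wv \<mu> (pol f)"
  have "\<forall>i\<in>S. Tm \<mu> Wf i \<le> Wf i"
  proof (rule ccontr)
    assume "\<not> (\<forall>i\<in>S. Tm \<mu> Wf i \<le> Wf i)"
    then obtain i0 where i0: "i0 \<in> S" "Wf i0 < Tm \<mu> Wf i0" by (auto simp: not_le)
    obtain g where g: "g \<in> PiE S V"
      "\<forall>i\<in>S. tp \<mu> (pol g) Wf i = (if Wf i < Tm \<mu> Wf i then Tm \<mu> Wf i else tp \<mu> (pol f) Wf i)"
      using greedy[OF fPi, of Wf "\<lambda>i. Wf i < Tm \<mu> Wf i"] by blast
    have fixf: "tp \<mu> (pol f) Wf i = Wf i" if "i \<in> S" for i unfolding Wf_def by (rule Wv_fix[OF prF that])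
    have geq: "Wf i \<le> tp \<mu> (pol g) Wf i" if "i \<in> S" for i using g(2) fixf that by (auto simp: not_less)
    have prG: "proper \<mu> (pol g)" using H[OF pol_SR[OF g(1)] LB[OF mub geq]] mub pol_SR[OF g(1)] by (auto simp: proper_def)
    hence gP: "g \<in> P" using g(1) by (simp add: P_def)
    have le: "Wf i \<le> Wv \<mu> (pol g) i" if "i \<in> S" for i using geq[OF that] LIM[OF prG geq that] by linarith
    have lt: "Wf i0 < Wv \<mu> (pol g) i0" using g(2) i0 LIM[OF prG geq i0(1)] by auto
    have "\<Phi> f < \<Phi> g" unfolding \<Phi>_def Wf_def[symmetric]
      by (rule sum_strict_mono_ex1[OF finS]) (use le i0 lt in auto)
    with fmax[OF gP] show False by linarith
  qed
  thus ?thesis by blast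
qed

end

definition sw :: "('a, 'b) hist \<Rightarrow> ('b, 'a) hist" where
  "sw h = (fst h, map (\<lambda>(u, v, j). (v, u, j)) (snd h))"

lemma cur_sw[simp]: "cur (sw h) = cur h"
  by (cases "snd h") (auto simp: sw_def cur_def last_map split: prod.splits)

lemma hext_sw[simp]: "hext (sw h) v u j = sw (hext h u v j)"
  by (simp add: sw_def hext_def)

lemma sw_sw[simp]: "sw (sw h) = h"
  by (cases h) (simp add: sw_def map_idI case_prod_beta)

lemma sw_nil[simp]: "sw (i, []) = (i, [])" by (simp add: sw_def)

lemma stat_sw: "stat \<nu> \<circ> sw = stat \<nu>"
  by (rule ext) (simp add: stat_def)

lemma dual_ecost:
  "ecost n V U (\<lambda>i j v u. p i j u v) (\<lambda>i v u j. - gh i u v j) (\<pi>2 \<circ> sw) (\<pi>1 \<circ> sw) k (sw h)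
   = - ecost n U V p gh \<pi>1 \<pi>2 k h"
proof (induction k arbitrary: h)
  case 0 then show ?case by simp
next
  case (Suc k)
  show ?case
  proof (cases "cur h \<in> states n")
    case True
    have "ecost n V U (\<lambda>i j v u. p i j u v) (\<lambda>i v u j. - gh i u v j) (\<pi>2 \<circ> sw) (\<pi>1 \<circ> sw) (Suc k) (sw h) =
      (\<Sum>v\<in>V (cur h). \<Sum>u\<in>U (cur h). pmf (\<pi>2 h) v * pmf (\<pi>1 h) u *
           (\<Sum>j\<in>{0..n}. p (cur h) j u v * (- gh (cur h) u v j + - ecost n U V p gh \<pi>1 \<pi>2 k (hext h u v j))))"
      using True Suc by (simp add: comp_def)
    also have "\<dots> = - (\<Sum>v\<in>V (cur h). \<Sum>u\<in>U (cur h). pmf (\<pi>1 h) u * pmf (\<pi>2 h) v *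
           (\<Sum>j\<in>{0..n}. p (cur h) j u v * (gh (cur h) u v j + ecost n U V p gh \<pi>1 \<pi>2 k (hext h u v j))))"
    proof -
      have "pmf (\<pi>2 h) v * pmf (\<pi>1 h) u *
           (\<Sum>j\<in>{0..n}. p (cur h) j u v * (- gh (cur h) u v j + - ecost n U V p gh \<pi>1 \<pi>2 k (hext h u v j))) =
          - (pmf (\<pi>1 h) u * pmf (\<pi>2 h) v *
           (\<Sum>j\<in>{0..n}. p (cur h) j u v * (gh (cur h) u v j + ecost n U V p gh \<pi>1 \<pi>2 k (hext h u v j))))" for u v
      proof -
        have "(\<Sum>j\<in>{0..n}. p (cur h) j u v * (- gh (cur h) u v j + - ecost n U V p gh \<pi>1 \<pi>2 k (hext h u v j))) =
              - (\<Sum>j\<in>{0..n}. p (cur h) j u v * (gh (cur h) u v j + ecost n U V p gh \<pi>1 \<pi>2 k (hext h u v j)))"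
          by (simp add: sum_negf[symmetric] algebra_simps)
        thus ?thesis by simp
      qed
      thus ?thesis by (simp add: sum_negf)
    qed
    also have "(\<Sum>v\<in>V (cur h). \<Sum>u\<in>U (cur h). pmf (\<pi>1 h) u * pmf (\<pi>2 h) v *
           (\<Sum>j\<in>{0..n}. p (cur h) j u v * (gh (cur h) u v j + ecost n U V p gh \<pi>1 \<pi>2 k (hext h u v j)))) =
         (\<Sum>u\<in>U (cur h). \<Sum>v\<in>V (cur h). pmf (\<pi>1 h) u * pmf (\<pi>2 h) v *
           (\<Sum>j\<in>{0..n}. p (cur h) j u v * (gh (cur h) u v j + ecost n U V p gh \<pi>1 \<pi>2 k (hext h u v j))))"
      by (rule sum.swap)
    also have "\<dots> = ecost n U V p gh \<pi>1 \<pi>2 (Suc k) h" using True by simp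
    finally show ?thesis by simp
  qed simp
qed

lemma dual_survp:
  "survp n V U (\<lambda>i j v u. p i j u v) (\<pi>2 \<circ> sw) (\<pi>1 \<circ> sw) k (sw h) = survp n U V p \<pi>1 \<pi>2 k h"
proof (induction k arbitrary: h)
  case 0 then show ?case by simp
next
  case (Suc k)
  show ?case
  proof (cases "cur h \<in> states n")
    case True
    have "survp n V U (\<lambda>i j v u. p i j u v) (\<pi>2 \<circ> sw) (\<pi>1 \<circ> sw) (Suc k) (sw h) =
      (\<Sum>v\<in>V (cur h). \<Sum>u\<in>U (cur h). pmf (\<pi>1 h) u * pmf (\<pi>2 h) v *
           (\<Sum>j\<in>{0..n}. p (cur h) j u v * survp n U V p \<pi>1 \<pi>2 k (hext h u v j)))"
      using True Suc by (simp add: comp_def algebra_simps)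
    also have "\<dots> = (\<Sum>u\<in>U (cur h). \<Sum>v\<in>V (cur h). pmf (\<pi>1 h) u * pmf (\<pi>2 h) v *
           (\<Sum>j\<in>{0..n}. p (cur h) j u v * survp n U V p \<pi>1 \<pi>2 k (hext h u v j)))"
      by (rule sum.swap)
    also have "\<dots> = survp n U V p \<pi>1 \<pi>2 (Suc k) h" using True by simp
    finally show ?thesis .
  qed simp
qed

lemma dual_ecost_stat:
  "ecost n V U (\<lambda>i j v u. p i j u v) (\<lambda>i v u j. - gh i u v j) (stat \<nu>) (stat \<mu>) k (i, [])
   = - ecost n U V p gh (stat \<mu>) (stat \<nu>) k (i, [])"
  using dual_ecost[of n V U p gh "stat \<nu>" "stat \<mu>" k "(i, [])"] by (simp add: stat_sw)

lemma dual_prolonging: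
  "prolonging n V U (\<lambda>i j v u. p i j u v) (stat \<nu>) (stat \<mu>) \<longleftrightarrow> prolonging n U V p (stat \<mu>) (stat \<nu>)"
  using dual_survp[of n V U p "stat \<nu>" "stat \<mu>" _ "(_, [])"] by (simp add: stat_sw prolonging_def)

lemma dual_model: "game_model n U V p \<Longrightarrow> game_model n V U (\<lambda>i j v u. p i j u v)"
  by (auto simp: game_model_def)

lemma Max_neg: "finite A \<Longrightarrow> A \<noteq> {} \<Longrightarrow> Max ((\<lambda>x. - f x) ` A) = - Min (f ` A)" for f :: "'a \<Rightarrow> real"
proof -
  assume A: "finite A" "A \<noteq> {}"
  have "Min (f ` A) \<in> f ` A" using A by (intro Min_in) auto
  then obtain a where a: "a \<in> A" "f a = Min (f ` A)" by (auto simp del: Min_in)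
  show ?thesis
  proof (rule antisym)
    show "Max ((\<lambda>x. - f x) ` A) \<le> - Min (f ` A)" using A by (subst Max_le_iff) auto
    show "- Min (f ` A) \<le> Max ((\<lambda>x. - f x) ` A)" using A a by (intro Max_ge_iff[THEN iffD2]) (auto intro!: bexI[of _ a])
  qed
qed


context ssp3 begin

definition Tc where
  "Tc \<nu> X i = cmin (U i) (V i) (\<lambda>u v. Mv X i u v) (\<nu> i)"

abbreviation "p' \<equiv> (\<lambda>i j v u. p i j u v)"
abbreviation "gh' \<equiv> (\<lambda>i v u j. - gh i u v j)"

lemma dual_ssp3: "ssp3 n V U p' gh'"
proof -
  have m: "ssp n V U p'" using dual_model[OF model] by (simp add: ssp_def)
  show ?thesis
  proof (unfold ssp3_def ssp3_axioms_def, intro conjI m allI impI)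
    fix \<mu>' \<nu>'
    assume a: "\<mu>' \<in> SR n V" "\<nu>' \<in> SR n U"
      "\<exists>c. \<forall>k. \<forall>i\<in>states n. \<bar>ecost n V U p' gh' (stat \<mu>') (stat \<nu>') k (i, [])\<bar> \<le> c"
    then obtain c where c: "\<forall>k. \<forall>i\<in>states n. \<bar>ecost n V U p' gh' (stat \<mu>') (stat \<nu>') k (i, [])\<bar> \<le> c" by blast
    have "\<forall>k. \<forall>i\<in>states n. \<bar>ecost n U V p gh (stat \<nu>') (stat \<mu>') k (i, [])\<bar> \<le> c"
    proof (intro allI ballI)
      fix k i assume "i \<in> states n"
      thus "\<bar>ecost n U V p gh (stat \<nu>') (stat \<mu>') k (i, [])\<bar> \<le> c"
        using c dual_ecost_stat[of n V U p gh \<mu>' \<nu>' k i] by (metis abs_minus_cancel)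
    qed
    hence "\<not> prolonging n U V p (stat \<nu>') (stat \<mu>')" using A3 a(1,2) by blast
    thus "\<not> prolonging n V U p' (stat \<mu>') (stat \<nu>')" using dual_prolonging[of n V U p \<mu>' \<nu>'] by blast
  qed
qed

lemma dssp: "ssp n V U p'" using dual_ssp3 by (simp add: ssp3_def)

lemma dual_Mv: "ssp.Mv n p' gh' X i v u = - Mv (\<lambda>j. - X j) i u v"
  unfolding ssp.Mv_def[OF dssp] Mv_def gexp_def by (simp add: sum_negf[symmetric] algebra_simps)

lemma dual_Tm: "i \<in> S \<Longrightarrow> ssp.Tm n V U p' gh' \<nu> X i = - Tc \<nu> (\<lambda>j. - X j) i"
proof -
  assume i: "i \<in> S"
  have "ssp.Tm n V U p' gh' \<nu> X i = Max ((\<lambda>u. - (\<Sum>v\<in>V i. pmf (\<nu> i) v * Mv (\<lambda>j. - X j) i u v)) ` U i)"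
    unfolding ssp.Tm_def[OF dssp] rmax_def dual_Mv by (simp add: sum_negf[symmetric])
  also have "\<dots> = - Tc \<nu> (\<lambda>j. - X j) i"
    unfolding Tc_def cmin_def by (rule Max_neg[OF finU[OF i] neU[OF i]])
  finally show ?thesis .
qed

theorem bound1:
  assumes nu: "\<nu> \<in> SR n V" and J: "\<And>i. i \<in> S \<Longrightarrow> Tc \<nu> J i = J i"
    and pi1: "\<pi>1 \<in> Pi1 n U" and i: "i \<in> S" and e: "0 < e"
  shows "\<exists>N. \<forall>k\<ge>N. J i - e \<le> ec \<pi>1 (stat \<nu>) k (i, [])"
proof -
  have J': "\<And>i. i \<in> S \<Longrightarrow> ssp.Tm n V U p' gh' \<nu> (\<lambda>j. - J j) i = - J i"
    using J dual_Tm by simp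
  have pi1': "\<pi>1 \<circ> sw \<in> Pi2 n U" unfolding Pi2_def mem_Collect_eq comp_apply
    using pi1 unfolding Pi1_def mem_Collect_eq by (metis cur_sw)
  have "\<exists>N. \<forall>k\<ge>N. ecost n V U p' gh' (stat \<nu>) (\<pi>1 \<circ> sw) k (i, []) \<le> - J i + e"
    by (rule ssp3.bound2[OF dual_ssp3 nu J' pi1' i e])
  then obtain N where N: "\<forall>k\<ge>N. ecost n V U p' gh' (stat \<nu>) (\<pi>1 \<circ> sw) k (i, []) \<le> - J i + e" by blast
  have eq: "ecost n V U p' gh' (stat \<nu>) (\<pi>1 \<circ> sw) k (i, []) = - ec \<pi>1 (stat \<nu>) k (i, [])" for k
    using dual_ecost[of n V U p gh "stat \<nu>" \<pi>1 k "(i, [])"] unfolding stat_sw by simp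
  have "\<forall>k\<ge>N. J i - e \<le> ec \<pi>1 (stat \<nu>) k (i, [])"
  proof (intro allI impI)
    fix k assume "N \<le> k"
    thus "J i - e \<le> ec \<pi>1 (stat \<nu>) k (i, [])" using N eq[of k] by force
  qed
  thus ?thesis by blast
qed

theorem exist_sub:
  assumes mub: "\<mu> \<in> SR n U" and nub: "\<nu> \<in> SR n V" and np: "\<not> prolonging n U V p (stat \<mu>) (stat \<nu>)"
    and H: "\<And>\<mu>'. \<mu>' \<in> SR n U \<Longrightarrow> (\<exists>c. \<forall>k. \<forall>i\<in>S. ec (stat \<mu>') (stat \<nu>) k (i, []) \<le> c) \<Longrightarrow>
              \<not> prolonging n U V p (stat \<mu>') (stat \<nu>)"
  shows "\<exists>W. \<forall>i\<in>S. W i \<le> Tc \<nu> W i"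
proof -
  have H': "\<not> prolonging n V U p' (stat \<nu>) (stat \<mu>')"
    if "\<mu>' \<in> SR n U" "\<exists>c. \<forall>k. \<forall>i\<in>S. c \<le> ecost n V U p' gh' (stat \<nu>) (stat \<mu>') k (i, [])" for \<mu>'
  proof -
    from that(2) obtain c where c: "\<forall>k. \<forall>i\<in>S. c \<le> ecost n V U p' gh' (stat \<nu>) (stat \<mu>') k (i, [])" by blast
    have "\<forall>k. \<forall>i\<in>S. c \<le> - ec (stat \<mu>') (stat \<nu>) k (i, [])"
    proof (intro allI ballI)
      fix k i assume "i \<in> S"
      thus "c \<le> - ec (stat \<mu>') (stat \<nu>) k (i, [])" using c dual_ecost_stat[of n V U p gh \<nu> \<mu>' k i] by metis
    qed
    hence "\<exists>c. \<forall>k. \<forall>i\<in>S. ec (stat \<mu>') (stat \<nu>) k (i, []) \<le> c" by (intro exI[of _ "- c"]) (auto simp: le_minus_iff)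
    thus ?thesis using H[OF that(1)] dual_prolonging[of n V U p \<nu> \<mu>'] by blast
  qed
  obtain W' where W': "\<forall>i\<in>S. ssp.Tm n V U p' gh' \<nu> W' i \<le> W' i"
    using ssp3.exist_super[OF dual_ssp3, of \<nu> \<mu>] nub mub np H' dual_prolonging[of n V U p \<nu> \<mu>] by blast
  have "\<forall>i\<in>S. - W' i \<le> Tc \<nu> (\<lambda>j. - W' j) i" using W' dual_Tm by force
  thus ?thesis by (intro exI[of _ "\<lambda>j. - W' j"])
qed

end

context ssp3 begin

definition val :: "(nat \<Rightarrow> real) \<Rightarrow> nat \<Rightarrow> real" where
  "val X i = (INF \<rho>\<in>PM (U i). rmax (U i) (V i) (\<lambda>u v. Mv X i u v) \<rho>)"

lemma Tm_const: "Tm (\<lambda>_. \<rho>) X i = rmax (U i) (V i) (\<lambda>u v. Mv X i u v) \<rho>"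
  by (simp add: Tm_def)

lemma val_bdd: "i \<in> S \<Longrightarrow> bdd_below ((\<lambda>\<rho>. rmax (U i) (V i) (\<lambda>u v. Mv X i u v) \<rho>) ` PM (U i))"
proof -
  assume i: "i \<in> S"
  obtain \<sigma> where \<sigma>: "\<sigma> \<in> PM (V i)" using PM_ne[OF neV[OF i]] by blast
  show ?thesis using cmin_le_rmax[OF finU[OF i] finV[OF i] _ \<sigma>]
    by (intro bdd_belowI[of _ "cmin (U i) (V i) (\<lambda>u v. Mv X i u v) \<sigma>"]) auto
qed

lemma val_le_Tm: "i \<in> S \<Longrightarrow> \<mu> i \<in> PM (U i) \<Longrightarrow> val X i \<le> Tm \<mu> X i"
  unfolding val_def Tm_def by (rule cINF_lower[OF val_bdd])

lemma Tc_le_val: "i \<in> S \<Longrightarrow> \<nu> i \<in> PM (V i) \<Longrightarrow> Tc \<nu> X i \<le> val X i"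
  unfolding val_def Tc_def
  by (rule cINF_greatest[OF PM_ne[OF neU]]) (auto intro: cmin_le_rmax[OF finU finV])

lemma val_mono: "i \<in> S \<Longrightarrow> (\<And>j. j \<in> S \<Longrightarrow> X j \<le> Y j) \<Longrightarrow> val X i \<le> val Y i"
proof -
  assume i: "i \<in> S" and XY: "\<And>j. j \<in> S \<Longrightarrow> X j \<le> Y j"
  show ?thesis unfolding val_def
  proof (rule cINF_greatest[OF PM_ne[OF neU[OF i]]])
    fix \<rho> assume \<rho>: "\<rho> \<in> PM (U i)"
    have "(INF \<rho>\<in>PM (U i). rmax (U i) (V i) (\<lambda>u v. Mv X i u v) \<rho>) \<le> Tm (\<lambda>_. \<rho>) X i"
      unfolding Tm_const by (rule cINF_lower[OF val_bdd[OF i] \<rho>])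
    also have "\<dots> \<le> Tm (\<lambda>_. \<rho>) Y i" by (rule Tm_mono[OF i XY])
    finally show "(INF \<rho>\<in>PM (U i). rmax (U i) (V i) (\<lambda>u v. Mv X i u v) \<rho>) \<le> rmax (U i) (V i) (\<lambda>u v. Mv Y i u v) \<rho>"
      unfolding Tm_const .
  qed
qed

lemma val_shift: "i \<in> S \<Longrightarrow> 0 \<le> d \<Longrightarrow> val (\<lambda>j. X j + d) i \<le> val X i + d"
proof -
  assume i: "i \<in> S" and d: "0 \<le> d"
  have "val (\<lambda>j. X j + d) i - d \<le> val X i" unfolding val_def
  proof (rule cINF_greatest[OF PM_ne[OF neU[OF i]]])
    fix \<rho> assume \<rho>: "\<rho> \<in> PM (U i)"
    have "(INF \<rho>\<in>PM (U i). rmax (U i) (V i) (\<lambda>u v. Mv (\<lambda>j. X j + d) i u v) \<rho>) \<le> Tm (\<lambda>_. \<rho>) (\<lambda>j. X j + d) i"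
      unfolding Tm_const by (rule cINF_lower[OF val_bdd[OF i] \<rho>])
    also have "\<dots> \<le> Tm (\<lambda>_. \<rho>) X i + d" by (rule Tm_shift[OF i _ d]) (use \<rho> in \<open>simp add: PM_def\<close>)
    finally show "(INF \<rho>\<in>PM (U i). rmax (U i) (V i) (\<lambda>u v. Mv (\<lambda>j. X j + d) i u v) \<rho>) - d \<le> rmax (U i) (V i) (\<lambda>u v. Mv X i u v) \<rho>"
      unfolding Tm_const by simp
  qed
  thus ?thesis by simp
qed

lemma val_minimax: "i \<in> S \<Longrightarrow> val X i = (SUP \<sigma>\<in>PM (V i). cmin (U i) (V i) (\<lambda>u v. Mv X i u v) \<sigma>)"
  unfolding val_def by (rule minimax[OF finU neU finV neV])

theorem game_fix_exists:
  assumes hi: "\<And>i. i \<in> S \<Longrightarrow> Tm \<mu> Jh i \<le> Jh i" and mu: "\<mu> \<in> SR n U"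
    and lo: "\<And>i. i \<in> S \<Longrightarrow> Jl i \<le> Tc \<nu> Jl i" and nu: "\<nu> \<in> SR n V"
    and hl: "\<And>i. i \<in> S \<Longrightarrow> Jl i \<le> Jh i"
  shows "\<exists>J. \<forall>i\<in>S. val J i = J i"
proof -
  define W where "W = rec_nat Jh (\<lambda>_ X. val X)"
  have W0: "W 0 = Jh" and WS: "\<And>k. W (Suc k) = val (W k)" by (simp_all add: W_def)
  have muP: "\<And>i. i \<in> S \<Longrightarrow> \<mu> i \<in> PM (U i)" using mu by (simp add: SR_def PM_def)
  have nuP: "\<And>i. i \<in> S \<Longrightarrow> \<nu> i \<in> PM (V i)" using nu by (simp add: SR_def PM_def)
  have lowW: "\<forall>j\<in>S. Jl j \<le> W k j" for k
  proof (induction k)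
    case 0 then show ?case using hl by (simp add: W0)
  next
    case (Suc k)
    show ?case
    proof
      fix j assume j: "j \<in> S"
      have "Jl j \<le> Tc \<nu> Jl j" by (rule lo[OF j])
      also have "\<dots> \<le> val Jl j" by (rule Tc_le_val[where \<nu>=\<nu> and i=j, OF j nuP[OF j]])
      also have "\<dots> \<le> val (W k) j" using Suc by (intro val_mono[OF j]) auto
      finally show "Jl j \<le> W (Suc k) j" by (simp add: WS)
    qed
  qed
  have Wdec: "\<forall>j\<in>S. W (Suc k) j \<le> W k j" for k
  proof (induction k)
    case 0
    show ?case
    proof
      fix j assume j: "j \<in> S"
      have "val Jh j \<le> Tm \<mu> Jh j" by (rule val_le_Tm[where \<mu>=\<mu>, OF j muP[OF j]])
      thus "W (Suc 0) j \<le> W 0 j" using hi[OF j] by (simp add: WS W0)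
    qed
  next
    case (Suc k)
    show ?case using Suc val_mono by (simp add: WS)
  qed
  have Wanti: "k \<le> k' \<Longrightarrow> j \<in> S \<Longrightarrow> W k' j \<le> W k j" for k k' j
  proof (induction k' rule: dec_induct)
    case (step m) then show ?case using Wdec[of m] by force
  qed simp
  define L where "L j = (INF k. W k j)" for j
  have bddW: "j \<in> S \<Longrightarrow> bdd_below (range (\<lambda>k. W k j))" for j using lowW by (auto intro!: bdd_belowI[of _ "Jl j"])
  have LW: "j \<in> S \<Longrightarrow> L j \<le> W k j" for j k unfolding L_def by (rule cINF_lower[OF bddW]) auto
  have Lev: "eventually (\<lambda>k. \<forall>j\<in>S. W k j < L j + \<epsilon>) sequentially" if "0 < \<epsilon>" for \<epsilon>
  proof (rule eventually_ball_finite[OF finS], intro ballI)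
    fix j assume j: "j \<in> S"
    have "L j < L j + \<epsilon>" using that by simp
    then obtain N where "W N j < L j + \<epsilon>" unfolding L_def[of j] using cINF_less_iff[OF _ bddW[OF j]] by blast
    thus "eventually (\<lambda>k. W k j < L j + \<epsilon>) sequentially"
      using Wanti[OF _ j] unfolding eventually_sequentially by (meson le_less_trans)
  qed
  have "\<forall>i\<in>S. val L i = L i"
  proof
    fix i assume i: "i \<in> S"
    have "val L i \<le> L i" unfolding L_def[of i]
    proof (rule cINF_greatest)
      fix k
      have "val L i \<le> val (W k) i" using LW by (intro val_mono[OF i]) auto
      also have "\<dots> = W (Suc k) i" by (simp add: WS)
      also have "\<dots> \<le> W k i" using Wdec i by blast
      finally show "val L i \<le> W k i" .
    qed simp
    moreover have "L i \<le> val L i"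
    proof (rule field_le_epsilon)
      fix \<epsilon> :: real assume \<epsilon>: "0 < \<epsilon>"
      obtain k where k: "\<forall>j\<in>S. W k j < L j + \<epsilon>" using eventually_happens'[OF _ Lev[OF \<epsilon>]] by auto
      have "L i \<le> W (Suc k) i" by (rule LW[OF i])
      also have "\<dots> = val (W k) i" by (simp add: WS)
      also have "\<dots> \<le> val (\<lambda>j. L j + \<epsilon>) i" using k by (intro val_mono[OF i]) (auto intro: less_imp_le)
      also have "\<dots> \<le> val L i + \<epsilon>" using \<epsilon> by (intro val_shift[OF i]) auto
      finally show "L i \<le> val L i + \<epsilon>" .
    qed
    ultimately show "val L i = L i" by simp
  qed
  thus ?thesis by blast
qed

end

lemma liminf_le_eps:
  assumes "\<And>e. 0 < e \<Longrightarrow> \<exists>N. \<forall>k\<ge>N. x k \<le> a + e"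
  shows "liminf (\<lambda>t. ereal (x (Suc t))) \<le> ereal a"
proof (rule ereal_le_epsilon2)
  fix e :: real assume e: "0 < e"
  obtain N where N: "\<forall>k\<ge>N. x k \<le> a + e" using assms[OF e] by blast
  have "liminf (\<lambda>t. ereal (x (Suc t))) \<le> ereal (a + e)"
    by (rule Liminf_le) (use N in \<open>auto simp: eventually_sequentially intro!: exI[of _ N]\<close>)
  thus "liminf (\<lambda>t. ereal (x (Suc t))) \<le> ereal a + ereal e" by simp
qed

lemma liminf_ge_eps:
  assumes "\<And>e. 0 < e \<Longrightarrow> \<exists>N. \<forall>k\<ge>N. a - e \<le> x k"
  shows "ereal a \<le> liminf (\<lambda>t. ereal (x (Suc t)))"
  unfolding le_Liminf_iff
proof (intro allI impI)
  fix y assume y: "y < ereal a"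
  show "eventually (\<lambda>t. y < ereal (x (Suc t))) sequentially"
  proof (cases y)
    case (real r)
    hence r: "r < a" using y by simp
    obtain N where N: "\<forall>k\<ge>N. a - (a - r) / 2 \<le> x k" using assms[of "(a - r) / 2"] r by auto
    show ?thesis unfolding eventually_sequentially
    proof (intro exI allI impI)
      fix t assume "N \<le> t"
      hence "a - (a - r) / 2 \<le> x (Suc t)" using N by auto
      hence "r < x (Suc t)" using r by (auto simp: field_simps)
      thus "y < ereal (x (Suc t))" using real by simp
    qed
  qed (use y in auto)
qed

lemma liminf_lb: "(\<And>k. c \<le> x k) \<Longrightarrow> ereal c \<le> liminf (\<lambda>t. ereal (x (Suc t)))"
  by (rule Liminf_bounded) auto

lemma liminf_ub: "(\<And>k. x k \<le> c) \<Longrightarrow> liminf (\<lambda>t. ereal (x (Suc t))) \<le> ereal c"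
  by (rule Liminf_le) auto

context ssp begin

lemma squeeze:
  assumes np: "\<not> prolonging n U V p \<pi>1 \<pi>2" and i: "i \<in> S" and A: "0 \<le> A" and B: "0 \<le> B"
    and lo: "\<And>k. a - A * sv \<pi>1 \<pi>2 k (i, []) \<le> ec \<pi>1 \<pi>2 k (i, [])"
    and hi: "\<And>k. ec \<pi>1 \<pi>2 k (i, []) \<le> b + B * sv \<pi>1 \<pi>2 k (i, [])"
  shows "a \<le> b"
proof (rule field_le_epsilon)
  fix \<epsilon> :: real assume \<epsilon>: "0 < \<epsilon>"
  define D where "D = A + B"
  have D0: "0 \<le> D" using A B by (simp add: D_def)
  obtain N where N: "\<forall>k\<ge>N. sv \<pi>1 \<pi>2 k (i, []) < \<epsilon> / (D + 1)"
    using not_prolonging[OF np i] \<epsilon> D0 by (metis add_nonneg_pos divide_pos_pos zero_less_one)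
  have sN: "sv \<pi>1 \<pi>2 N (i, []) < \<epsilon> / (D + 1)" using N by auto
  have "D * sv \<pi>1 \<pi>2 N (i, []) \<le> D * (\<epsilon> / (D + 1))" using sN D0 by (intro mult_left_mono) auto
  also have "\<dots> \<le> \<epsilon>" using D0 \<epsilon> by (simp add: field_simps)
  finally have "D * sv \<pi>1 \<pi>2 N (i, []) \<le> \<epsilon>" .
  thus "a \<le> b + \<epsilon>" using lo[of N] hi[of N] by (simp add: D_def algebra_simps)
qed

lemma stat_Pi1: "\<mu> \<in> SR n U \<Longrightarrow> stat \<mu> \<in> Pi1 n U" by (simp add: SR_def Pi1_def stat_def)
lemma stat_Pi2: "\<nu> \<in> SR n V \<Longrightarrow> stat \<nu> \<in> Pi2 n V" by (simp add: SR_def Pi2_def stat_def)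

end

context ssp3 begin

lemma attain_mu: "\<exists>\<mu>\<in>SR n U. \<forall>i\<in>S. Tm \<mu> X i = val X i"
proof -
  have "\<forall>i\<in>S. \<exists>\<rho>\<in>PM (U i). \<forall>\<rho>'\<in>PM (U i). rmax (U i) (V i) (\<lambda>u v. Mv X i u v) \<rho> \<le> rmax (U i) (V i) (\<lambda>u v. Mv X i u v) \<rho>'"
    using rmax_attains[OF finU neU finV neV] by blast
  then obtain \<mu> where \<mu>: "\<And>i. i \<in> S \<Longrightarrow> \<mu> i \<in> PM (U i)"
    "\<And>i \<rho>'. i \<in> S \<Longrightarrow> \<rho>' \<in> PM (U i) \<Longrightarrow> rmax (U i) (V i) (\<lambda>u v. Mv X i u v) (\<mu> i) \<le> rmax (U i) (V i) (\<lambda>u v. Mv X i u v) \<rho>'"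
    by metis
  have "Tm \<mu> X i = val X i" if i: "i \<in> S" for i
  proof (rule antisym)
    show "Tm \<mu> X i \<le> val X i" unfolding Tm_def val_def
      by (rule cINF_greatest[OF PM_ne[OF neU[OF i]]]) (rule \<mu>(2)[OF i])
    show "val X i \<le> Tm \<mu> X i" by (rule val_le_Tm[where \<mu>=\<mu> and i=i, OF i \<mu>(1)[OF i]])
  qed
  moreover have "\<mu> \<in> SR n U" using \<mu>(1) by (simp add: SR_def PM_def)
  ultimately show ?thesis by blast
qed

lemma attain_nu: "\<exists>\<nu>\<in>SR n V. \<forall>i\<in>S. Tc \<nu> X i = val X i"
proof -
  have "\<forall>i\<in>S. \<exists>\<sigma>\<in>PM (V i). \<forall>\<sigma>'\<in>PM (V i). cmin (U i) (V i) (\<lambda>u v. Mv X i u v) \<sigma>' \<le> cmin (U i) (V i) (\<lambda>u v. Mv X i u v) \<sigma>"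
    using cmin_attains[OF finU neU finV neV] by blast
  then obtain \<nu> where \<nu>: "\<And>i. i \<in> S \<Longrightarrow> \<nu> i \<in> PM (V i)"
    "\<And>i \<sigma>'. i \<in> S \<Longrightarrow> \<sigma>' \<in> PM (V i) \<Longrightarrow> cmin (U i) (V i) (\<lambda>u v. Mv X i u v) \<sigma>' \<le> cmin (U i) (V i) (\<lambda>u v. Mv X i u v) (\<nu> i)"
    by metis
  have "Tc \<nu> X i = val X i" if i: "i \<in> S" for i
  proof (rule antisym)
    show "val X i \<le> Tc \<nu> X i" unfolding Tc_def val_minimax[OF i]
      by (rule cSUP_least[OF PM_ne[OF neV[OF i]]]) (rule \<nu>(2)[OF i])
    show "Tc \<nu> X i \<le> val X i" by (rule Tc_le_val[where \<nu>=\<nu> and i=i, OF i \<nu>(1)[OF i]])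
  qed
  moreover have "\<nu> \<in> SR n V" using \<nu>(1) by (simp add: SR_def PM_def)
  ultimately show ?thesis by blast
qed

lemma K1:
  assumes "\<mu> \<in> SR n U" "\<And>i. i \<in> S \<Longrightarrow> Tm \<mu> X i = X i" "\<pi>2 \<in> Pi2 n V" "i \<in> S"
  shows "Jcost n U V p gh i (stat \<mu>) \<pi>2 \<le> ereal (X i)"
  unfolding Jcost_def by (rule liminf_le_eps) (rule bound2[OF assms])

lemma K2:
  assumes "\<nu> \<in> SR n V" "\<And>i. i \<in> S \<Longrightarrow> Tc \<nu> X i = X i" "\<pi>1 \<in> Pi1 n U" "i \<in> S"
  shows "ereal (X i) \<le> Jcost n U V p gh i \<pi>1 (stat \<nu>)"
  unfolding Jcost_def by (rule liminf_ge_eps) (rule bound1[OF assms])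

lemma value_eq:
  assumes fx: "\<And>i. i \<in> S \<Longrightarrow> val X i = X i" and i: "i \<in> S"
  shows "Jstar n U V p gh i = ereal (X i)" "Jlower n U V p gh i = ereal (X i)"
proof -
  obtain \<mu> where \<mu>: "\<mu> \<in> SR n U" "\<And>i. i \<in> S \<Longrightarrow> Tm \<mu> X i = X i" using attain_mu[of X] fx by force
  obtain \<nu> where \<nu>: "\<nu> \<in> SR n V" "\<And>i. i \<in> S \<Longrightarrow> Tc \<nu> X i = X i" using attain_nu[of X] fx by force
  show "Jstar n U V p gh i = ereal (X i)" unfolding Jstar_def
  proof (rule antisym)
    have "(INF \<pi>1\<in>Pi1 n U. SUP \<pi>2\<in>Pi2 n V. Jcost n U V p gh i \<pi>1 \<pi>2) \<le> (SUP \<pi>2\<in>Pi2 n V. Jcost n U V p gh i (stat \<mu>) \<pi>2)"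
      by (rule INF_lower) (rule stat_Pi1[OF \<mu>(1)])
    also have "\<dots> \<le> ereal (X i)" by (rule SUP_least) (rule K1[where X=X, OF \<mu>(1) \<mu>(2) _ i])
    finally show "(INF \<pi>1\<in>Pi1 n U. SUP \<pi>2\<in>Pi2 n V. Jcost n U V p gh i \<pi>1 \<pi>2) \<le> ereal (X i)" .
    show "ereal (X i) \<le> (INF \<pi>1\<in>Pi1 n U. SUP \<pi>2\<in>Pi2 n V. Jcost n U V p gh i \<pi>1 \<pi>2)"
    proof (rule INF_greatest)
      show "ereal (X i) \<le> (SUP \<pi>2\<in>Pi2 n V. Jcost n U V p gh i \<pi>1 \<pi>2)" if \<pi>1: "\<pi>1 \<in> Pi1 n U" for \<pi>1
      proof -
        have "ereal (X i) \<le> Jcost n U V p gh i \<pi>1 (stat \<nu>)" by (rule K2[OF \<nu> \<pi>1 i])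
        also have "\<dots> \<le> (SUP \<pi>2\<in>Pi2 n V. Jcost n U V p gh i \<pi>1 \<pi>2)" by (rule SUP_upper) (rule stat_Pi2[OF \<nu>(1)])
        finally show ?thesis .
      qed
    qed
  qed
  show "Jlower n U V p gh i = ereal (X i)" unfolding Jlower_def
  proof (rule antisym)
    show "(SUP \<pi>2\<in>Pi2 n V. INF \<pi>1\<in>Pi1 n U. Jcost n U V p gh i \<pi>1 \<pi>2) \<le> ereal (X i)"
    proof (rule SUP_least)
      show "(INF \<pi>1\<in>Pi1 n U. Jcost n U V p gh i \<pi>1 \<pi>2) \<le> ereal (X i)" if \<pi>2: "\<pi>2 \<in> Pi2 n V" for \<pi>2
      proof -
        have "(INF \<pi>1\<in>Pi1 n U. Jcost n U V p gh i \<pi>1 \<pi>2) \<le> Jcost n U V p gh i (stat \<mu>) \<pi>2"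
          by (rule INF_lower) (rule stat_Pi1[OF \<mu>(1)])
        also have "\<dots> \<le> ereal (X i)" by (rule K1[OF \<mu> \<pi>2 i])
        finally show ?thesis .
      qed
    qed
    have "ereal (X i) \<le> (INF \<pi>1\<in>Pi1 n U. Jcost n U V p gh i \<pi>1 (stat \<nu>))"
      by (rule INF_greatest) (rule K2[where X=X, OF \<nu>(1) \<nu>(2) _ i])
    also have "\<dots> \<le> (SUP \<pi>2\<in>Pi2 n V. INF \<pi>1\<in>Pi1 n U. Jcost n U V p gh i \<pi>1 \<pi>2)"
      by (rule SUP_upper) (rule stat_Pi2[OF \<nu>(1)])
    finally show "ereal (X i) \<le> (SUP \<pi>2\<in>Pi2 n V. INF \<pi>1\<in>Pi1 n U. Jcost n U V p gh i \<pi>1 \<pi>2)" .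
  qed
qed

end

locale ssp_full = ssp +
  assumes assm: "SSP_assumption n U V p gh"
begin

lemma A3_full:
  assumes "\<mu> \<in> SR n U" "\<nu> \<in> SR n V"
    "\<exists>c. \<forall>k. \<forall>i\<in>states n. \<bar>ecost n U V p gh (stat \<mu>) (stat \<nu>) k (i, [])\<bar> \<le> c"
  shows "\<not> prolonging n U V p (stat \<mu>) (stat \<nu>)"
proof
  assume pr: "prolonging n U V p (stat \<mu>) (stat \<nu>)"
  obtain c where c: "\<And>k i. i \<in> S \<Longrightarrow> \<bar>ec (stat \<mu>) (stat \<nu>) k (i, [])\<bar> \<le> c" using assms(3) by blast
  obtain i where i: "i \<in> S" "Jcost n U V p gh i (stat \<mu>) (stat \<nu>) \<in> {\<infinity>, -\<infinity>}"
    using assm assms(1,2) pr unfolding SSP_assumption_def by blast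
  have ck: "- c \<le> ec (stat \<mu>) (stat \<nu>) k (i, []) \<and> ec (stat \<mu>) (stat \<nu>) k (i, []) \<le> c" for k
    using c[OF i(1), of k] by (simp add: abs_le_iff)
  have "ereal (- c) \<le> Jcost n U V p gh i (stat \<mu>) (stat \<nu>)" unfolding Jcost_def
    by (rule liminf_lb) (use ck in blast)
  moreover have "Jcost n U V p gh i (stat \<mu>) (stat \<nu>) \<le> ereal c" unfolding Jcost_def
    by (rule liminf_ub) (use ck in blast)
  ultimately show False using i(2) by auto
qed

end

sublocale ssp_full \<subseteq> ssp3
  by unfold_locales (rule A3_full)

context ssp_full begin

lemma fix_exists: "\<exists>J. \<forall>i\<in>S. val J i = J i"
proof -
  obtain \<mu> where mu: "\<mu> \<in> SR n U" and mui: "\<And>\<nu> i. \<nu> \<in> SR n V \<Longrightarrow> i \<in> S \<Longrightarrow> Jcost n U V p gh i (stat \<mu>) (stat \<nu>) < \<infinity>"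
    using assm unfolding SSP_assumption_def by blast
  obtain \<nu> where nu: "\<nu> \<in> SR n V" and nui: "\<And>\<mu> i. \<mu> \<in> SR n U \<Longrightarrow> i \<in> S \<Longrightarrow> Jcost n U V p gh i (stat \<mu>) (stat \<nu>) > -\<infinity>"
    using assm unfolding SSP_assumption_def by blast
  have iii: "\<And>\<mu> \<nu>. \<mu> \<in> SR n U \<Longrightarrow> \<nu> \<in> SR n V \<Longrightarrow> prolonging n U V p (stat \<mu>) (stat \<nu>) \<Longrightarrow>
        \<exists>i\<in>S. Jcost n U V p gh i (stat \<mu>) (stat \<nu>) \<in> {\<infinity>, -\<infinity>}"
    using assm unfolding SSP_assumption_def by blast
  have np: "\<not> prolonging n U V p (stat \<mu>) (stat \<nu>)"
  proof
    assume "prolonging n U V p (stat \<mu>) (stat \<nu>)"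
    then obtain i where "i \<in> S" "Jcost n U V p gh i (stat \<mu>) (stat \<nu>) \<in> {\<infinity>, -\<infinity>}" using iii[OF mu nu] by blast
    thus False using mui[OF nu] nui[OF mu] by fastforce
  qed
  have H: "\<not> prolonging n U V p (stat \<mu>) (stat \<nu>')"
    if nu': "\<nu>' \<in> SR n V" and hb: "\<exists>c. \<forall>k. \<forall>i\<in>S. c \<le> ec (stat \<mu>) (stat \<nu>') k (i, [])" for \<nu>'
  proof
    assume "prolonging n U V p (stat \<mu>) (stat \<nu>')"
    then obtain i where i: "i \<in> S" "Jcost n U V p gh i (stat \<mu>) (stat \<nu>') \<in> {\<infinity>, -\<infinity>}" using iii[OF mu nu'] by blast
    obtain c where c: "\<And>k. c \<le> ec (stat \<mu>) (stat \<nu>') k (i, [])" using hb i(1) by blast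
    have "ereal c \<le> Jcost n U V p gh i (stat \<mu>) (stat \<nu>')" unfolding Jcost_def by (rule liminf_lb) (rule c)
    thus False using i(2) mui[OF nu' i(1)] by auto
  qed
  have H': "\<not> prolonging n U V p (stat \<mu>') (stat \<nu>)"
    if mu': "\<mu>' \<in> SR n U" and hb: "\<exists>c. \<forall>k. \<forall>i\<in>S. ec (stat \<mu>') (stat \<nu>) k (i, []) \<le> c" for \<mu>'
  proof
    assume "prolonging n U V p (stat \<mu>') (stat \<nu>)"
    then obtain i where i: "i \<in> S" "Jcost n U V p gh i (stat \<mu>') (stat \<nu>) \<in> {\<infinity>, -\<infinity>}" using iii[OF mu' nu] by blast
    obtain c where c: "\<And>k. ec (stat \<mu>') (stat \<nu>) k (i, []) \<le> c" using hb i(1) by blast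
    have "Jcost n U V p gh i (stat \<mu>') (stat \<nu>) \<le> ereal c" unfolding Jcost_def by (rule liminf_ub) (rule c)
    thus False using i(2) nui[OF mu' i(1)] by auto
  qed
  obtain Jh where Jh: "\<forall>i\<in>S. Tm \<mu> Jh i \<le> Jh i" using exist_super[OF mu nu np H] by blast
  obtain Jl where Jl: "\<forall>i\<in>S. Jl i \<le> Tc \<nu> Jl i" using exist_sub[OF mu nu np H'] by blast
  have muP: "\<And>i. i \<in> S \<Longrightarrow> \<mu> i \<in> PM (U i)" using mu by (simp add: SR_def PM_def)
  have tpl: "Jl i \<le> tp \<mu> \<nu> Jl i" if i: "i \<in> S" for i
  proof -
    have "Jl i \<le> Tc \<nu> Jl i" using Jl i by blast
    also have "\<dots> \<le> tp \<mu> \<nu> Jl i" unfolding Tc_def tp_def cmin_def by (rule qb_ge_Min[OF finU[OF i] muP[OF i]])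
    finally show ?thesis .
  qed
  have hl: "Jl i \<le> Jh i" if i: "i \<in> S" for i
  proof (rule squeeze[OF np i nrm_nn nrm_nn])
    fix k
    have "Jl i \<le> ew Jl (stat \<mu>) (stat \<nu>) k (i, [])" using ew_ge_stat[OF mu tpl, of "(i, [])" k] i by simp
    thus "Jl i - nrm Jl * sv (stat \<mu>) (stat \<nu>) k (i, []) \<le> ec (stat \<mu>) (stat \<nu>) k (i, [])"
      using ec_bounds[of "stat \<mu>" "stat \<nu>" k "(i, [])" Jl] by (simp add: abs_le_iff)
    have "ew Jh (stat \<mu>) (stat \<nu>) k (i, []) \<le> Jh i" using ew_le_Tm[OF stat_Pi2[OF nu], of \<mu> Jh "(i, [])" k] Jh i by simp
    thus "ec (stat \<mu>) (stat \<nu>) k (i, []) \<le> Jh i + nrm Jh * sv (stat \<mu>) (stat \<nu>) k (i, [])"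
      using ec_bounds[of "stat \<mu>" "stat \<nu>" k "(i, [])" Jh] by (simp add: abs_le_iff)
  qed
  show ?thesis by (rule game_fix_exists[OF _ mu _ nu hl]) (use Jh Jl in auto)
qed

end

context ssp_full begin

lemma Ubar_PM: "Ubar W i = PM (W i)" by (simp add: Ubar_def PM_def)

lemma Qbar_fun:
  assumes "\<And>u v. u \<in> U i \<Longrightarrow> v \<in> V i \<Longrightarrow> Q (i, u, v) = Mv X i u v"
  shows "Qbar U V Q i = qb (U i) (V i) (\<lambda>u v. Mv X i u v)"
  unfolding Qbar_def qb_def using assms by (intro ext sum.cong refl) auto

lemma sup_rmax: "i \<in> S \<Longrightarrow> (SUP \<sigma>\<in>PM (V i). qb (U i) (V i) q \<rho> \<sigma>) = rmax (U i) (V i) q \<rho>"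
  unfolding rmax_def by (rule sup_pure[OF finV neV])

lemma inf_cmin: "i \<in> S \<Longrightarrow> (INF \<rho>\<in>PM (U i). qb (U i) (V i) q \<rho> \<sigma>) = cmin (U i) (V i) q \<sigma>"
  unfolding cmin_def by (rule inf_pure[OF finU neU])

lemma minimaxQ_val:
  assumes "i \<in> S" "\<And>u v. u \<in> U i \<Longrightarrow> v \<in> V i \<Longrightarrow> Q (i, u, v) = Mv X i u v"
  shows "minimaxQ U V Q i = val X i"
  unfolding minimaxQ_def val_def Ubar_PM by (simp only: Qbar_fun[OF assms(2)] sup_rmax[OF assms(1)])

lemma Mv_cong: "(\<And>j. j \<in> S \<Longrightarrow> X j = Y j) \<Longrightarrow> Mv X i u v = Mv Y i u v"
  unfolding Mv_def by (intro arg_cong2[where f="(+)"] refl sum.cong) auto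

lemma fp_char:
  assumes "fixed_point n U V p gh Q"
  shows "\<forall>(i, u, v)\<in>Rset n U V. Q (i, u, v) = Mv (\<lambda>j. minimaxQ U V Q j) i u v"
  using assms unfolding fixed_point_def Fop_def Mv_def by auto

lemma fp_val:
  assumes "fixed_point n U V p gh Q" "i \<in> S"
  shows "val (\<lambda>j. minimaxQ U V Q j) i = minimaxQ U V Q i"
  using minimaxQ_val[OF assms(2), of Q "\<lambda>j. minimaxQ U V Q j"] fp_char[OF assms(1)] assms(2)
  by (auto simp: Rset_def)

lemma main:
  "(\<exists>!Q. fixed_point n U V p gh Q) \<and>
    (\<forall>Q. fixed_point n U V p gh Q \<longrightarrow>
      (\<forall>(i, u, v)\<in>Rset n U V.
         ereal (Q (i, u, v)) = ereal (gexp n p gh i u v) +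
           (\<Sum>j\<in>states n. ereal (p i j u v) * Jstar n U V p gh j)) \<and>
      (\<forall>i\<in>states n. Jstar n U V p gh i = ereal (minimaxQ U V Q i)) \<and>
      (\<forall>\<mu> \<nu>.
         (\<forall>i\<in>states n.
            is_arg_min (\<lambda>\<rho>. SUP \<sigma>\<in>Ubar V i. Qbar U V Q i \<rho> \<sigma>) (\<lambda>\<rho>. \<rho> \<in> Ubar U i) (\<mu> i) \<and>
            is_arg_max (\<lambda>\<sigma>. INF \<rho>\<in>Ubar U i. Qbar U V Q i \<rho> \<sigma>) (\<lambda>\<sigma>. \<sigma> \<in> Ubar V i) (\<nu> i))
         \<longrightarrow> optimal_I n U V p gh (stat \<mu>) \<and> optimal_II n U V p gh (stat \<nu>)))"
proof -
  obtain J where J: "\<And>i. i \<in> S \<Longrightarrow> val J i = J i" using fix_exists by blast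
  have JJ: "\<And>i. i \<in> S \<Longrightarrow> Jstar n U V p gh i = ereal (J i)" using value_eq(1)[OF J] by blast
  define Q0 where "Q0 = restrict (\<lambda>(i, u, v). Mv J i u v) (Rset n U V)"
  have Q0R: "Q0 (i, u, v) = Mv J i u v" if "i \<in> S" "u \<in> U i" "v \<in> V i" for i u v
    using that by (simp add: Q0_def Rset_def)
  have fp0: "fixed_point n U V p gh Q0"
    unfolding fixed_point_def
  proof (intro conjI ballI)
    show "Q0 \<in> extensional (Rset n U V)" by (simp add: Q0_def)
    fix x assume x: "x \<in> Rset n U V"
    then obtain i u v where x': "x = (i, u, v)" "i \<in> S" "u \<in> U i" "v \<in> V i" by (auto simp: Rset_def)
    have mq: "minimaxQ U V Q0 j = J j" if "j \<in> S" for j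
      using minimaxQ_val[OF that, of Q0 J] Q0R[OF that] J[OF that] by simp
    have "Fop n U V p gh Q0 x = Mv (\<lambda>j. minimaxQ U V Q0 j) i u v" unfolding x'(1) Fop_def Mv_def by simp
    also have "\<dots> = Mv J i u v" by (rule Mv_cong) (rule mq)
    finally show "Q0 x = Fop n U V p gh Q0 x" using Q0R[OF x'(2-4)] x'(1) by simp
  qed
  have XJ: "minimaxQ U V Q j = J j" if fp: "fixed_point n U V p gh Q" and j: "j \<in> S" for Q j
  proof -
    have "Jstar n U V p gh j = ereal (minimaxQ U V Q j)"
      using value_eq(1)[of "\<lambda>j. minimaxQ U V Q j", OF fp_val[OF fp] j] by simp
    thus ?thesis using JJ[OF j] by simp
  qed
  have QR: "Q (i, u, v) = Mv J i u v" if fp: "fixed_point n U V p gh Q" "i \<in> S" "u \<in> U i" "v \<in> V i" for Q i u v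
  proof -
    have "Q (i, u, v) = Mv (\<lambda>j. minimaxQ U V Q j) i u v" using fp_char[OF fp(1)] fp(2-4) by (auto simp: Rset_def)
    also have "\<dots> = Mv J i u v" by (rule Mv_cong) (rule XJ[OF fp(1)])
    finally show ?thesis .
  qed
  have uniq: "Q = Q0" if fp: "fixed_point n U V p gh Q" for Q
  proof (rule extensionalityI)
    show "Q \<in> extensional (Rset n U V)" using fp by (simp add: fixed_point_def)
    show "Q0 \<in> extensional (Rset n U V)" by (simp add: Q0_def)
    fix x assume "x \<in> Rset n U V"
    then obtain i u v where x': "x = (i, u, v)" "i \<in> S" "u \<in> U i" "v \<in> V i" by (auto simp: Rset_def)
    show "Q x = Q0 x" using QR[OF fp x'(2-4)] Q0R[OF x'(2-4)] x'(1) by simp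
  qed
  have part1: "\<exists>!Q. fixed_point n U V p gh Q" using fp0 uniq by blast
  have part2: "(\<forall>(i, u, v)\<in>Rset n U V.
         ereal (Q (i, u, v)) = ereal (gexp n p gh i u v) +
           (\<Sum>j\<in>states n. ereal (p i j u v) * Jstar n U V p gh j)) \<and>
      (\<forall>i\<in>states n. Jstar n U V p gh i = ereal (minimaxQ U V Q i)) \<and>
      (\<forall>\<mu> \<nu>.
         (\<forall>i\<in>states n.
            is_arg_min (\<lambda>\<rho>. SUP \<sigma>\<in>Ubar V i. Qbar U V Q i \<rho> \<sigma>) (\<lambda>\<rho>. \<rho> \<in> Ubar U i) (\<mu> i) \<and>
            is_arg_max (\<lambda>\<sigma>. INF \<rho>\<in>Ubar U i. Qbar U V Q i \<rho> \<sigma>) (\<lambda>\<sigma>. \<sigma> \<in> Ubar V i) (\<nu> i))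
         \<longrightarrow> optimal_I n U V p gh (stat \<mu>) \<and> optimal_II n U V p gh (stat \<nu>))"
    if fp: "fixed_point n U V p gh Q" for Q
  proof (intro conjI allI impI ballI)
    fix x assume x: "x \<in> Rset n U V"
    then obtain i u v where x': "x = (i, u, v)" "i \<in> S" "u \<in> U i" "v \<in> V i" by (auto simp: Rset_def)
    have "(\<Sum>j\<in>states n. ereal (p i j u v) * Jstar n U V p gh j) = (\<Sum>j\<in>states n. ereal (p i j u v * J j))"
      by (rule sum.cong) (auto simp: JJ)
    also have "\<dots> = ereal (\<Sum>j\<in>states n. p i j u v * J j)" by (simp add: sum_ereal)
    finally have "ereal (gexp n p gh i u v) + (\<Sum>j\<in>states n. ereal (p i j u v) * Jstar n U V p gh j) = ereal (Mv J i u v)"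
      by (simp add: Mv_def)
    thus "case x of (i, u, v) \<Rightarrow> ereal (Q (i, u, v)) = ereal (gexp n p gh i u v) + (\<Sum>j\<in>states n. ereal (p i j u v) * Jstar n U V p gh j)"
      using QR[OF fp x'(2-4)] x'(1) by simp
  next
    fix i assume i: "i \<in> states n"
    show "Jstar n U V p gh i = ereal (minimaxQ U V Q i)" using JJ[OF i] XJ[OF fp i] by simp
  next
    fix \<mu> \<nu>
    assume am: "\<forall>i\<in>states n.
            is_arg_min (\<lambda>\<rho>. SUP \<sigma>\<in>Ubar V i. Qbar U V Q i \<rho> \<sigma>) (\<lambda>\<rho>. \<rho> \<in> Ubar U i) (\<mu> i) \<and>
            is_arg_max (\<lambda>\<sigma>. INF \<rho>\<in>Ubar U i. Qbar U V Q i \<rho> \<sigma>) (\<lambda>\<sigma>. \<sigma> \<in> Ubar V i) (\<nu> i)"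
    have agree: "\<And>i u v. i \<in> S \<Longrightarrow> u \<in> U i \<Longrightarrow> v \<in> V i \<Longrightarrow> Q (i, u, v) = Mv J i u v" using QR[OF fp] by blast
    have muP: "\<mu> i \<in> PM (U i)" and mumin: "\<And>\<rho>. \<rho> \<in> PM (U i) \<Longrightarrow> rmax (U i) (V i) (\<lambda>u v. Mv J i u v) (\<mu> i) \<le> rmax (U i) (V i) (\<lambda>u v. Mv J i u v) \<rho>"
      if i: "i \<in> S" for i
    proof -
      have e1: "(\<lambda>\<rho>. SUP \<sigma>\<in>PM (V i). Qbar U V Q i \<rho> \<sigma>) = (\<lambda>\<rho>. rmax (U i) (V i) (\<lambda>u v. Mv J i u v) \<rho>)"
        by (simp only: Ubar_PM Qbar_fun[OF agree[OF i]] sup_rmax[OF i])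
      have "is_arg_min (\<lambda>\<rho>. SUP \<sigma>\<in>Ubar V i. Qbar U V Q i \<rho> \<sigma>) (\<lambda>\<rho>. \<rho> \<in> Ubar U i) (\<mu> i)" using am i by blast
      hence "is_arg_min (\<lambda>\<rho>. rmax (U i) (V i) (\<lambda>u v. Mv J i u v) \<rho>) (\<lambda>\<rho>. \<rho> \<in> PM (U i)) (\<mu> i)"
        by (simp only: Ubar_PM e1)
      hence h: "\<mu> i \<in> PM (U i)" "\<And>\<rho>. \<rho> \<in> PM (U i) \<Longrightarrow> \<not> rmax (U i) (V i) (\<lambda>u v. Mv J i u v) \<rho> < rmax (U i) (V i) (\<lambda>u v. Mv J i u v) (\<mu> i)"
        unfolding is_arg_min_def by auto
      show "\<mu> i \<in> PM (U i)" by (rule h(1))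
      show "rmax (U i) (V i) (\<lambda>u v. Mv J i u v) (\<mu> i) \<le> rmax (U i) (V i) (\<lambda>u v. Mv J i u v) \<rho>" if "\<rho> \<in> PM (U i)" for \<rho>
        using h(2)[OF that] by simp
    qed
    have nuP: "\<nu> i \<in> PM (V i)" and numax: "\<And>\<sigma>. \<sigma> \<in> PM (V i) \<Longrightarrow> cmin (U i) (V i) (\<lambda>u v. Mv J i u v) \<sigma> \<le> cmin (U i) (V i) (\<lambda>u v. Mv J i u v) (\<nu> i)"
      if i: "i \<in> S" for i
    proof -
      have e1: "(\<lambda>\<sigma>. INF \<rho>\<in>PM (U i). Qbar U V Q i \<rho> \<sigma>) = (\<lambda>\<sigma>. cmin (U i) (V i) (\<lambda>u v. Mv J i u v) \<sigma>)"
        by (simp only: Ubar_PM Qbar_fun[OF agree[OF i]] inf_cmin[OF i])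
      have "is_arg_max (\<lambda>\<sigma>. INF \<rho>\<in>Ubar U i. Qbar U V Q i \<rho> \<sigma>) (\<lambda>\<sigma>. \<sigma> \<in> Ubar V i) (\<nu> i)" using am i by blast
      hence "is_arg_max (\<lambda>\<sigma>. cmin (U i) (V i) (\<lambda>u v. Mv J i u v) \<sigma>) (\<lambda>\<sigma>. \<sigma> \<in> PM (V i)) (\<nu> i)"
        by (simp only: Ubar_PM e1)
      hence h: "\<nu> i \<in> PM (V i)" "\<And>\<sigma>. \<sigma> \<in> PM (V i) \<Longrightarrow> \<not> cmin (U i) (V i) (\<lambda>u v. Mv J i u v) (\<nu> i) < cmin (U i) (V i) (\<lambda>u v. Mv J i u v) \<sigma>"
        unfolding is_arg_max_def by auto
      show "\<nu> i \<in> PM (V i)" by (rule h(1))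
      show "cmin (U i) (V i) (\<lambda>u v. Mv J i u v) \<sigma> \<le> cmin (U i) (V i) (\<lambda>u v. Mv J i u v) (\<nu> i)" if "\<sigma> \<in> PM (V i)" for \<sigma>
        using h(2)[OF that] by simp
    qed
    have muSR: "\<mu> \<in> SR n U" using muP by (simp add: SR_def PM_def)
    have nuSR: "\<nu> \<in> SR n V" using nuP by (simp add: SR_def PM_def)
    have TmJ: "Tm \<mu> J i = J i" if i: "i \<in> S" for i
    proof (rule antisym)
      show "Tm \<mu> J i \<le> J i" unfolding J[OF i, symmetric] Tm_def val_def
        by (rule cINF_greatest[OF PM_ne[OF neU[OF i]]]) (rule mumin[OF i])
      show "J i \<le> Tm \<mu> J i" using val_le_Tm[where \<mu>=\<mu> and i=i and X=J, OF i muP[OF i]] J[OF i] by simp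
    qed
    have TcJ: "Tc \<nu> J i = J i" if i: "i \<in> S" for i
    proof (rule antisym)
      show "J i \<le> Tc \<nu> J i" unfolding J[OF i, symmetric] Tc_def val_minimax[OF i]
        by (rule cSUP_least[OF PM_ne[OF neV[OF i]]]) (rule numax[OF i])
      show "Tc \<nu> J i \<le> J i" using Tc_le_val[where \<nu>=\<nu> and i=i and X=J, OF i nuP[OF i]] J[OF i] by simp
    qed
    obtain \<mu>s where \<mu>s: "\<mu>s \<in> SR n U" "\<And>i. i \<in> S \<Longrightarrow> Tm \<mu>s J i = J i" using attain_mu[of J] J by force
    obtain \<nu>s where \<nu>s: "\<nu>s \<in> SR n V" "\<And>i. i \<in> S \<Longrightarrow> Tc \<nu>s J i = J i" using attain_nu[of J] J by force
    have JL: "\<And>i. i \<in> S \<Longrightarrow> Jlower n U V p gh i = ereal (J i)" using value_eq(2)[OF J] by blast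
    show "optimal_I n U V p gh (stat \<mu>)"
      unfolding optimal_I_def
    proof (intro conjI)
      show "stat \<mu> \<in> Pi1 n U" by (rule stat_Pi1[OF muSR])
      show "\<forall>i\<in>states n. (SUP \<pi>2\<in>Pi2 n V. Jcost n U V p gh i (stat \<mu>) \<pi>2) = Jstar n U V p gh i"
      proof
        fix i assume i: "i \<in> states n"
        show "(SUP \<pi>2\<in>Pi2 n V. Jcost n U V p gh i (stat \<mu>) \<pi>2) = Jstar n U V p gh i"
        proof (rule antisym)
          show "(SUP \<pi>2\<in>Pi2 n V. Jcost n U V p gh i (stat \<mu>) \<pi>2) \<le> Jstar n U V p gh i"
            unfolding JJ[OF i] by (rule SUP_least) (rule K1[OF muSR TmJ _ i])
          have "Jstar n U V p gh i \<le> Jcost n U V p gh i (stat \<mu>) (stat \<nu>s)"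
            unfolding JJ[OF i] by (rule K2[OF \<nu>s stat_Pi1[OF muSR] i])
          also have "\<dots> \<le> (SUP \<pi>2\<in>Pi2 n V. Jcost n U V p gh i (stat \<mu>) \<pi>2)"
            by (rule SUP_upper) (rule stat_Pi2[OF \<nu>s(1)])
          finally show "Jstar n U V p gh i \<le> (SUP \<pi>2\<in>Pi2 n V. Jcost n U V p gh i (stat \<mu>) \<pi>2)" .
        qed
      qed
    qed
    show "optimal_II n U V p gh (stat \<nu>)"
      unfolding optimal_II_def
    proof (intro conjI)
      show "stat \<nu> \<in> Pi2 n V" by (rule stat_Pi2[OF nuSR])
      show "\<forall>i\<in>states n. (INF \<pi>1\<in>Pi1 n U. Jcost n U V p gh i \<pi>1 (stat \<nu>)) = Jlower n U V p gh i"
      proof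
        fix i assume i: "i \<in> states n"
        show "(INF \<pi>1\<in>Pi1 n U. Jcost n U V p gh i \<pi>1 (stat \<nu>)) = Jlower n U V p gh i"
        proof (rule antisym)
          show "Jlower n U V p gh i \<le> (INF \<pi>1\<in>Pi1 n U. Jcost n U V p gh i \<pi>1 (stat \<nu>))"
            unfolding JL[OF i] by (rule INF_greatest) (rule K2[OF nuSR TcJ _ i])
          have "(INF \<pi>1\<in>Pi1 n U. Jcost n U V p gh i \<pi>1 (stat \<nu>)) \<le> Jcost n U V p gh i (stat \<mu>s) (stat \<nu>)"
            by (rule INF_lower) (rule stat_Pi1[OF \<mu>s(1)])
          also have "\<dots> \<le> Jlower n U V p gh i" unfolding JL[OF i] by (rule K1[OF \<mu>s stat_Pi2[OF nuSR] i])
          finally show "(INF \<pi>1\<in>Pi1 n U. Jcost n U V p gh i \<pi>1 (stat \<nu>)) \<le> Jlower n U V p gh i" .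
        qed
      qed
    qed
  qed
  show ?thesis using part1 part2 by blast
qed

end

theorem corollary3p1:
  fixes n :: nat
    and U :: "nat \<Rightarrow> 'u set" and V :: "nat \<Rightarrow> 'v set"
    and p :: "nat \<Rightarrow> nat \<Rightarrow> 'u \<Rightarrow> 'v \<Rightarrow> real"
    and gh :: "nat \<Rightarrow> 'u \<Rightarrow> 'v \<Rightarrow> nat \<Rightarrow> real"
  assumes model: "game_model n U V p"
    and assm: "SSP_assumption n U V p gh"
  shows "(\<exists>!Q. fixed_point n U V p gh Q) \<and>
    (\<forall>Q. fixed_point n U V p gh Q \<longrightarrow>
      (\<forall>(i, u, v)\<in>Rset n U V.
         ereal (Q (i, u, v)) = ereal (gexp n p gh i u v) +
           (\<Sum>j\<in>states n. ereal (p i j u v) * Jstar n U V p gh j)) \<and>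
      (\<forall>i\<in>states n. Jstar n U V p gh i = ereal (minimaxQ U V Q i)) \<and>
      (\<forall>\<mu> \<nu>.
         (\<forall>i\<in>states n.
            is_arg_min (\<lambda>\<rho>. SUP \<sigma>\<in>Ubar V i. Qbar U V Q i \<rho> \<sigma>) (\<lambda>\<rho>. \<rho> \<in> Ubar U i) (\<mu> i) \<and>
            is_arg_max (\<lambda>\<sigma>. INF \<rho>\<in>Ubar U i. Qbar U V Q i \<rho> \<sigma>) (\<lambda>\<sigma>. \<sigma> \<in> Ubar V i) (\<nu> i))
         \<longrightarrow> optimal_I n U V p gh (stat \<mu>) \<and> optimal_II n U V p gh (stat \<nu>)))"
proof -
  interpret ssp_full n U V p gh
    using model assm by (simp add: ssp_full_def ssp_full_axioms_def ssp_def)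
  show ?thesis by (rule main)
qed


end
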